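(* Let $\mathcal L$ be a non-trivial geometric lattice. The bilinear map $\bullet$ defined on modular diagrams by $(\mathcal E_1,\iota_1,J_1)\bullet(\mathcal E_2,\iota_2,J_2)=(\mathcal E_1\cup_{\mathcal L}\mathcal E_2,\iota_{12},J_1J_2)$ is compatible with the relations (R1)–(R5) in each argument, hence descends to a well-defined bilinear map $\mathcal{MD}(\mathcal L)\otimes\mathcal{MD}(\mathcal L)\to\mathcal{MD}(\mathcal L)$.
   Context: Geometric lattices. A geometric lattice is a finite lattice $\mathcal L$ (bottom $\hat0$, top $\hat1$, join $\vee$, meet $\wedge$) which is ranked (all maximal chains from $\hat0$ to a given element $F$ have the same length $\mathrm{rk}(F)$), atomic (every element is a join of atoms, i.e. rank-one elements) and semimodular ($\mathrm{rk}(F_1\wedge F_2)+\mathrm{rk}(F_1\vee F_2)\le\mathrm{rk}(F_1)+\mathrm{rk}(F_2)$). Elements are called flats, $\mathrm{At}(\mathcal L)$ denotes the set of atoms, and $\mathcal L$ is non-trivial if it has at least two elements. For a finite family $J$ of atoms, $\bigvee J$ is its join ($\bigvee\emptyset=\hat0$). Every interval $[F_1,F_2]$ is a geometric lattice, and products of geometric lattices are geometric lattices. A flat $F$ is modular if $\mathrm{rk}(F\wedge F')+\mathrm{rk}(F\vee F')=\mathrm{rk}(F)+\mathrm{rk}(F')$ for every flat $F'$. An embedding $\varphi:\mathcal L_1\to\mathcal L_2$ of geometric lattices is an injective order-preserving map preserving joins and sending atoms to atoms. Modular diagrams. Let $\mathcal L$ be a non-trivial geometric lattice. A modular extension of $\mathcal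 L$ is a pair $(\mathcal E,\iota)$ where $\mathcal E$ is a geometric lattice and $\iota:\mathcal L\to\mathcal E$ is an embedding whose image is an interval $[\hat0,F_\iota]$ with $F_\iota$ a modular flat of $\mathcal E$. A modular diagram of $\mathcal L$ is a triple $\Gamma=(\mathcal E,\iota,J)$ with $(\mathcal E,\iota)$ a modular extension and $J=(H_1,\dots,H_n)$ a finite word in the alphabet $\mathrm{At}(\mathcal E)$; its degree is $\deg\Gamma=n-2\big(\mathrm{rk}\bigvee J-\mathrm{rk}((\bigvee J)\wedge F_\iota)\big)$. $\mathcal{MD}(\mathcal L)$ is the $\mathbb Z$-graded $\mathbb Q$-vector space spanned by all modular diagrams, quotiented by the relations: (R1) $(\mathcal E,\iota,J)\sim-(\mathcal E,\iota,J')$ if $J'$ is obtained from $J$ by transposing two letters; (R2) $(\mathcal E,\iota,J)\sim(\mathcal E',\iota',J')$ if there is an embedding $\varphi:\mathcal E\to\mathcal E'$ with $\mathrm{rk}(\mathcal E)=\mathrm{rk}(\mathcal E')$, $\iota'=\varphi\circ\iota$ and $J'=\varphi(J)$ letterwise; (R3) $(\mathcal E,\iota,J)\sim0$ if $F_\iota\vee\bigvee J<\hat1_{\mathcal E}$; (R4) $(\mathcal E,\iota,J)\sim0$ if $\mathcal E\cong\mathcal E_1\times\mathcal E_2$ with $\mathcal E_1,\mathcal E_2$ non-trivial and $F_\iota\in\mathcal E_1\times\{\hat0\}$; (R5) $(\mathcal E,\iota,J)\sim0$ if there is a modular flat $F\ge F_\iota$ of $\mathcal E$ such that exactly two letters of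 $J$ are not below $F$. Product. For modular extensions $(\mathcal E_1,\iota_1),(\mathcal E_2,\iota_2)$ of $\mathcal L$, the pushout $\mathcal E_1\cup_{\mathcal L}\mathcal E_2$ is the subposet of $\mathcal E_1\times\mathcal E_2$ of pairs $(F_1,F_2)$ with $\iota_1^{-1}(F_1\wedge F_{\iota_1})=\iota_2^{-1}(F_2\wedge F_{\iota_2})$; it is a geometric lattice, and $\iota_{12}(A)=(\iota_1(A),\iota_2(A))$ makes it a modular extension of $\mathcal L$. Its atoms are the $(H,\hat0)$ with $H\in\mathrm{At}(\mathcal E_1)\setminus\iota_1(\mathcal L)$, the $(\hat0,H)$ with $H\in\mathrm{At}(\mathcal E_2)\setminus\iota_2(\mathcal L)$, and the $(\iota_1(H),\iota_2(H))$ with $H\in\mathrm{At}(\mathcal L)$, which identifies $\mathrm{At}(\mathcal E_1\cup_{\mathcal L}\mathcal E_2)$ with $\mathrm{At}(\mathcal E_1)\cup_{\mathrm{At}(\mathcal L)}\mathrm{At}(\mathcal E_2)$; $J_1J_2$ denotes the concatenated word read in these atoms. *)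

theory Defs
  imports Complex_Main "HOL-Library.Nat_Bijection"
begin

record 'a lat =
  flats :: "'a set"
  lle :: "'a \<Rightarrow> 'a \<Rightarrow> bool"

definition lless :: "'a lat \<Rightarrow> 'a \<Rightarrow> 'a \<Rightarrow> bool" where
  "lless L x y \<longleftrightarrow> lle L x y \<and> x \<noteq> y"

definition is_lub :: "'a lat \<Rightarrow> 'a set \<Rightarrow> 'a \<Rightarrow> bool" where
  "is_lub L S z \<longleftrightarrow> z \<in> flats L \<and> (\<forall>x\<in>S. lle L x z)
     \<and> (\<forall>w\<in>flats L. (\<forall>x\<in>S. lle L x w) \<longrightarrow> lle L z w)"

definition is_glb :: "'a lat \<Rightarrow> 'a set \<Rightarrow> 'a \<Rightarrow> bool" where
  "is_glb L S z \<longleftrightarrow> z \<in> flats L \<and> (\<forall>x\<in>S. lle L z x)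
     \<and> (\<forall>w\<in>flats L. (\<forall>x\<in>S. lle L w x) \<longrightarrow> lle L w z)"

definition Join :: "'a lat \<Rightarrow> 'a set \<Rightarrow> 'a" where
  "Join L S = (THE z. is_lub L S z)"

definition join :: "'a lat \<Rightarrow> 'a \<Rightarrow> 'a \<Rightarrow> 'a" where
  "join L x y = Join L {x, y}"

definition meet :: "'a lat \<Rightarrow> 'a \<Rightarrow> 'a \<Rightarrow> 'a" where
  "meet L x y = (THE z. is_glb L {x, y} z)"

definition bot :: "'a lat \<Rightarrow> 'a" where
  "bot L = Join L {}"

definition top :: "'a lat \<Rightarrow> 'a" where
  "top L = Join L (flats L)"

definition finite_lattice :: "'a lat \<Rightarrow> bool" where
  "finite_lattice L \<longleftrightarrow> finite (flats L) \<and> flats L \<noteq> {}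
     \<and> (\<forall>x\<in>flats L. lle L x x)
     \<and> (\<forall>x\<in>flats L. \<forall>y\<in>flats L. lle L x y \<and> lle L y x \<longrightarrow> x = y)
     \<and> (\<forall>x\<in>flats L. \<forall>y\<in>flats L. \<forall>z\<in>flats L. lle L x y \<and> lle L y z \<longrightarrow> lle L x z)
     \<and> (\<forall>x\<in>flats L. \<forall>y\<in>flats L. (\<exists>z. is_lub L {x, y} z) \<and> (\<exists>z. is_glb L {x, y} z))"

definition covers :: "'a lat \<Rightarrow> 'a \<Rightarrow> 'a \<Rightarrow> bool" where
  "covers L x y \<longleftrightarrow> x \<in> flats L \<and> y \<in> flats L \<and> lless L x y
     \<and> \<not> (\<exists>z\<in>flats L. lless L x z \<and> lless L z y)"

definition max_chain :: "'a lat \<Rightarrow> 'a \<Rightarrow> nat \<Rightarrow> bool" where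
  "max_chain L F n \<longleftrightarrow> (\<exists>xs. length xs = Suc n \<and> set xs \<subseteq> flats L
     \<and> xs ! 0 = bot L \<and> xs ! n = F \<and> (\<forall>i<n. covers L (xs ! i) (xs ! Suc i)))"

definition ranked :: "'a lat \<Rightarrow> bool" where
  "ranked L \<longleftrightarrow> (\<forall>F\<in>flats L. \<forall>m n. max_chain L F m \<and> max_chain L F n \<longrightarrow> m = n)"

definition rk :: "'a lat \<Rightarrow> 'a \<Rightarrow> nat" where
  "rk L F = (THE n. max_chain L F n)"

definition atoms :: "'a lat \<Rightarrow> 'a set" where
  "atoms L = {a \<in> flats L. rk L a = 1}"

definition atomic :: "'a lat \<Rightarrow> bool" where
  "atomic L \<longleftrightarrow> (\<forall>F\<in>flats L. \<exists>S\<subseteq>atoms L. F = Join L S)"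

definition semimodular :: "'a lat \<Rightarrow> bool" where
  "semimodular L \<longleftrightarrow> (\<forall>F1\<in>flats L. \<forall>F2\<in>flats L.
     rk L (meet L F1 F2) + rk L (join L F1 F2) \<le> rk L F1 + rk L F2)"

definition geometric_lattice :: "'a lat \<Rightarrow> bool" where
  "geometric_lattice L \<longleftrightarrow> finite_lattice L \<and> ranked L \<and> atomic L \<and> semimodular L"

definition nontrivial :: "'a lat \<Rightarrow> bool" where
  "nontrivial L \<longleftrightarrow> card (flats L) \<ge> 2"

definition modular_flat :: "'a lat \<Rightarrow> 'a \<Rightarrow> bool" where
  "modular_flat L F \<longleftrightarrow> F \<in> flats L \<and> (\<forall>F'\<in>flats L.
     rk L (meet L F F') + rk L (join L F F') = rk L F + rk L F')"

definition interval :: "'a lat \<Rightarrow> 'a \<Rightarrow> 'a \<Rightarrow> 'a set" where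
  "interval L a b = {x \<in> flats L. lle L a x \<and> lle L x b}"

definition embedding :: "'a lat \<Rightarrow> 'b lat \<Rightarrow> ('a \<Rightarrow> 'b) \<Rightarrow> bool" where
  "embedding L1 L2 \<phi> \<longleftrightarrow> inj_on \<phi> (flats L1) \<and> \<phi> ` flats L1 \<subseteq> flats L2
     \<and> (\<forall>x\<in>flats L1. \<forall>y\<in>flats L1. lle L1 x y \<longrightarrow> lle L2 (\<phi> x) (\<phi> y))
     \<and> (\<forall>S\<subseteq>flats L1. \<phi> (Join L1 S) = Join L2 (\<phi> ` S))
     \<and> \<phi> ` atoms L1 \<subseteq> atoms L2"

text \<open>Extensions are lattices whose flats are natural numbers (every finite lattice
  is isomorphic to such a lattice).\<close>
definition F_iota :: "'a lat \<Rightarrow> ('a \<Rightarrow> nat) \<Rightarrow> nat" where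
  "F_iota L \<iota> = \<iota> (top L)"

definition modular_extension :: "'a lat \<Rightarrow> nat lat \<Rightarrow> ('a \<Rightarrow> nat) \<Rightarrow> bool" where
  "modular_extension L E \<iota> \<longleftrightarrow> geometric_lattice E \<and> embedding L E \<iota>
     \<and> (\<exists>F. modular_flat E F \<and> \<iota> ` flats L = interval E (bot E) F)"

type_synonym 'a mdiag = "nat lat \<times> ('a \<Rightarrow> nat) \<times> nat list"

definition modular_diagram :: "'a lat \<Rightarrow> 'a mdiag \<Rightarrow> bool" where
  "modular_diagram L \<Gamma> = (case \<Gamma> of (E, \<iota>, J) \<Rightarrow>
     modular_extension L E \<iota> \<and> set J \<subseteq> atoms E)"

definition transposed :: "'b list \<Rightarrow> 'b list \<Rightarrow> bool" where
  "transposed J J' \<longleftrightarrow> (\<exists>i j. i < length J \<and> j < length J \<and> i \<noteq> j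
     \<and> J' = J[i := J ! j, j := J ! i])"

definition rel_R1 :: "'a lat \<Rightarrow> 'a mdiag \<Rightarrow> 'a mdiag \<Rightarrow> bool" where
  "rel_R1 L \<Gamma> \<Gamma>' \<longleftrightarrow> modular_diagram L \<Gamma> \<and> modular_diagram L \<Gamma>'
     \<and> fst \<Gamma> = fst \<Gamma>' \<and> fst (snd \<Gamma>) = fst (snd \<Gamma>')
     \<and> transposed (snd (snd \<Gamma>)) (snd (snd \<Gamma>'))"

definition rel_R2 :: "'a lat \<Rightarrow> 'a mdiag \<Rightarrow> 'a mdiag \<Rightarrow> bool" where
  "rel_R2 L \<Gamma> \<Gamma>' \<longleftrightarrow> modular_diagram L \<Gamma> \<and> modular_diagram L \<Gamma>'
     \<and> (case \<Gamma> of (E, \<iota>, J) \<Rightarrow> case \<Gamma>' of (E', \<iota>', J') \<Rightarrow>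
         (\<exists>\<phi>. embedding E E' \<phi> \<and> rk E (top E) = rk E' (top E')
            \<and> (\<forall>x\<in>flats L. \<iota>' x = \<phi> (\<iota> x)) \<and> J' = map \<phi> J))"

definition rel_R3 :: "'a lat \<Rightarrow> 'a mdiag \<Rightarrow> bool" where
  "rel_R3 L \<Gamma> \<longleftrightarrow> modular_diagram L \<Gamma>
     \<and> (case \<Gamma> of (E, \<iota>, J) \<Rightarrow> lless E (join E (F_iota L \<iota>) (Join E (set J))) (top E))"

definition order_iso_prod :: "nat lat \<Rightarrow> nat lat \<Rightarrow> nat lat \<Rightarrow> (nat \<Rightarrow> nat \<times> nat) \<Rightarrow> bool" where
  "order_iso_prod E E1 E2 \<psi> \<longleftrightarrow> bij_betw \<psi> (flats E) (flats E1 \<times> flats E2)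
     \<and> (\<forall>x\<in>flats E. \<forall>y\<in>flats E. lle E x y \<longleftrightarrow>
          (lle E1 (fst (\<psi> x)) (fst (\<psi> y)) \<and> lle E2 (snd (\<psi> x)) (snd (\<psi> y))))"

definition rel_R4 :: "'a lat \<Rightarrow> 'a mdiag \<Rightarrow> bool" where
  "rel_R4 L \<Gamma> \<longleftrightarrow> modular_diagram L \<Gamma>
     \<and> (case \<Gamma> of (E, \<iota>, J) \<Rightarrow>
         (\<exists>E1 E2 \<psi>. finite_lattice E1 \<and> finite_lattice E2 \<and> nontrivial E1 \<and> nontrivial E2
            \<and> order_iso_prod E E1 E2 \<psi> \<and> snd (\<psi> (F_iota L \<iota>)) = bot E2))"

definition rel_R5 :: "'a lat \<Rightarrow> 'a mdiag \<Rightarrow> bool" where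
  "rel_R5 L \<Gamma> \<longleftrightarrow> modular_diagram L \<Gamma>
     \<and> (case \<Gamma> of (E, \<iota>, J) \<Rightarrow>
         (\<exists>F. modular_flat E F \<and> lle E (F_iota L \<iota>) F
            \<and> card {i. i < length J \<and> \<not> lle E (J ! i) F} = 2))"

definition delta :: "'b \<Rightarrow> 'b \<Rightarrow> rat" where
  "delta x = (\<lambda>y. if y = x then 1 else 0)"

definition supp :: "('b \<Rightarrow> rat) \<Rightarrow> 'b set" where
  "supp u = {x. u x \<noteq> 0}"

text \<open>Formal finite Q-linear combinations of modular diagrams of L.\<close>
definition free_MD :: "'a lat \<Rightarrow> ('a mdiag \<Rightarrow> rat) set" where
  "free_MD L = {u. finite (supp u) \<and> supp u \<subseteq> {\<Gamma>. modular_diagram L \<Gamma>}}"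

text \<open>The subspace spanned by the relations (R1)--(R5); MD(L) is free_MD L modulo it.\<close>
inductive_set rel_span :: "'a lat \<Rightarrow> ('a mdiag \<Rightarrow> rat) set" for L where
  zero: "(\<lambda>_. 0) \<in> rel_span L"
| add: "u \<in> rel_span L \<Longrightarrow> v \<in> rel_span L \<Longrightarrow> (\<lambda>x. u x + v x) \<in> rel_span L"
| smult: "u \<in> rel_span L \<Longrightarrow> (\<lambda>x. c * u x) \<in> rel_span L"
| R1: "rel_R1 L \<Gamma> \<Gamma>' \<Longrightarrow> (\<lambda>x. delta \<Gamma> x + delta \<Gamma>' x) \<in> rel_span L"
| R2: "rel_R2 L \<Gamma> \<Gamma>' \<Longrightarrow> (\<lambda>x. delta \<Gamma> x - delta \<Gamma>' x) \<in> rel_span L"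
| R3: "rel_R3 L \<Gamma> \<Longrightarrow> delta \<Gamma> \<in> rel_span L"
| R4: "rel_R4 L \<Gamma> \<Longrightarrow> delta \<Gamma> \<in> rel_span L"
| R5: "rel_R5 L \<Gamma> \<Longrightarrow> delta \<Gamma> \<in> rel_span L"

text \<open>The pushout E1 \<union>_L E2, with a pair (F1,F2) encoded as the natural number
  prod_encode (F1,F2).\<close>
definition pushout :: "'a lat \<Rightarrow> nat lat \<Rightarrow> ('a \<Rightarrow> nat) \<Rightarrow> nat lat \<Rightarrow> ('a \<Rightarrow> nat) \<Rightarrow> nat lat" where
  "pushout L E1 \<iota>1 E2 \<iota>2 =
     \<lparr> flats = prod_encode ` {(F1, F2). F1 \<in> flats E1 \<and> F2 \<in> flats E2 \<and>
          inv_into (flats L) \<iota>1 (meet E1 F1 (F_iota L \<iota>1))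
            = inv_into (flats L) \<iota>2 (meet E2 F2 (F_iota L \<iota>2))},
       lle = (\<lambda>x y. lle E1 (fst (prod_decode x)) (fst (prod_decode y))
                  \<and> lle E2 (snd (prod_decode x)) (snd (prod_decode y))) \<rparr>"

definition iota12 :: "('a \<Rightarrow> nat) \<Rightarrow> ('a \<Rightarrow> nat) \<Rightarrow> 'a \<Rightarrow> nat" where
  "iota12 \<iota>1 \<iota>2 A = prod_encode (\<iota>1 A, \<iota>2 A)"

text \<open>Atoms of E1 (resp. E2) read as atoms of the pushout: H \<mapsto> (H, \<hat>0) if H is not in
  the image of L, and \<iota>1(A) \<mapsto> (\<iota>1(A), \<iota>2(A)) for A an atom of L.\<close>
definition lift1 :: "'a lat \<Rightarrow> nat lat \<Rightarrow> ('a \<Rightarrow> nat) \<Rightarrow> ('a \<Rightarrow> nat) \<Rightarrow> nat \<Rightarrow> nat" where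
  "lift1 L E1 \<iota>1 \<iota>2 H = prod_encode (H, \<iota>2 (inv_into (flats L) \<iota>1 (meet E1 H (F_iota L \<iota>1))))"

definition lift2 :: "'a lat \<Rightarrow> nat lat \<Rightarrow> ('a \<Rightarrow> nat) \<Rightarrow> ('a \<Rightarrow> nat) \<Rightarrow> nat \<Rightarrow> nat" where
  "lift2 L E2 \<iota>1 \<iota>2 H = prod_encode (\<iota>1 (inv_into (flats L) \<iota>2 (meet E2 H (F_iota L \<iota>2))), H)"

definition dprod :: "'a lat \<Rightarrow> 'a mdiag \<Rightarrow> 'a mdiag \<Rightarrow> 'a mdiag" where
  "dprod L \<Gamma>1 \<Gamma>2 = (case \<Gamma>1 of (E1, \<iota>1, J1) \<Rightarrow> case \<Gamma>2 of (E2, \<iota>2, J2) \<Rightarrow>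
     (pushout L E1 \<iota>1 E2 \<iota>2, iota12 \<iota>1 \<iota>2,
      map (lift1 L E1 \<iota>1 \<iota>2) J1 @ map (lift2 L E2 \<iota>1 \<iota>2) J2))"

definition vprod :: "'a lat \<Rightarrow> ('a mdiag \<Rightarrow> rat) \<Rightarrow> ('a mdiag \<Rightarrow> rat) \<Rightarrow> ('a mdiag \<Rightarrow> rat)" where
  "vprod L u v = (\<lambda>\<Gamma>. \<Sum>p\<in>{p \<in> supp u \<times> supp v. dprod L (fst p) (snd p) = \<Gamma>}.
                        u (fst p) * v (snd p))"

end

theory Submission
  imports Defs
begin

locale flat =
  fixes L :: "'a lat"
  assumes fl: "finite_lattice L"
begin

lemma fin: "finite (flats L)" using fl unfolding finite_lattice_def by auto
lemma ne: "flats L \<noteq> {}" using fl unfolding finite_lattice_def by auto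
lemma refl[simp]: "x \<in> flats L \<Longrightarrow> lle L x x" using fl unfolding finite_lattice_def by auto
lemma antisym: "x \<in> flats L \<Longrightarrow> y \<in> flats L \<Longrightarrow> lle L x y \<Longrightarrow> lle L y x \<Longrightarrow> x = y"
proof -
  have "\<forall>x\<in>flats L. \<forall>y\<in>flats L. lle L x y \<and> lle L y x \<longrightarrow> x = y"
    using fl unfolding finite_lattice_def by (elim conjE)
  then show "x \<in> flats L \<Longrightarrow> y \<in> flats L \<Longrightarrow> lle L x y \<Longrightarrow> lle L y x \<Longrightarrow> x = y" by blast
qed
lemma trans: "x \<in> flats L \<Longrightarrow> y \<in> flats L \<Longrightarrow> z \<in> flats L \<Longrightarrow> lle L x y \<Longrightarrow> lle L y z \<Longrightarrow> lle L x z"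
proof -
  have "\<forall>x\<in>flats L. \<forall>y\<in>flats L. \<forall>z\<in>flats L. lle L x y \<and> lle L y z \<longrightarrow> lle L x z"
    using fl unfolding finite_lattice_def by (elim conjE)
  then show "x \<in> flats L \<Longrightarrow> y \<in> flats L \<Longrightarrow> z \<in> flats L \<Longrightarrow> lle L x y \<Longrightarrow> lle L y z \<Longrightarrow> lle L x z" by blast
qed
lemma lub2: "x \<in> flats L \<Longrightarrow> y \<in> flats L \<Longrightarrow> \<exists>z. is_lub L {x,y} z"
proof -
  have "\<forall>x\<in>flats L. \<forall>y\<in>flats L. (\<exists>z. is_lub L {x, y} z) \<and> (\<exists>z. is_glb L {x, y} z)"
    using fl unfolding finite_lattice_def by (elim conjE)
  then show "x \<in> flats L \<Longrightarrow> y \<in> flats L \<Longrightarrow> \<exists>z. is_lub L {x,y} z" by blast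
qed
lemma glb2: "x \<in> flats L \<Longrightarrow> y \<in> flats L \<Longrightarrow> \<exists>z. is_glb L {x,y} z"
proof -
  have "\<forall>x\<in>flats L. \<forall>y\<in>flats L. (\<exists>z. is_lub L {x, y} z) \<and> (\<exists>z. is_glb L {x, y} z)"
    using fl unfolding finite_lattice_def by (elim conjE)
  then show "x \<in> flats L \<Longrightarrow> y \<in> flats L \<Longrightarrow> \<exists>z. is_glb L {x,y} z" by blast
qed

lemma lub_unique: "is_lub L S z \<Longrightarrow> is_lub L S z' \<Longrightarrow> z = z'"
  unfolding is_lub_def by (blast intro: antisym)
lemma glb_unique: "is_glb L S z \<Longrightarrow> is_glb L S z' \<Longrightarrow> z = z'"
  unfolding is_glb_def by (blast intro: antisym)

lemma glb_ne: "finite S \<Longrightarrow> S \<noteq> {} \<Longrightarrow> S \<subseteq> flats L \<Longrightarrow> \<exists>z. is_glb L S z"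
proof (induction S rule: finite_ne_induct)
  case (singleton x)
  then show ?case unfolding is_glb_def by auto
next
  case (insert x F)
  then obtain g where g: "is_glb L F g" by auto
  then have gi: "g \<in> flats L" unfolding is_glb_def by auto
  obtain h where h: "is_glb L {x,g} h" using glb2[of x g] insert gi by auto
  have Fs: "F \<subseteq> flats L" "x \<in> flats L" using insert.prems by auto
  have "is_glb L (insert x F) h"
    using g h Fs gi unfolding is_glb_def by (auto simp: subset_iff intro: trans[of h g])
  then show ?case by blast
qed

lemma lub_ne: "finite S \<Longrightarrow> S \<noteq> {} \<Longrightarrow> S \<subseteq> flats L \<Longrightarrow> \<exists>z. is_lub L S z"
proof (induction S rule: finite_ne_induct)
  case (singleton x)
  then show ?case unfolding is_lub_def by auto
next
  case (insert x F)
  then obtain g where g: "is_lub L F g" by auto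
  then have gi: "g \<in> flats L" unfolding is_lub_def by auto
  obtain h where h: "is_lub L {x,g} h" using lub2[of x g] insert gi by auto
  have Fs: "F \<subseteq> flats L" "x \<in> flats L" using insert.prems by auto
  have "is_lub L (insert x F) h"
    using g h Fs gi unfolding is_lub_def by (auto simp: subset_iff intro: trans[of _ g h])
  then show ?case by blast
qed

lemma lub_ex: "S \<subseteq> flats L \<Longrightarrow> \<exists>z. is_lub L S z"
proof (cases "S = {}")
  case True
  obtain g where "is_glb L (flats L) g" using glb_ne[OF fin ne] by auto
  then have "is_lub L S g" using True unfolding is_glb_def is_lub_def by auto
  then show ?thesis by blast
next
  case False
  assume "S \<subseteq> flats L"
  then show ?thesis using lub_ne[OF finite_subset[OF _ fin] False] by auto
qed

lemma Join_lub: "S \<subseteq> flats L \<Longrightarrow> is_lub L S (Join L S)"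
  unfolding Join_def using lub_ex lub_unique by (metis theI)

lemma Join_eq: "is_lub L S z \<Longrightarrow> Join L S = z"
  unfolding Join_def using lub_unique by blast

lemma Join_in[simp]: "S \<subseteq> flats L \<Longrightarrow> Join L S \<in> flats L"
  using Join_lub unfolding is_lub_def by auto
lemma Join_upper: "S \<subseteq> flats L \<Longrightarrow> x \<in> S \<Longrightarrow> lle L x (Join L S)"
  using Join_lub unfolding is_lub_def by auto
lemma Join_least: "S \<subseteq> flats L \<Longrightarrow> w \<in> flats L \<Longrightarrow> (\<And>x. x \<in> S \<Longrightarrow> lle L x w) \<Longrightarrow> lle L (Join L S) w"
  using Join_lub unfolding is_lub_def by auto

lemma join_in[simp]: "x \<in> flats L \<Longrightarrow> y \<in> flats L \<Longrightarrow> join L x y \<in> flats L"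
  unfolding join_def by auto
lemma join_ub1: "x \<in> flats L \<Longrightarrow> y \<in> flats L \<Longrightarrow> lle L x (join L x y)"
  unfolding join_def by (rule Join_upper) auto
lemma join_ub2: "x \<in> flats L \<Longrightarrow> y \<in> flats L \<Longrightarrow> lle L y (join L x y)"
  unfolding join_def by (rule Join_upper) auto
lemma join_least: "x \<in> flats L \<Longrightarrow> y \<in> flats L \<Longrightarrow> w \<in> flats L \<Longrightarrow> lle L x w \<Longrightarrow> lle L y w \<Longrightarrow> lle L (join L x y) w"
  unfolding join_def by (rule Join_least) auto
lemma join_eq: "x \<in> flats L \<Longrightarrow> y \<in> flats L \<Longrightarrow> z \<in> flats L \<Longrightarrow> lle L x z \<Longrightarrow> lle L y z
   \<Longrightarrow> (\<And>w. w \<in> flats L \<Longrightarrow> lle L x w \<Longrightarrow> lle L y w \<Longrightarrow> lle L z w) \<Longrightarrow> join L x y = z"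
proof -
  assume a: "x \<in> flats L" "y \<in> flats L" "z \<in> flats L" "lle L x z" "lle L y z"
    "\<And>w. w \<in> flats L \<Longrightarrow> lle L x w \<Longrightarrow> lle L y w \<Longrightarrow> lle L z w"
  have "is_lub L {x,y} z" using a unfolding is_lub_def by blast
  then show ?thesis unfolding join_def by (rule Join_eq)
qed

lemma meet_glb: "x \<in> flats L \<Longrightarrow> y \<in> flats L \<Longrightarrow> is_glb L {x,y} (meet L x y)"
  unfolding meet_def using glb2 glb_unique by (metis theI)
lemma meet_in[simp]: "x \<in> flats L \<Longrightarrow> y \<in> flats L \<Longrightarrow> meet L x y \<in> flats L"
  using meet_glb unfolding is_glb_def by auto
lemma meet_lb1: "x \<in> flats L \<Longrightarrow> y \<in> flats L \<Longrightarrow> lle L (meet L x y) x"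
  using meet_glb unfolding is_glb_def by auto
lemma meet_lb2: "x \<in> flats L \<Longrightarrow> y \<in> flats L \<Longrightarrow> lle L (meet L x y) y"
  using meet_glb unfolding is_glb_def by auto
lemma meet_greatest: "x \<in> flats L \<Longrightarrow> y \<in> flats L \<Longrightarrow> w \<in> flats L \<Longrightarrow> lle L w x \<Longrightarrow> lle L w y \<Longrightarrow> lle L w (meet L x y)"
  using meet_glb unfolding is_glb_def by auto
lemma meet_eq: "x \<in> flats L \<Longrightarrow> y \<in> flats L \<Longrightarrow> z \<in> flats L \<Longrightarrow> lle L z x \<Longrightarrow> lle L z y
   \<Longrightarrow> (\<And>w. w \<in> flats L \<Longrightarrow> lle L w x \<Longrightarrow> lle L w y \<Longrightarrow> lle L w z) \<Longrightarrow> meet L x y = z"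
proof -
  assume a: "x \<in> flats L" "y \<in> flats L" "z \<in> flats L" "lle L z x" "lle L z y"
    "\<And>w. w \<in> flats L \<Longrightarrow> lle L w x \<Longrightarrow> lle L w y \<Longrightarrow> lle L w z"
  have "is_glb L {x,y} z" using a unfolding is_glb_def by blast
  then show ?thesis using meet_glb[OF a(1,2)] glb_unique by blast
qed

lemma bot_in[simp]: "bot L \<in> flats L" unfolding bot_def by auto
lemma bot_le: "x \<in> flats L \<Longrightarrow> lle L (bot L) x" unfolding bot_def by (rule Join_least) auto
lemma top_in[simp]: "top L \<in> flats L" unfolding top_def by auto
lemma le_top: "x \<in> flats L \<Longrightarrow> lle L x (top L)" unfolding top_def by (rule Join_upper) auto

lemma Join_insert: "x \<in> flats L \<Longrightarrow> S \<subseteq> flats L \<Longrightarrow> Join L (insert x S) = join L x (Join L S)"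
proof -
  assume a: "x \<in> flats L" "S \<subseteq> flats L"
  have J: "Join L S \<in> flats L" using a by simp
  have "is_lub L (insert x S) (join L x (Join L S))"
    unfolding is_lub_def
  proof (intro conjI ballI impI)
    show "join L x (Join L S) \<in> flats L" using a J by simp
  next
    fix y assume "y \<in> insert x S"
    then show "lle L y (join L x (Join L S))"
    proof
      assume "y = x" then show ?thesis using a J join_ub1 by simp
    next
      assume "y \<in> S"
      then have "y \<in> flats L" "lle L y (Join L S)" using a(2) Join_upper[OF a(2)] by auto
      then show ?thesis using trans[OF _ J, of y "join L x (Join L S)"] join_ub2[OF a(1) J] a(1) J by simp
    qed
  next
    fix w assume w: "w \<in> flats L" "\<forall>y\<in>insert x S. lle L y w"
    have "lle L (Join L S) w" using Join_least[OF a(2) w(1)] w(2) by auto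
    then show "lle L (join L x (Join L S)) w" using join_least[OF a(1) J w(1)] w(2) by auto
  qed
  then show ?thesis by (rule Join_eq)
qed

lemma join_le_iff: "x \<in> flats L \<Longrightarrow> y \<in> flats L \<Longrightarrow> w \<in> flats L \<Longrightarrow> lle L (join L x y) w \<longleftrightarrow> lle L x w \<and> lle L y w"
  using join_least[of x y w] trans[of x "join L x y" w] trans[of y "join L x y" w] join_ub1[of x y] join_ub2[of x y]
    join_in[of x y] by blast
lemma le_meet_iff: "x \<in> flats L \<Longrightarrow> y \<in> flats L \<Longrightarrow> w \<in> flats L \<Longrightarrow> lle L w (meet L x y) \<longleftrightarrow> lle L w x \<and> lle L w y"
  using meet_greatest[of x y w] trans[of w "meet L x y" x] trans[of w "meet L x y" y] meet_lb1[of x y] meet_lb2[of x y]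
    meet_in[of x y] by blast

lemma join_comm: "x \<in> flats L \<Longrightarrow> y \<in> flats L \<Longrightarrow> join L x y = join L y x"
  unfolding join_def by (simp add: insert_commute)
lemma meet_comm: "x \<in> flats L \<Longrightarrow> y \<in> flats L \<Longrightarrow> meet L x y = meet L y x"
  unfolding meet_def by (simp add: insert_commute)
lemma join_absorb: "x \<in> flats L \<Longrightarrow> y \<in> flats L \<Longrightarrow> lle L x y \<Longrightarrow> join L x y = y"
  by (rule join_eq) auto
lemma join_absorb2: "x \<in> flats L \<Longrightarrow> y \<in> flats L \<Longrightarrow> lle L y x \<Longrightarrow> join L x y = x"
  by (rule join_eq) auto
lemma meet_absorb: "x \<in> flats L \<Longrightarrow> y \<in> flats L \<Longrightarrow> lle L x y \<Longrightarrow> meet L x y = x"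
  by (rule meet_eq) auto
lemma meet_absorb2: "x \<in> flats L \<Longrightarrow> y \<in> flats L \<Longrightarrow> lle L y x \<Longrightarrow> meet L x y = y"
  by (rule meet_eq) auto
lemma join_assoc: "x \<in> flats L \<Longrightarrow> y \<in> flats L \<Longrightarrow> z \<in> flats L \<Longrightarrow> join L (join L x y) z = join L x (join L y z)"
proof -
  assume a: "x \<in> flats L" "y \<in> flats L" "z \<in> flats L"
  have i: "join L x y \<in> flats L" "join L y z \<in> flats L" "join L (join L x y) z \<in> flats L"
    "join L x (join L y z) \<in> flats L" using a by auto
  have u: "lle L x (join L x y)" "lle L y (join L x y)" "lle L y (join L y z)" "lle L z (join L y z)"
    "lle L (join L x y) (join L (join L x y) z)" "lle L z (join L (join L x y) z)"
    "lle L x (join L x (join L y z))" "lle L (join L y z) (join L x (join L y z))"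
    using a i by (simp_all add: join_ub1 join_ub2)
  show ?thesis
  proof (rule antisym[OF i(3,4)])
    have "lle L y (join L x (join L y z))" "lle L z (join L x (join L y z))"
      using trans[OF a(2) i(2) i(4) u(3) u(8)] trans[OF a(3) i(2) i(4) u(4) u(8)] .
    then show "lle L (join L (join L x y) z) (join L x (join L y z))"
      using a i u by (simp add: join_le_iff)
    have "lle L x (join L (join L x y) z)" "lle L y (join L (join L x y) z)"
      using trans[OF a(1) i(1) i(3) u(1) u(5)] trans[OF a(2) i(1) i(3) u(2) u(5)] .
    then show "lle L (join L x (join L y z)) (join L (join L x y) z)"
      using a i u by (simp add: join_le_iff)
  qed
qed

lemma join_mono: "x \<in> flats L \<Longrightarrow> y \<in> flats L \<Longrightarrow> x' \<in> flats L \<Longrightarrow> y' \<in> flats L \<Longrightarrow> lle L x x' \<Longrightarrow> lle L y y'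
   \<Longrightarrow> lle L (join L x y) (join L x' y')"
  using join_le_iff[of x y "join L x' y'"] trans[of x x' "join L x' y'"] trans[of y y' "join L x' y'"]
    join_ub1[of x' y'] join_ub2[of x' y'] join_in[of x' y'] by blast
lemma meet_mono: "x \<in> flats L \<Longrightarrow> y \<in> flats L \<Longrightarrow> x' \<in> flats L \<Longrightarrow> y' \<in> flats L \<Longrightarrow> lle L x x' \<Longrightarrow> lle L y y'
   \<Longrightarrow> lle L (meet L x y) (meet L x' y')"
  using le_meet_iff[of x' y' "meet L x y"] trans[of "meet L x y" x x'] trans[of "meet L x y" y y']
    meet_lb1[of x y] meet_lb2[of x y] meet_in[of x y] by blast
lemma join_bot: "x \<in> flats L \<Longrightarrow> join L (bot L) x = x"
  by (simp add: bot_le join_absorb)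
lemma top_unique: "x \<in> flats L \<Longrightarrow> (\<And>y. y \<in> flats L \<Longrightarrow> lle L y x) \<Longrightarrow> top L = x"
  by (simp add: antisym le_top)
lemma bot_unique: "x \<in> flats L \<Longrightarrow> (\<And>y. y \<in> flats L \<Longrightarrow> lle L x y) \<Longrightarrow> bot L = x"
  by (simp add: antisym bot_le)

lemma exists_cover_below:
  assumes "x \<in> flats L" "y \<in> flats L" "lless L x y"
  shows "\<exists>z\<in>flats L. lle L x z \<and> covers L z y"
proof -
  let ?T = "{z \<in> flats L. lle L x z \<and> lless L z y}"
  let ?m = "\<lambda>z. card {w \<in> flats L. lle L z w}"
  have "x \<in> ?T" using assms by auto
  then obtain z where z: "z \<in> ?T" and min: "\<And>w. w \<in> ?T \<Longrightarrow> ?m z \<le> ?m w"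
    using ex_has_least_nat[of "\<lambda>z. z \<in> ?T" x ?m] by blast
  have "\<not> (\<exists>w\<in>flats L. lless L z w \<and> lless L w y)"
  proof
    assume "\<exists>w\<in>flats L. lless L z w \<and> lless L w y"
    then obtain w where w: "w \<in> flats L" "lless L z w" "lless L w y" by blast
    have "lle L x w" using trans[of x z w] w z assms unfolding lless_def by blast
    then have wT: "w \<in> ?T" using w by auto
    have "{v \<in> flats L. lle L w v} \<subseteq> {v \<in> flats L. lle L z v}"
      using trans[of z w] w z unfolding lless_def by blast
    moreover have "z \<notin> {v \<in> flats L. lle L w v}" using antisym[of z w] w z unfolding lless_def by auto
    moreover have "z \<in> {v \<in> flats L. lle L z v}" using z by auto
    ultimately have "{v \<in> flats L. lle L w v} \<subset> {v \<in> flats L. lle L z v}" by blast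
    then have "?m w < ?m z" using fin by (intro psubset_card_mono) auto
    with min[OF wT] show False by linarith
  qed
  then have "covers L z y" using z assms unfolding covers_def by auto
  then show ?thesis using z by blast
qed

lemma max_chain_cover:
  assumes "max_chain L z n" "covers L z y"
  shows "max_chain L y (Suc n)"
proof -
  obtain xs where xs: "length xs = Suc n" "set xs \<subseteq> flats L" "xs ! 0 = bot L" "xs ! n = z"
    "\<forall>i<n. covers L (xs ! i) (xs ! Suc i)"
    using assms(1) unfolding max_chain_def by blast
  have y: "y \<in> flats L" using assms(2) unfolding covers_def by auto
  let ?ys = "xs @ [y]"
  have "length ?ys = Suc (Suc n)" using xs by simp
  moreover have "set ?ys \<subseteq> flats L" using xs y by auto
  moreover have "?ys ! 0 = bot L" using xs by (simp add: nth_append)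
  moreover have "?ys ! Suc n = y" using xs by (simp add: nth_append)
  moreover have "\<forall>i<Suc n. covers L (?ys ! i) (?ys ! Suc i)"
  proof (intro allI impI)
    fix i assume i: "i < Suc n"
    show "covers L (?ys ! i) (?ys ! Suc i)"
    proof (cases "i < n")
      case True
      then show ?thesis using xs by (simp add: nth_append)
    next
      case False
      then have "i = n" using i by simp
      then show ?thesis using xs assms(2) by (simp add: nth_append)
    qed
  qed
  ultimately show ?thesis unfolding max_chain_def by blast
qed

lemma max_chain_ex: "x \<in> flats L \<Longrightarrow> \<exists>n. max_chain L x n"
proof (induction "card {w \<in> flats L. lless L w x}" arbitrary: x rule: less_induct)
  case less
  show ?case
  proof (cases "x = bot L")
    case True
    then have "max_chain L x 0" unfolding max_chain_def by (intro exI[of _ "[bot L]"]) auto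
    then show ?thesis by blast
  next
    case False
    then have "lless L (bot L) x" using bot_le less.prems unfolding lless_def by auto
    then obtain z where z: "z \<in> flats L" "covers L z x"
      using exists_cover_below[of "bot L" x] less.prems by auto
    have "{w \<in> flats L. lless L w z} \<subseteq> {w \<in> flats L. lless L w x}"
      using z trans[of _ z x] antisym[of _ x] less.prems unfolding covers_def lless_def by blast
    moreover have "z \<in> {w \<in> flats L. lless L w x}" "z \<notin> {w \<in> flats L. lless L w z}"
      using z unfolding covers_def lless_def by auto
    ultimately have "{w \<in> flats L. lless L w z} \<subset> {w \<in> flats L. lless L w x}" by blast
    then have "card {w \<in> flats L. lless L w z} < card {w \<in> flats L. lless L w x}"
      using fin by (intro psubset_card_mono) auto
    then obtain n where "max_chain L z n" using less.hyps z by blast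
    then show ?thesis using max_chain_cover z by blast
  qed
qed

lemma chain_rank_fun:
  assumes "\<rho> (bot L) = 0" "\<And>x y. covers L x y \<Longrightarrow> \<rho> y = Suc (\<rho> x)" "max_chain L x n"
  shows "n = \<rho> x"
proof -
  obtain xs where xs: "length xs = Suc n" "set xs \<subseteq> flats L" "xs ! 0 = bot L" "xs ! n = x"
    "\<forall>i<n. covers L (xs ! i) (xs ! Suc i)"
    using assms(3) unfolding max_chain_def by blast
  have "i \<le> n \<Longrightarrow> \<rho> (xs ! i) = i" for i
  proof (induction i)
    case 0 then show ?case using xs assms(1) by simp
  next
    case (Suc i)
    then have "\<rho> (xs ! i) = i" "covers L (xs ! i) (xs ! Suc i)" using xs(5) by auto
    then show ?case using assms(2) by simp
  qed
  from this[of n] show ?thesis using xs(4) by simp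
qed

lemma rank_fun:
  assumes "\<rho> (bot L) = 0" "\<And>x y. covers L x y \<Longrightarrow> \<rho> y = Suc (\<rho> x)"
  shows "ranked L" "x \<in> flats L \<Longrightarrow> rk L x = \<rho> x"
proof -
  show "ranked L" unfolding ranked_def using chain_rank_fun[where \<rho>=\<rho>, OF assms] by metis
  assume x: "x \<in> flats L"
  have "max_chain L x (\<rho> x)" using max_chain_ex[OF x] chain_rank_fun[where \<rho>=\<rho>, OF assms] by metis
  then show "rk L x = \<rho> x" unfolding rk_def using chain_rank_fun[where \<rho>=\<rho>, OF assms] by blast
qed

end

locale rflat = flat +
  assumes rkd: "ranked L"
begin

lemma rk_chain: "x \<in> flats L \<Longrightarrow> max_chain L x (rk L x)"
  unfolding rk_def using max_chain_ex rkd unfolding ranked_def by (metis theI)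

lemma rk_unique: "x \<in> flats L \<Longrightarrow> max_chain L x n \<Longrightarrow> rk L x = n"
  using rk_chain rkd unfolding ranked_def by blast

lemma rk_bot[simp]: "rk L (bot L) = 0"
  by (rule rk_unique) (auto simp: max_chain_def intro!: exI[of _ "[bot L]"])

lemma rk_cover: "covers L x y \<Longrightarrow> rk L y = Suc (rk L x)"
  using rk_unique max_chain_cover rk_chain unfolding covers_def by blast

lemma rk_strict_aux: "y \<in> flats L \<Longrightarrow> \<forall>x\<in>flats L. lless L x y \<longrightarrow> rk L x < rk L y"
proof (induction "card {w \<in> flats L. lless L w y}" arbitrary: y rule: less_induct)
  case less
  show ?case
  proof (intro ballI impI)
    fix x assume x: "x \<in> flats L" "lless L x y"
    obtain z where z: "z \<in> flats L" "lle L x z" "covers L z y"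
      using exists_cover_below[OF x(1) less.prems x(2)] by blast
    have ry: "rk L y = Suc (rk L z)" using rk_cover[OF z(3)] .
    show "rk L x < rk L y"
    proof (cases "x = z")
      case True then show ?thesis using ry by simp
    next
      case False
      have "{w \<in> flats L. lless L w z} \<subseteq> {w \<in> flats L. lless L w y}"
        using z trans[of _ z y] antisym[of _ y] less.prems unfolding covers_def lless_def by blast
      moreover have "z \<in> {w \<in> flats L. lless L w y}" "z \<notin> {w \<in> flats L. lless L w z}"
        using z unfolding covers_def lless_def by auto
      ultimately have "{w \<in> flats L. lless L w z} \<subset> {w \<in> flats L. lless L w y}" by blast
      then have "card {w \<in> flats L. lless L w z} < card {w \<in> flats L. lless L w y}"
        using fin by (intro psubset_card_mono) auto
      then have "\<forall>x\<in>flats L. lless L x z \<longrightarrow> rk L x < rk L z" using less.hyps z by blast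
      then have "rk L x < rk L z" using x z False unfolding lless_def by blast
      then show ?thesis using ry by simp
    qed
  qed
qed

lemma rk_strict: "x \<in> flats L \<Longrightarrow> y \<in> flats L \<Longrightarrow> lless L x y \<Longrightarrow> rk L x < rk L y"
  using rk_strict_aux by blast

lemma rk_mono: "x \<in> flats L \<Longrightarrow> y \<in> flats L \<Longrightarrow> lle L x y \<Longrightarrow> rk L x \<le> rk L y"
  using rk_strict[of x y] unfolding lless_def by fastforce

lemma rk_eq_le: "x \<in> flats L \<Longrightarrow> y \<in> flats L \<Longrightarrow> lle L x y \<Longrightarrow> rk L y \<le> rk L x \<Longrightarrow> x = y"
  using rk_strict[of x y] unfolding lless_def by fastforce

lemma rk_zero: "x \<in> flats L \<Longrightarrow> rk L x = 0 \<Longrightarrow> x = bot L"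
  using rk_eq_le[of "bot L" x] bot_le by simp

end


locale geo =
  fixes L :: "'a lat"
  assumes geo: "geometric_lattice L"
begin

sublocale rflat L
  using geo unfolding geometric_lattice_def by unfold_locales auto

lemma semimod: "x \<in> flats L \<Longrightarrow> y \<in> flats L \<Longrightarrow> rk L (meet L x y) + rk L (join L x y) \<le> rk L x + rk L y"
  using geo unfolding geometric_lattice_def semimodular_def by blast

lemma atomicL: "x \<in> flats L \<Longrightarrow> \<exists>S\<subseteq>atoms L. x = Join L S"
  using geo unfolding geometric_lattice_def atomic_def by blast

lemma atoms_flats: "p \<in> atoms L \<Longrightarrow> p \<in> flats L" unfolding atoms_def by auto
lemma atoms_rk: "p \<in> atoms L \<Longrightarrow> rk L p = 1" unfolding atoms_def by auto

lemma atom_meet: assumes "p \<in> atoms L" "x \<in> flats L" "\<not> lle L p x" shows "meet L x p = bot L"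
proof -
  have p: "p \<in> flats L" using assms atoms_flats by auto
  have "meet L x p \<noteq> p" using meet_lb1[OF assms(2) p] assms(3) by auto
  then have "lless L (meet L x p) p" using meet_lb2[OF assms(2) p] unfolding lless_def by auto
  then have "rk L (meet L x p) < 1" using rk_strict[of "meet L x p" p] assms p atoms_rk by auto
  then show ?thesis using rk_zero[of "meet L x p"] assms p by auto
qed

lemma atom_join: assumes "p \<in> atoms L" "x \<in> flats L" "\<not> lle L p x" shows "rk L (join L x p) = Suc (rk L x)"
proof -
  have p: "p \<in> flats L" using assms atoms_flats by auto
  have "rk L (meet L x p) + rk L (join L x p) \<le> rk L x + rk L p" using semimod[OF assms(2) p] .
  then have a: "rk L (join L x p) \<le> Suc (rk L x)" using atom_meet[OF assms] atoms_rk[OF assms(1)] by simp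
  have "join L x p \<noteq> x" using join_ub2[OF assms(2) p] assms(3) by auto
  then have "lless L x (join L x p)" using join_ub1[OF assms(2) p] unfolding lless_def by auto
  then have "rk L x < rk L (join L x p)" using rk_strict assms p by simp
  then show ?thesis using a by simp
qed

lemma atom_join_le: assumes "p \<in> atoms L" "x \<in> flats L" shows "rk L (join L x p) \<le> Suc (rk L x)"
proof (cases "lle L p x")
  case True
  then have "join L x p = x" using join_absorb2 assms atoms_flats by blast
  then show ?thesis by simp
next
  case False then show ?thesis using atom_join assms by simp
qed

lemma atom_below: assumes "x \<in> flats L" "y \<in> flats L" "lle L x y" "x \<noteq> y"
  shows "\<exists>p\<in>atoms L. lle L p y \<and> \<not> lle L p x"
proof (rule ccontr)
  assume c: "\<not> (\<exists>p\<in>atoms L. lle L p y \<and> \<not> lle L p x)"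
  obtain S where S: "S \<subseteq> atoms L" "y = Join L S" using atomicL[OF assms(2)] by blast
  have Sf: "S \<subseteq> flats L" using S atoms_flats by auto
  have "\<And>p. p \<in> S \<Longrightarrow> lle L p x" using c S Join_upper[OF Sf] by blast
  then have "lle L y x" using S Join_least[OF Sf assms(1)] by simp
  then show False using antisym assms by blast
qed

lemma cover_atom: assumes "covers L x y" shows "\<exists>p\<in>atoms L. y = join L x p \<and> \<not> lle L p x"
proof -
  have xy: "x \<in> flats L" "y \<in> flats L" "lle L x y" "x \<noteq> y" using assms unfolding covers_def lless_def by auto
  obtain p where p: "p \<in> atoms L" "lle L p y" "\<not> lle L p x" using atom_below[OF xy] by blast
  have pf: "p \<in> flats L" using p atoms_flats by auto
  have le: "lle L (join L x p) y" using join_least[OF xy(1) pf xy(2) xy(3) p(2)] .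
  have "rk L (join L x p) = Suc (rk L x)" using atom_join p xy by simp
  also have "\<dots> = rk L y" using rk_cover[OF assms] by simp
  finally have "join L x p = y" using rk_eq_le[OF _ xy(2) le] xy pf by simp
  then show ?thesis using p by auto
qed

definition modf :: "'a \<Rightarrow> bool" where "modf F \<longleftrightarrow> modular_flat L F"

lemma modf_in: "modular_flat L F \<Longrightarrow> F \<in> flats L" unfolding modular_flat_def by auto
lemma modf_rk: "modular_flat L F \<Longrightarrow> G \<in> flats L \<Longrightarrow> rk L (meet L F G) + rk L (join L F G) = rk L F + rk L G"
  unfolding modular_flat_def by blast
lemma modf_rk': "modular_flat L F \<Longrightarrow> G \<in> flats L \<Longrightarrow> rk L (meet L G F) + rk L (join L G F) = rk L F + rk L G"
  using modf_rk meet_comm join_comm modf_in by metis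

lemma mod_law:
  assumes F: "modular_flat L F" and c: "c \<in> flats L" "lle L c F" and J: "J \<in> flats L"
  shows "meet L (join L J c) F = join L (meet L J F) c"
proof -
  have Ff: "F \<in> flats L" using modf_in[OF F] .
  define z where "z = meet L (join L J c) F"
  define y where "y = join L (meet L J F) c"
  have Jc: "join L J c \<in> flats L" and JF: "meet L J F \<in> flats L" using J c Ff by auto
  have zf: "z \<in> flats L" and yf: "y \<in> flats L" unfolding z_def y_def using Jc JF c Ff by auto
  have "lle L (meet L J F) (join L J c)"
    using trans[OF JF J Jc meet_lb1[OF J Ff] join_ub1[OF J c(1)]] .
  moreover have "lle L (meet L J F) F" using meet_lb2[OF J Ff] .
  ultimately have m1: "lle L (meet L J F) z" unfolding z_def using le_meet_iff[OF Jc Ff JF] by simp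
  have m2: "lle L c z" unfolding z_def using le_meet_iff[OF Jc Ff c(1)] join_ub2[OF J c(1)] c(2) by simp
  have yz: "lle L y z" unfolding y_def using join_least[OF JF c(1) zf m1 m2] .
  have jJF: "join L (join L J c) F = join L J F"
    using join_assoc[OF J c(1) Ff] join_absorb[OF c(1) Ff c(2)] by simp
  have r1: "rk L z + rk L (join L J F) = rk L F + rk L (join L J c)"
    using modf_rk'[OF F Jc] jJF unfolding z_def by simp
  have r2: "rk L (meet L J F) + rk L (join L J F) = rk L F + rk L J" using modf_rk'[OF F J] .
  have jJy: "join L J y = join L J c"
  proof -
    have "join L J y = join L (join L J (meet L J F)) c" unfolding y_def using join_assoc[OF J JF c(1)] by simp
    also have "join L J (meet L J F) = J" using join_absorb2[OF J JF meet_lb1[OF J Ff]] .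
    finally show ?thesis .
  qed
  have "lle L (meet L J F) (meet L J y)"
    using le_meet_iff[OF J yf JF] meet_lb1[OF J Ff] join_ub1[OF JF c(1)] unfolding y_def by simp
  then have "rk L (meet L J F) \<le> rk L (meet L J y)" using rk_mono JF J yf by simp
  moreover have "rk L (meet L J y) + rk L (join L J c) \<le> rk L J + rk L y" using semimod[OF J yf] jJy by simp
  ultimately have "rk L z \<le> rk L y" using r1 r2 by linarith
  then have "y = z" using rk_eq_le[OF yf zf yz] by simp
  then show ?thesis unfolding y_def z_def by simp
qed

lemma mod_M1:
  assumes F: "modular_flat L F" and c: "c \<in> flats L" "lle L c F" and J: "J \<in> flats L"
  shows "rk L (join L J c) + rk L (meet L J F) = rk L J + rk L (join L (meet L J F) c)"
proof -
  have Ff: "F \<in> flats L" using modf_in[OF F] .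
  have Jc: "join L J c \<in> flats L" using J c by auto
  have jJF: "join L (join L J c) F = join L J F"
    using join_assoc[OF J c(1) Ff] join_absorb[OF c(1) Ff c(2)] by simp
  have r1: "rk L (meet L (join L J c) F) + rk L (join L J F) = rk L F + rk L (join L J c)"
    using modf_rk'[OF F Jc] jJF by simp
  have r2: "rk L (meet L J F) + rk L (join L J F) = rk L F + rk L J" using modf_rk'[OF F J] .
  have r1': "rk L (join L (meet L J F) c) + rk L (join L J F) = rk L F + rk L (join L J c)"
    using r1 mod_law[OF F c J] by simp
  show ?thesis using r1' r2 by linarith
qed

end

locale mext =
  fixes L :: "'a lat" and E :: "nat lat" and i :: "'a \<Rightarrow> nat"
  assumes geoL: "geometric_lattice L" and me: "modular_extension L E i"
begin

sublocale L: geo L using geoL by unfold_locales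
sublocale E: geo E using me unfolding modular_extension_def by unfold_locales auto

lemma emb: "embedding L E i" using me unfolding modular_extension_def by auto
lemma i_inj: "inj_on i (flats L)" using emb unfolding embedding_def by auto
lemma i_in[simp]: "a \<in> flats L \<Longrightarrow> i a \<in> flats E" using emb unfolding embedding_def by auto
lemma i_mono: "a \<in> flats L \<Longrightarrow> b \<in> flats L \<Longrightarrow> lle L a b \<Longrightarrow> lle E (i a) (i b)"
  using emb unfolding embedding_def by auto
lemma i_Join: "S \<subseteq> flats L \<Longrightarrow> i (Join L S) = Join E (i ` S)"
  using emb unfolding embedding_def by auto
lemma i_atoms: "a \<in> atoms L \<Longrightarrow> i a \<in> atoms E"
  using emb unfolding embedding_def by auto
lemma i_bot[simp]: "i (bot L) = bot E" unfolding bot_def using i_Join[of "{}"] by simp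
lemma i_join: "a \<in> flats L \<Longrightarrow> b \<in> flats L \<Longrightarrow> i (join L a b) = join E (i a) (i b)"
  unfolding join_def using i_Join[of "{a,b}"] by simp
lemma i_eq: "a \<in> flats L \<Longrightarrow> b \<in> flats L \<Longrightarrow> i a = i b \<longleftrightarrow> a = b"
  using i_inj unfolding inj_on_def by blast
lemma i_refl: "a \<in> flats L \<Longrightarrow> b \<in> flats L \<Longrightarrow> lle E (i a) (i b) \<longleftrightarrow> lle L a b"
proof
  assume a: "a \<in> flats L" "b \<in> flats L" "lle E (i a) (i b)"
  have "i (join L a b) = i b" using i_join a E.join_absorb by simp
  then have "join L a b = b" using i_eq a by simp
  then show "lle L a b" using L.join_ub1 a by metis
qed (rule i_mono)

definition Fi where "Fi = F_iota L i"
lemma Fi_def': "Fi = i (top L)" unfolding Fi_def F_iota_def by simp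

lemma interval_ex: "\<exists>F. modular_flat E F \<and> i ` flats L = interval E (bot E) F"
  using me unfolding modular_extension_def by auto

lemma img: "i ` flats L = interval E (bot E) Fi" and Fi_mod: "modular_flat E Fi"
proof -
  obtain F where F: "modular_flat E F" "i ` flats L = interval E (bot E) F" using interval_ex by blast
  have Ff: "F \<in> flats E" using E.modf_in F by auto
  have "F \<in> interval E (bot E) F" unfolding interval_def using Ff E.bot_le by auto
  then obtain a where a: "a \<in> flats L" "F = i a" using F by auto
  have "i (top L) \<in> interval E (bot E) F" using F(2) by auto
  then have "lle E Fi F" unfolding interval_def Fi_def' by auto
  moreover have "lle E F Fi" unfolding Fi_def' using a i_mono L.le_top by simp
  ultimately have "F = Fi" using E.antisym Ff Fi_def' by simp
  then show "i ` flats L = interval E (bot E) Fi" "modular_flat E Fi" using F by auto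
qed

lemma Fi_in[simp]: "Fi \<in> flats E" using Fi_def' by simp

lemma below_Fi: "x \<in> flats E \<Longrightarrow> lle E x Fi \<Longrightarrow> \<exists>a\<in>flats L. x = i a"
  using img E.bot_le unfolding interval_def by (metis (no_types, lifting) image_iff mem_Collect_eq)

lemma i_le_Fi: "a \<in> flats L \<Longrightarrow> lle E (i a) Fi"
  unfolding Fi_def' using i_mono L.le_top by simp

definition c :: "nat \<Rightarrow> 'a" where "c x = inv_into (flats L) i (meet E x Fi)"

lemma c_in[simp]: "x \<in> flats E \<Longrightarrow> c x \<in> flats L"
  and i_c: "x \<in> flats E \<Longrightarrow> i (c x) = meet E x Fi"
proof -
  assume x: "x \<in> flats E"
  obtain a where a: "a \<in> flats L" "meet E x Fi = i a"
    using below_Fi[of "meet E x Fi"] x E.meet_lb2 by auto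
  then show "c x \<in> flats L" "i (c x) = meet E x Fi" unfolding c_def
    using inv_into_into[of "i a" i "flats L"] f_inv_into_f[of "i a" i "flats L"] by auto
qed

lemma c_i[simp]: "a \<in> flats L \<Longrightarrow> c (i a) = a"
proof -
  assume a: "a \<in> flats L"
  have "meet E (i a) Fi = i a" using E.meet_absorb i_le_Fi a by simp
  then show ?thesis unfolding c_def using inv_into_f_f[OF i_inj a] by simp
qed

lemma c_mono: "x \<in> flats E \<Longrightarrow> y \<in> flats E \<Longrightarrow> lle E x y \<Longrightarrow> lle L (c x) (c y)"
  using i_refl[of "c x" "c y"] i_c E.meet_mono[of x Fi y Fi] by simp

lemma i_meet: "a \<in> flats L \<Longrightarrow> b \<in> flats L \<Longrightarrow> i (meet L a b) = meet E (i a) (i b)"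
proof -
  assume ab: "a \<in> flats L" "b \<in> flats L"
  have mf: "meet E (i a) (i b) \<in> flats E" using ab by simp
  have "lle E (meet E (i a) (i b)) Fi" using E.trans[OF mf _ Fi_in E.meet_lb1 i_le_Fi] ab by simp
  then obtain d where d: "d \<in> flats L" "meet E (i a) (i b) = i d" using below_Fi mf by blast
  have "lle L d a" "lle L d b" using d E.meet_lb1[of "i a" "i b"] E.meet_lb2[of "i a" "i b"] ab i_refl by auto
  then have "lle L d (meet L a b)" using L.meet_greatest ab d by simp
  then have 1: "lle E (meet E (i a) (i b)) (i (meet L a b))" using d i_mono ab by simp
  have 2: "lle E (i (meet L a b)) (meet E (i a) (i b))"
    using E.meet_greatest[of "i a" "i b"] i_mono L.meet_lb1 L.meet_lb2 ab by simp
  show ?thesis using E.antisym 1 2 ab by simp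
qed

lemma i_cover: "covers L x y \<Longrightarrow> covers E (i x) (i y)"
proof -
  assume cv: "covers L x y"
  then have xy: "x \<in> flats L" "y \<in> flats L" "lle L x y" "x \<noteq> y"
    and nz: "\<not> (\<exists>z\<in>flats L. lless L x z \<and> lless L z y)" unfolding covers_def lless_def by auto
  have "\<not> (\<exists>z\<in>flats E. lless E (i x) z \<and> lless E z (i y))"
  proof
    assume "\<exists>z\<in>flats E. lless E (i x) z \<and> lless E z (i y)"
    then obtain z where z: "z \<in> flats E" "lle E (i x) z" "i x \<noteq> z" "lle E z (i y)" "z \<noteq> i y"
      unfolding lless_def by blast
    have "lle E z Fi" using E.trans[OF z(1) _ Fi_in z(4) i_le_Fi] xy by simp
    then obtain w where w: "w \<in> flats L" "z = i w" using below_Fi z by blast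
    then have "lless L x w \<and> lless L w y" using z xy i_refl unfolding lless_def by auto
    then show False using nz w by blast
  qed
  then show ?thesis unfolding covers_def lless_def using xy i_mono i_eq by auto
qed

lemma rk_i: "a \<in> flats L \<Longrightarrow> rk E (i a) = rk L a"
proof -
  assume a: "a \<in> flats L"
  obtain xs where xs: "length xs = Suc (rk L a)" "set xs \<subseteq> flats L" "xs ! 0 = bot L" "xs ! (rk L a) = a"
    "\<forall>j<rk L a. covers L (xs ! j) (xs ! Suc j)"
    using L.rk_chain[OF a] unfolding max_chain_def by blast
  have "max_chain E (i a) (rk L a)" unfolding max_chain_def
    apply (rule exI[of _ "map i xs"])
    using xs i_cover by auto
  then show ?thesis using E.rk_unique a by simp
qed

lemma rk_c: "x \<in> flats E \<Longrightarrow> rk L (c x) + rk E (join E x Fi) = rk E x + rk E Fi"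
  using E.modf_rk'[OF Fi_mod, of x] rk_i[of "c x"] i_c by simp

end


context flat begin
lemma meet_assoc: "x \<in> flats L \<Longrightarrow> y \<in> flats L \<Longrightarrow> z \<in> flats L \<Longrightarrow> meet L (meet L x y) z = meet L x (meet L y z)"
proof -
  assume a: "x \<in> flats L" "y \<in> flats L" "z \<in> flats L"
  have i: "meet L x y \<in> flats L" "meet L y z \<in> flats L" "meet L (meet L x y) z \<in> flats L"
    "meet L x (meet L y z) \<in> flats L" using a by auto
  have u: "lle L (meet L x y) x" "lle L (meet L x y) y" "lle L (meet L y z) y" "lle L (meet L y z) z"
    "lle L (meet L (meet L x y) z) (meet L x y)" "lle L (meet L (meet L x y) z) z"
    "lle L (meet L x (meet L y z)) x" "lle L (meet L x (meet L y z)) (meet L y z)"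
    using a i by (simp_all add: meet_lb1 meet_lb2)
  show ?thesis
  proof (rule antisym[OF i(3,4)])
    have "lle L (meet L (meet L x y) z) x" "lle L (meet L (meet L x y) z) y"
      using trans[OF i(3) i(1) a(1) u(5) u(1)] trans[OF i(3) i(1) a(2) u(5) u(2)] .
    then show "lle L (meet L (meet L x y) z) (meet L x (meet L y z))"
      using a i u by (simp add: le_meet_iff)
    have "lle L (meet L x (meet L y z)) y" "lle L (meet L x (meet L y z)) z"
      using trans[OF i(4) i(2) a(2) u(8) u(3)] trans[OF i(4) i(2) a(3) u(8) u(4)] .
    then show "lle L (meet L x (meet L y z)) (meet L (meet L x y) z)"
      using a i u by (simp add: le_meet_iff)
  qed
qed
lemma meet_same: "x \<in> flats L \<Longrightarrow> y \<in> flats L \<Longrightarrow> z \<in> flats L \<Longrightarrow>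
  meet L (meet L x y) z = meet L (meet L x z) (meet L y z)"
proof -
  assume a: "x \<in> flats L" "y \<in> flats L" "z \<in> flats L"
  have "meet L (meet L x z) (meet L y z) = meet L x (meet L z (meet L y z))" using meet_assoc a by simp
  also have "meet L z (meet L y z) = meet L y z" using meet_absorb2 meet_lb2 a by simp
  also have "meet L x (meet L y z) = meet L (meet L x y) z" using meet_assoc a by simp
  finally show ?thesis by simp
qed
end

context geo begin

lemma semimod_aux:
  assumes F: "modular_flat L F" and X: "X \<in> flats L" and Y: "Y \<in> flats L"
  shows "rk L (meet L (join L X Y) F) + rk L (join L (join L X Y) F) + rk L (join L (meet L X Y) F)
     \<le> rk L (join L X F) + rk L (join L Y F) + rk L (join L (meet L X F) (meet L Y F))"
proof -
  have Ff: "F \<in> flats L" using modf_in[OF F] .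
  define b where "b = meet L Y F"
  define j where "j = join L X Y"
  define m where "m = meet L X Y"
  have bf: "b \<in> flats L" and jf: "j \<in> flats L" and mf: "m \<in> flats L" unfolding b_def j_def m_def using X Y Ff by auto
  have bF: "lle L b F" and bY: "lle L b Y" unfolding b_def using meet_lb1 meet_lb2 Y Ff by auto
  have Xb: "join L X b \<in> flats L" using X bf by simp
  have f1j: "rk L (meet L j F) + rk L (join L j F) = rk L F + rk L j" using modf_rk'[OF F jf] .
  have mmF: "meet L m F = meet L X b" unfolding m_def b_def using meet_assoc X Y Ff by simp
  have f1m: "rk L (meet L X b) + rk L (join L m F) = rk L F + rk L m" using modf_rk'[OF F mf] mmF by simp
  have f1Y: "rk L b + rk L (join L Y F) = rk L F + rk L Y" using modf_rk'[OF F Y] unfolding b_def by simp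
  have f2: "meet L (join L X b) F = join L (meet L X F) b" using mod_law[OF F bf bF X] .
  have f2': "join L (join L X b) F = join L X F" using join_assoc[OF X bf Ff] join_absorb[OF bf Ff bF] by simp
  have f1Xb: "rk L (join L (meet L X F) b) + rk L (join L X F) = rk L F + rk L (join L X b)"
    using modf_rk'[OF F Xb] f2 f2' by simp
  have jXbY: "join L (join L X b) Y = j" unfolding j_def using join_assoc[OF X bf Y] join_absorb[OF bf Y bY] by simp
  have f3: "rk L (meet L (join L X b) Y) + rk L j \<le> rk L (join L X b) + rk L Y"
    using semimod[OF Xb Y] jXbY by simp
  have Xbf: "meet L X b \<in> flats L" using X bf by simp
  have mXb: "lle L (meet L X b) b" using meet_lb2 X bf by simp
  have f4: "rk L (join L m b) + rk L (meet L X b) = rk L m + rk L b"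
    using mod_M1[OF F bf bF mf] mmF join_absorb[OF Xbf bf mXb] by simp
  have mle: "lle L (join L m b) (meet L (join L X b) Y)"
  proof (rule join_least[OF mf bf])
    show "meet L (join L X b) Y \<in> flats L" using Xb Y by simp
    have "lle L m (join L X b)" using trans[OF mf X Xb] meet_lb1[OF X Y] join_ub1[OF X bf] unfolding m_def by simp
    moreover have "lle L m Y" using meet_lb2[OF X Y] unfolding m_def .
    ultimately show "lle L m (meet L (join L X b) Y)" using le_meet_iff[OF Xb Y mf] by simp
    show "lle L b (meet L (join L X b) Y)" using le_meet_iff[OF Xb Y bf] join_ub2[OF X bf] bY by simp
  qed
  have f5: "rk L (join L m b) \<le> rk L (meet L (join L X b) Y)" using rk_mono[OF _ _ mle] mf bf Xb Y by simp
  show ?thesis unfolding j_def[symmetric] m_def[symmetric] b_def[symmetric]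
    using f1j f1m f1Y f1Xb f3 f4 f5 by linarith
qed

end

context mext begin

lemma c_join_i: assumes "j \<in> flats E" "C \<in> flats L" "lle L (c j) C"
  shows "c (join E j (i C)) = C"
proof -
  have "i (c (join E j (i C))) = meet E (join E j (i C)) Fi" using i_c assms by simp
  also have "\<dots> = join E (meet E j Fi) (i C)" using E.mod_law[OF Fi_mod _ i_le_Fi] assms by simp
  also have "\<dots> = join E (i (c j)) (i C)" using i_c assms by simp
  also have "\<dots> = i C" using i_join[symmetric] L.join_absorb assms by simp
  finally show ?thesis using i_eq assms by simp
qed

lemma rk_join_i: assumes "x \<in> flats E" "A \<in> flats L" "lle L (c x) A"
  shows "rk E (join E x (i A)) + rk L (c x) = rk E x + rk L A"
proof -
  have "rk E (join E x (i A)) + rk E (meet E x Fi) = rk E x + rk E (join E (meet E x Fi) (i A))"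
    using E.mod_M1[OF Fi_mod _ i_le_Fi] assms by simp
  moreover have "meet E x Fi = i (c x)" using i_c assms by simp
  moreover have "join E (i (c x)) (i A) = i A" using i_join[symmetric] L.join_absorb assms by simp
  ultimately show ?thesis using rk_i assms by simp
qed

lemma c_meet: "x \<in> flats E \<Longrightarrow> y \<in> flats E \<Longrightarrow> c (meet E x y) = meet L (c x) (c y)"
proof -
  assume a: "x \<in> flats E" "y \<in> flats E"
  have "i (c (meet E x y)) = meet E (meet E x y) Fi" using i_c a by simp
  also have "\<dots> = meet E (meet E x Fi) (meet E y Fi)"
    by (rule E.meet_same[OF a Fi_in])
  also have "\<dots> = i (meet L (c x) (c y))" using i_meet i_c a by simp
  finally show ?thesis using i_eq a by simp
qed

lemma c_ge: "x \<in> flats E \<Longrightarrow> lle E Fi x \<Longrightarrow> c x = top L"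
proof -
  assume a: "x \<in> flats E" "lle E Fi x"
  have "i (c x) = Fi" using i_c a E.meet_absorb2 by simp
  then show ?thesis using Fi_def' i_eq a by simp
qed

lemma i_c_le: "x \<in> flats E \<Longrightarrow> lle E (i (c x)) x"
  using i_c E.meet_lb1 by simp

lemma rk_c_le: "x \<in> flats E \<Longrightarrow> rk L (c x) \<le> rk E x"
  using E.rk_mono[of "i (c x)" x] i_c_le rk_i by simp

lemma rk_Fi_le: "x \<in> flats E \<Longrightarrow> rk E Fi \<le> rk E (join E x Fi)"
  using E.rk_mono[of Fi "join E x Fi"] E.join_ub2 by simp

lemma c_bot: "c (bot E) = bot L" using c_i[of "bot L"] by simp

lemma c_le_top: "x \<in> flats E \<Longrightarrow> lle L (c x) (top L)" using L.le_top by simp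

end

abbreviation pe :: "nat \<Rightarrow> nat \<Rightarrow> nat" where "pe a b \<equiv> prod_encode (a, b)"

lemma pe_eq[simp]: "pe a b = pe a' b' \<longleftrightarrow> a = a' \<and> b = b'"
  by (simp add: prod_encode_eq)

lemma pe_surj: "\<exists>a b. X = pe a b"
  by (metis prod_decode_inverse surj_pair)

locale po = m1: mext L E1 i1 + m2: mext L E2 i2
  for L :: "'a lat" and E1 i1 E2 i2
begin

abbreviation P where "P \<equiv> pushout L E1 i1 E2 i2"

definition inP :: "nat \<Rightarrow> nat \<Rightarrow> bool" where
  "inP a b \<longleftrightarrow> a \<in> flats E1 \<and> b \<in> flats E2 \<and> m1.c a = m2.c b"

lemma P_flats: "pe a b \<in> flats P \<longleftrightarrow> inP a b"
proof -
  have "pe a b \<in> flats P \<longleftrightarrow> (a, b) \<in> {(F1, F2). F1 \<in> flats E1 \<and> F2 \<in> flats E2 \<and>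
          inv_into (flats L) i1 (meet E1 F1 (F_iota L i1)) = inv_into (flats L) i2 (meet E2 F2 (F_iota L i2))}"
    unfolding pushout_def by (simp add: inj_image_mem_iff[OF inj_prod_encode])
  then show ?thesis unfolding inP_def m1.c_def m2.c_def m1.Fi_def m2.Fi_def by simp
qed

lemma P_le[simp]: "lle P (pe a b) (pe a' b') \<longleftrightarrow> lle E1 a a' \<and> lle E2 b b'"
  unfolding pushout_def by simp

lemma P_cases: "X \<in> flats P \<Longrightarrow> (\<And>a b. X = pe a b \<Longrightarrow> inP a b \<Longrightarrow> thesis) \<Longrightarrow> thesis"
  using pe_surj P_flats by metis

lemma inP_i: "a \<in> flats L \<Longrightarrow> inP (i1 a) (i2 a)" unfolding inP_def by simp

lemma inP_D: "inP a b \<Longrightarrow> a \<in> flats E1" "inP a b \<Longrightarrow> b \<in> flats E2" "inP a b \<Longrightarrow> m1.c a = m2.c b"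
  unfolding inP_def by auto

lemma P_finite: "finite (flats P)"
proof -
  have "flats P \<subseteq> prod_encode ` (flats E1 \<times> flats E2)" unfolding pushout_def by auto
  then show ?thesis using m1.E.fin m2.E.fin finite_subset by blast
qed

definition CC :: "nat \<Rightarrow> nat \<Rightarrow> 'a" where "CC j1 j2 = join L (m1.c j1) (m2.c j2)"

definition pj1 where "pj1 x1 x2 y1 y2 = join E1 (join E1 x1 y1) (i1 (CC (join E1 x1 y1) (join E2 x2 y2)))"
definition pj2 where "pj2 x1 x2 y1 y2 = join E2 (join E2 x2 y2) (i2 (CC (join E1 x1 y1) (join E2 x2 y2)))"

lemma P_lub:
  assumes x: "inP x1 x2" and y: "inP y1 y2"
  shows "inP (pj1 x1 x2 y1 y2) (pj2 x1 x2 y1 y2)"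
    and "is_lub P {pe x1 x2, pe y1 y2} (pe (pj1 x1 x2 y1 y2) (pj2 x1 x2 y1 y2))"
proof -
  note xf = inP_D[OF x] and yf = inP_D[OF y]
  define j1 where "j1 = join E1 x1 y1"
  define j2 where "j2 = join E2 x2 y2"
  define C where "C = CC j1 j2"
  have j1f: "j1 \<in> flats E1" and j2f: "j2 \<in> flats E2" unfolding j1_def j2_def using xf yf by auto
  have Cf: "C \<in> flats L" unfolding C_def CC_def using j1f j2f by simp
  have C1: "lle L (m1.c j1) C" and C2: "lle L (m2.c j2) C" unfolding C_def CC_def using j1f j2f m1.L.join_ub1 m1.L.join_ub2 by auto
  have p1: "pj1 x1 x2 y1 y2 = join E1 j1 (i1 C)" unfolding pj1_def j1_def j2_def C_def by simp
  have p2: "pj2 x1 x2 y1 y2 = join E2 j2 (i2 C)" unfolding pj2_def j1_def j2_def C_def by simp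
  show inz: "inP (pj1 x1 x2 y1 y2) (pj2 x1 x2 y1 y2)"
    unfolding p1 p2 inP_def using m1.c_join_i[OF j1f Cf C1] m2.c_join_i[OF j2f Cf C2] j1f j2f Cf by simp
  have z1f: "join E1 j1 (i1 C) \<in> flats E1" and z2f: "join E2 j2 (i2 C) \<in> flats E2" using j1f j2f Cf by auto
  have jz1: "lle E1 j1 (join E1 j1 (i1 C))" using m1.E.join_ub1 j1f Cf by simp
  have jz2: "lle E2 j2 (join E2 j2 (i2 C))" using m2.E.join_ub1 j2f Cf by simp
  have ub1: "lle E1 x1 (join E1 j1 (i1 C))" "lle E1 y1 (join E1 j1 (i1 C))"
    using m1.E.trans[OF xf(1) j1f z1f _ jz1] m1.E.trans[OF yf(1) j1f z1f _ jz1]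
      m1.E.join_ub1[OF xf(1) yf(1)] m1.E.join_ub2[OF xf(1) yf(1)] unfolding j1_def by auto
  have ub2: "lle E2 x2 (join E2 j2 (i2 C))" "lle E2 y2 (join E2 j2 (i2 C))"
    using m2.E.trans[OF xf(2) j2f z2f _ jz2] m2.E.trans[OF yf(2) j2f z2f _ jz2]
      m2.E.join_ub1[OF xf(2) yf(2)] m2.E.join_ub2[OF xf(2) yf(2)] unfolding j2_def by auto
  show "is_lub P {pe x1 x2, pe y1 y2} (pe (pj1 x1 x2 y1 y2) (pj2 x1 x2 y1 y2))"
    unfolding is_lub_def
  proof (intro conjI ballI impI)
    show "pe (pj1 x1 x2 y1 y2) (pj2 x1 x2 y1 y2) \<in> flats P" using inz P_flats by simp
    fix X assume "X \<in> {pe x1 x2, pe y1 y2}"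
    then show "lle P X (pe (pj1 x1 x2 y1 y2) (pj2 x1 x2 y1 y2))" using ub1 ub2 p1 p2 by auto
  next
    fix W assume W: "W \<in> flats P" "\<forall>X\<in>{pe x1 x2, pe y1 y2}. lle P X W"
    obtain w1 w2 where w: "W = pe w1 w2" "inP w1 w2" using W(1) P_cases by blast
    note wf = inP_D[OF w(2)]
    have le: "lle E1 x1 w1" "lle E1 y1 w1" "lle E2 x2 w2" "lle E2 y2 w2" using W(2) w by auto
    have j1w: "lle E1 j1 w1" unfolding j1_def using m1.E.join_least le xf yf wf by simp
    have j2w: "lle E2 j2 w2" unfolding j2_def using m2.E.join_least le xf yf wf by simp
    have "lle L (m1.c j1) (m1.c w1)" using m1.c_mono[OF j1f wf(1) j1w] .
    moreover have "lle L (m2.c j2) (m1.c w1)" using m2.c_mono j2f wf j2w inP_D(3)[OF w(2)] by simp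
    ultimately have Cw: "lle L C (m1.c w1)" unfolding C_def CC_def using m1.L.join_least j1f j2f wf by simp
    have iw1: "lle E1 (i1 (m1.c w1)) w1" using m1.i_c[OF wf(1)] m1.E.meet_lb1[OF wf(1) m1.Fi_in] by simp
    have "lle E1 (i1 C) (i1 (m1.c w1))" using m1.i_mono[OF Cf _ Cw] wf(1) by simp
    then have "lle E1 (i1 C) w1" using m1.E.trans[OF _ _ wf(1) _ iw1] Cf wf(1) by simp
    then have a1: "lle E1 (join E1 j1 (i1 C)) w1" using m1.E.join_least j1f Cf wf(1) j1w by simp
    have Cw2: "lle L C (m2.c w2)" using Cw wf(3) by simp
    have iw2: "lle E2 (i2 (m2.c w2)) w2" using m2.i_c[OF wf(2)] m2.E.meet_lb1[OF wf(2) m2.Fi_in] by simp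
    have "lle E2 (i2 C) (i2 (m2.c w2))" using m2.i_mono[OF Cf _ Cw2] wf(2) by simp
    then have "lle E2 (i2 C) w2" using m2.E.trans[OF _ _ wf(2) _ iw2] Cf wf(2) by simp
    then have a2: "lle E2 (join E2 j2 (i2 C)) w2" using m2.E.join_least j2f Cf wf(2) j2w by simp
    show "lle P (pe (pj1 x1 x2 y1 y2) (pj2 x1 x2 y1 y2)) W" using a1 a2 p1 p2 w by simp
  qed
qed

lemma P_glb:
  assumes x: "inP x1 x2" and y: "inP y1 y2"
  shows "inP (meet E1 x1 y1) (meet E2 x2 y2)"
    and "is_glb P {pe x1 x2, pe y1 y2} (pe (meet E1 x1 y1) (meet E2 x2 y2))"
proof -
  note xf = inP_D[OF x] and yf = inP_D[OF y]
  show inm: "inP (meet E1 x1 y1) (meet E2 x2 y2)" unfolding inP_def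
    using m1.c_meet[OF xf(1) yf(1)] m2.c_meet[OF xf(2) yf(2)] xf yf by simp
  show "is_glb P {pe x1 x2, pe y1 y2} (pe (meet E1 x1 y1) (meet E2 x2 y2))"
    unfolding is_glb_def
  proof (intro conjI ballI impI)
    show "pe (meet E1 x1 y1) (meet E2 x2 y2) \<in> flats P" using inm P_flats by simp
    fix X assume "X \<in> {pe x1 x2, pe y1 y2}"
    then show "lle P (pe (meet E1 x1 y1) (meet E2 x2 y2)) X"
      using m1.E.meet_lb1 m1.E.meet_lb2 m2.E.meet_lb1 m2.E.meet_lb2 xf yf by auto
  next
    fix W assume W: "W \<in> flats P" "\<forall>X\<in>{pe x1 x2, pe y1 y2}. lle P W X"
    obtain w1 w2 where w: "W = pe w1 w2" "inP w1 w2" using W(1) P_cases by blast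
    note wf = inP_D[OF w(2)]
    have le: "lle E1 w1 x1" "lle E1 w1 y1" "lle E2 w2 x2" "lle E2 w2 y2" using W(2) w by auto
    show "lle P W (pe (meet E1 x1 y1) (meet E2 x2 y2))"
      using w le m1.E.meet_greatest[OF xf(1) yf(1) wf(1)] m2.E.meet_greatest[OF xf(2) yf(2) wf(2)] by simp
  qed
qed

lemma P_fl: "finite_lattice P"
  unfolding finite_lattice_def
proof (intro conjI ballI)
  show "finite (flats P)" by (rule P_finite)
  have "inP (i1 (bot L)) (i2 (bot L))" by (rule inP_i) simp
  then show "flats P \<noteq> {}" using P_flats by blast
next
  fix X assume "X \<in> flats P"
  then show "lle P X X" by (elim P_cases) (auto dest: inP_D)
next
  fix X Y assume "X \<in> flats P" "Y \<in> flats P"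
  then obtain x1 x2 y1 y2 where "X = pe x1 x2" "inP x1 x2" "Y = pe y1 y2" "inP y1 y2" by (metis P_cases)
  then show "lle P X Y \<and> lle P Y X \<longrightarrow> X = Y" using m1.E.antisym[of x1 y1] m2.E.antisym[of x2 y2] inP_D by auto
next
  fix X Y Z assume "X \<in> flats P" "Y \<in> flats P" "Z \<in> flats P"
  then obtain x1 x2 y1 y2 z1 z2 where "X = pe x1 x2" "inP x1 x2" "Y = pe y1 y2" "inP y1 y2" "Z = pe z1 z2" "inP z1 z2"
    by (metis P_cases)
  then show "lle P X Y \<and> lle P Y Z \<longrightarrow> lle P X Z"
    using m1.E.trans[of x1 y1 z1] m2.E.trans[of x2 y2 z2] by (auto dest: inP_D)
next
  fix X Y assume "X \<in> flats P" "Y \<in> flats P"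
  then obtain x1 x2 y1 y2 where "X = pe x1 x2" "inP x1 x2" "Y = pe y1 y2" "inP y1 y2" by (metis P_cases)
  then show "\<exists>z. is_lub P {X, Y} z" using P_lub by blast
next
  fix X Y assume "X \<in> flats P" "Y \<in> flats P"
  then obtain x1 x2 y1 y2 where "X = pe x1 x2" "inP x1 x2" "Y = pe y1 y2" "inP y1 y2" by (metis P_cases)
  then show "\<exists>z. is_glb P {X, Y} z" using P_glb by blast
qed

sublocale P: flat P by (rule flat.intro, rule P_fl)

lemma P_join: "inP x1 x2 \<Longrightarrow> inP y1 y2 \<Longrightarrow> join P (pe x1 x2) (pe y1 y2) = pe (pj1 x1 x2 y1 y2) (pj2 x1 x2 y1 y2)"
  unfolding join_def using P_lub P.Join_eq by blast

lemma P_meet: "inP x1 x2 \<Longrightarrow> inP y1 y2 \<Longrightarrow> meet P (pe x1 x2) (pe y1 y2) = pe (meet E1 x1 y1) (meet E2 x2 y2)"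
  using P_glb P.meet_glb P.glb_unique P_flats by metis

lemma inP_bot: "inP (bot E1) (bot E2)" using inP_i[of "bot L"] by simp

lemma P_bot: "bot P = pe (bot E1) (bot E2)"
proof (rule P.bot_unique)
  show "pe (bot E1) (bot E2) \<in> flats P" using inP_bot P_flats by simp
  fix Y assume "Y \<in> flats P"
  then show "lle P (pe (bot E1) (bot E2)) Y" by (elim P_cases) (auto dest: inP_D simp: m1.E.bot_le m2.E.bot_le)
qed

lemma inP_top: "inP (top E1) (top E2)"
  unfolding inP_def using m1.c_ge[of "top E1"] m2.c_ge[of "top E2"] m1.E.le_top m2.E.le_top by simp

lemma P_top: "top P = pe (top E1) (top E2)"
proof (rule P.top_unique)
  show "pe (top E1) (top E2) \<in> flats P" using inP_top P_flats by simp
  fix Y assume "Y \<in> flats P"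
  then show "lle P Y (pe (top E1) (top E2))" by (elim P_cases) (auto dest: inP_D simp: m1.E.le_top m2.E.le_top)
qed

definition rho' :: "nat \<Rightarrow> nat \<Rightarrow> nat" where
  "rho' a b = rk E1 a + rk E2 b - rk L (m1.c a)"

definition rho :: "nat \<Rightarrow> nat" where "rho X = rho' (fst (prod_decode X)) (snd (prod_decode X))"

lemma rho_pe[simp]: "rho (pe a b) = rho' a b" unfolding rho_def by simp

lemma I0: "inP a b \<Longrightarrow> rho' a b + rk L (m1.c a) = rk E1 a + rk E2 b"
  unfolding rho'_def using m1.rk_c_le[of a] by (auto dest: inP_D)

lemma I1: "inP a b \<Longrightarrow> rho' a b + rk E1 m1.Fi = rk E1 (join E1 a m1.Fi) + rk E2 b"
  using I0[of a b] m1.rk_c[of a] by (auto dest: inP_D)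

lemma I2: "inP a b \<Longrightarrow> rho' a b + rk E2 m2.Fi = rk E1 a + rk E2 (join E2 b m2.Fi)"
  using I0[of a b] m2.rk_c[of b] inP_D[of a b] by auto

lemma rho_strict:
  assumes x: "inP x1 x2" and y: "inP y1 y2" and le: "lle E1 x1 y1" "lle E2 x2 y2" and ne: "x1 \<noteq> y1 \<or> x2 \<noteq> y2"
  shows "rho' x1 x2 < rho' y1 y2"
proof -
  note xf = inP_D[OF x] and yf = inP_D[OF y]
  have "lle E1 (join E1 x1 m1.Fi) (join E1 y1 m1.Fi)" using m1.E.join_mono xf yf le by simp
  then have a: "rk E1 (join E1 x1 m1.Fi) \<le> rk E1 (join E1 y1 m1.Fi)" using m1.E.rk_mono xf yf by simp
  have b: "rk E2 x2 \<le> rk E2 y2" using m2.E.rk_mono xf yf le by simp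
  have le': "rho' x1 x2 \<le> rho' y1 y2" using I1[OF x] I1[OF y] a b by linarith
  show ?thesis
  proof (rule ccontr)
    assume "\<not> ?thesis"
    then have eq: "rho' x1 x2 = rho' y1 y2" using le' by simp
    then have "rk E2 y2 \<le> rk E2 x2" using I1[OF x] I1[OF y] a b by linarith
    then have e2: "x2 = y2" using m2.E.rk_eq_le xf yf le by simp
    then have "m1.c x1 = m1.c y1" using xf yf by simp
    then have "rk E1 y1 \<le> rk E1 x1" using I0[OF x] I0[OF y] eq e2 by simp
    then have "x1 = y1" using m1.E.rk_eq_le xf yf le by simp
    then show False using e2 ne by simp
  qed
qed

lemma rho_step:
  assumes x: "inP x1 x2" and y: "inP y1 y2" and le: "lle E1 x1 y1" "lle E2 x2 y2" and ne: "x1 \<noteq> y1 \<or> x2 \<noteq> y2"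
  shows "\<exists>z1 z2. inP z1 z2 \<and> lle E1 x1 z1 \<and> lle E1 z1 y1 \<and> lle E2 x2 z2 \<and> lle E2 z2 y2
     \<and> rho' z1 z2 = Suc (rho' x1 x2)"
proof -
  note xf = inP_D(1,2)[OF x] and yf = inP_D(1,2)[OF y] and xc = inP_D(3)[OF x] and yc = inP_D(3)[OF y]
  have cxy: "lle L (m1.c x1) (m1.c y1)" using m1.c_mono[OF xf(1) yf(1) le(1)] .
  show ?thesis
  proof (cases "m1.c x1 = m1.c y1")
    case True
    show ?thesis
    proof (cases "x1 = y1")
      case False
      obtain p where p: "p \<in> atoms E1" "lle E1 p y1" "\<not> lle E1 p x1" using m1.E.atom_below[OF xf(1) yf(1) le(1) False] by blast
      have pf: "p \<in> flats E1" using p m1.E.atoms_flats by simp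
      define z1 where "z1 = join E1 x1 p"
      have z1f: "z1 \<in> flats E1" unfolding z1_def using xf pf by simp
      have xz: "lle E1 x1 z1" unfolding z1_def using m1.E.join_ub1 xf pf by simp
      have zy: "lle E1 z1 y1" unfolding z1_def using m1.E.join_least xf pf yf le p by simp
      have "lle L (m1.c x1) (m1.c z1)" "lle L (m1.c z1) (m1.c y1)"
        using m1.c_mono[OF xf(1) z1f xz] m1.c_mono[OF z1f yf(1) zy] by auto
      then have cz: "m1.c z1 = m1.c x1" using True by (metis m1.L.antisym m1.c_in z1f xf(1))
      have inz: "inP z1 x2" unfolding inP_def using cz xf z1f xc by simp
      have rz: "rk E1 z1 = Suc (rk E1 x1)" unfolding z1_def using m1.E.atom_join p xf by simp
      have "rho' z1 x2 = Suc (rho' x1 x2)" using I0[OF inz] I0[OF x] rz cz by simp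
      then show ?thesis using inz xz zy le xf by (intro exI[of _ z1] exI[of _ x2]) simp
    next
      case e1: True
      then have False2: "x2 \<noteq> y2" using ne by simp
      obtain p where p: "p \<in> atoms E2" "lle E2 p y2" "\<not> lle E2 p x2" using m2.E.atom_below[OF xf(2) yf(2) le(2) False2] by blast
      have pf: "p \<in> flats E2" using p m2.E.atoms_flats by simp
      define z2 where "z2 = join E2 x2 p"
      have z2f: "z2 \<in> flats E2" unfolding z2_def using xf pf by simp
      have xz: "lle E2 x2 z2" unfolding z2_def using m2.E.join_ub1 xf pf by simp
      have zy: "lle E2 z2 y2" unfolding z2_def using m2.E.join_least xf pf yf le p by simp
      have "lle L (m2.c x2) (m2.c z2)" "lle L (m2.c z2) (m2.c y2)"
        using m2.c_mono[OF xf(2) z2f xz] m2.c_mono[OF z2f yf(2) zy] by auto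
      then have cz: "m2.c z2 = m2.c x2" using True xc yc by (metis m1.L.antisym m2.c_in z2f xf(2))
      have inz: "inP x1 z2" unfolding inP_def using cz xf z2f xc by simp
      have rz: "rk E2 z2 = Suc (rk E2 x2)" unfolding z2_def using m2.E.atom_join p xf by simp
      have "rho' x1 z2 = Suc (rho' x1 x2)" using I0[OF inz] I0[OF x] rz by simp
      then show ?thesis using inz xz zy le xf by (intro exI[of _ x1] exI[of _ z2]) simp
    qed
  next
    case False
    define a where "a = m1.c x1"
    define b where "b = m1.c y1"
    have af: "a \<in> flats L" and bf: "b \<in> flats L" unfolding a_def b_def using xf yf by auto
    obtain q where q: "q \<in> atoms L" "lle L q b" "\<not> lle L q a"
      using m1.L.atom_below[OF af bf] cxy False unfolding a_def b_def by blast
    have qf: "q \<in> flats L" using q m1.L.atoms_flats by simp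
    define A where "A = join L a q"
    have Af: "A \<in> flats L" unfolding A_def using af qf by simp
    have aA: "lle L a A" unfolding A_def using m1.L.join_ub1 af qf by simp
    have Ab: "lle L A b" unfolding A_def using m1.L.join_least af qf bf cxy q unfolding a_def b_def by simp
    have rA: "rk L A = Suc (rk L a)" unfolding A_def using m1.L.atom_join q af by simp
    define z1 where "z1 = join E1 x1 (i1 A)"
    define z2 where "z2 = join E2 x2 (i2 A)"
    have z1f: "z1 \<in> flats E1" and z2f: "z2 \<in> flats E2" unfolding z1_def z2_def using xf Af by auto
    have c1: "m1.c z1 = A" unfolding z1_def using m1.c_join_i xf Af aA unfolding a_def by simp
    have c2: "m2.c z2 = A" unfolding z2_def using m2.c_join_i xf Af aA xc unfolding a_def by simp
    have inz: "inP z1 z2" unfolding inP_def using c1 c2 z1f z2f by simp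
    have xz1: "lle E1 x1 z1" unfolding z1_def using m1.E.join_ub1 xf Af by simp
    have xz2: "lle E2 x2 z2" unfolding z2_def using m2.E.join_ub1 xf Af by simp
    have "lle E1 (i1 A) (i1 b)" using m1.i_mono Af bf Ab by simp
    moreover have "lle E1 (i1 b) y1" unfolding b_def using m1.i_c_le[OF yf(1)] .
    ultimately have "lle E1 (i1 A) y1" using m1.E.trans[of "i1 A" "i1 b" y1] Af bf yf by simp
    then have zy1: "lle E1 z1 y1" unfolding z1_def using m1.E.join_least xf Af yf le by simp
    have "lle E2 (i2 A) (i2 b)" using m2.i_mono Af bf Ab by simp
    moreover have "lle E2 (i2 b) y2" unfolding b_def using m2.i_c_le[OF yf(2)] yc by simp
    ultimately have "lle E2 (i2 A) y2" using m2.E.trans[of "i2 A" "i2 b" y2] Af bf yf by simp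
    then have zy2: "lle E2 z2 y2" unfolding z2_def using m2.E.join_least xf Af yf le by simp
    have r1: "rk E1 z1 + rk L a = rk E1 x1 + rk L A" unfolding z1_def a_def using m1.rk_join_i xf Af aA unfolding a_def by simp
    have r2: "rk E2 z2 + rk L a = rk E2 x2 + rk L A" unfolding z2_def a_def using m2.rk_join_i xf Af aA xc unfolding a_def by simp
    have "rho' z1 z2 = Suc (rho' x1 x2)" using I0[OF inz] I0[OF x] r1 r2 rA c1 unfolding a_def by simp
    then show ?thesis using inz xz1 xz2 zy1 zy2 by blast
  qed
qed

lemma rho_cover: "covers P X Y \<Longrightarrow> rho Y = Suc (rho X)"
proof -
  assume cv: "covers P X Y"
  then have XY: "X \<in> flats P" "Y \<in> flats P" "lle P X Y" "X \<noteq> Y"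
    and nz: "\<not> (\<exists>Z\<in>flats P. lless P X Z \<and> lless P Z Y)" unfolding covers_def lless_def by auto
  obtain x1 x2 y1 y2 where xy: "X = pe x1 x2" "inP x1 x2" "Y = pe y1 y2" "inP y1 y2" using XY by (metis P_cases)
  have le: "lle E1 x1 y1" "lle E2 x2 y2" using XY xy by auto
  have ne: "x1 \<noteq> y1 \<or> x2 \<noteq> y2" using XY xy by auto
  obtain z1 z2 where z: "inP z1 z2" "lle E1 x1 z1" "lle E1 z1 y1" "lle E2 x2 z2" "lle E2 z2 y2"
     "rho' z1 z2 = Suc (rho' x1 x2)" using rho_step[OF xy(2) xy(4) le ne] by blast
  have Zf: "pe z1 z2 \<in> flats P" using z P_flats by simp
  have "\<not> (z1 = x1 \<and> z2 = x2)" using z(6) by auto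
  then have "X \<noteq> pe z1 z2" using xy(1) by auto
  then have l1: "lless P X (pe z1 z2)" using z(2,4) xy(1) unfolding lless_def by simp
  have "pe z1 z2 = Y"
  proof (rule ccontr)
    assume "pe z1 z2 \<noteq> Y"
    then have "lless P (pe z1 z2) Y" using z xy unfolding lless_def by simp
    then show False using nz l1 Zf by blast
  qed
  then show ?thesis using z xy by auto
qed

lemma rho_bot: "rho (bot P) = 0"
  using I0[OF inP_bot] m1.c_bot unfolding P_bot by simp

lemma P_ranked: "ranked P" and rk_P: "X \<in> flats P \<Longrightarrow> rk P X = rho X"
  using P.rank_fun[where \<rho>=rho, OF rho_bot rho_cover] by auto

lemma rk_P_pe: "inP a b \<Longrightarrow> rk P (pe a b) = rho' a b"
  using rk_P P_flats by simp

lemma lift1_eq: "lift1 L E1 i1 i2 h = pe h (i2 (m1.c h))"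
  unfolding lift1_def m1.c_def m1.Fi_def by simp
lemma lift2_eq: "lift2 L E2 i1 i2 h = pe (i1 (m2.c h)) h"
  unfolding lift2_def m2.c_def m2.Fi_def by simp

lemma inP_lift1: "h \<in> flats E1 \<Longrightarrow> inP h (i2 (m1.c h))"
  unfolding inP_def by simp
lemma inP_lift2: "h \<in> flats E2 \<Longrightarrow> inP (i1 (m2.c h)) h"
  unfolding inP_def by simp

lemma atoms_P: "X \<in> atoms P \<longleftrightarrow> X \<in> flats P \<and> rho X = 1"
  unfolding atoms_def using rk_P by auto

lemma lift1_atom: "h \<in> atoms E1 \<Longrightarrow> lift1 L E1 i1 i2 h \<in> atoms P"
proof -
  assume h: "h \<in> atoms E1"
  have hf: "h \<in> flats E1" using h m1.E.atoms_flats by simp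
  have "rho' h (i2 (m1.c h)) = 1" using I0[OF inP_lift1[OF hf]] m1.E.atoms_rk[OF h] m2.rk_i hf by simp
  then show ?thesis unfolding atoms_P lift1_eq using inP_lift1[OF hf] P_flats by simp
qed

lemma lift2_atom: "h \<in> atoms E2 \<Longrightarrow> lift2 L E2 i1 i2 h \<in> atoms P"
proof -
  assume h: "h \<in> atoms E2"
  have hf: "h \<in> flats E2" using h m2.E.atoms_flats by simp
  have "rho' (i1 (m2.c h)) h = 1" using I0[OF inP_lift2[OF hf]] m2.E.atoms_rk[OF h] m1.rk_i hf by simp
  then show ?thesis unfolding atoms_P lift2_eq using inP_lift2[OF hf] P_flats by simp
qed

lemma P_atomic: "atomic P"
  unfolding atomic_def
proof
  fix X assume X: "X \<in> flats P"
  obtain x1 x2 where x: "X = pe x1 x2" "inP x1 x2" using X P_cases by blast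
  note xf = inP_D(1,2)[OF x(2)] and xc = inP_D(3)[OF x(2)]
  define S where "S = {A \<in> atoms P. lle P A X}"
  have Sf: "S \<subseteq> flats P" unfolding S_def atoms_def by auto
  have WX: "lle P (Join P S) X" using P.Join_least[OF Sf X] unfolding S_def by auto
  obtain w1 w2 where w: "Join P S = pe w1 w2" "inP w1 w2" using P.Join_in[OF Sf] P_cases by blast
  note wf = inP_D(1,2)[OF w(2)]
  obtain T1 where T1: "T1 \<subseteq> atoms E1" "x1 = Join E1 T1" using m1.E.atomicL xf by blast
  obtain T2 where T2: "T2 \<subseteq> atoms E2" "x2 = Join E2 T2" using m2.E.atomicL xf by blast
  have T1f: "T1 \<subseteq> flats E1" using T1 m1.E.atoms_flats by auto
  have T2f: "T2 \<subseteq> flats E2" using T2 m2.E.atoms_flats by auto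
  have "lle E1 h w1" if h: "h \<in> T1" for h
  proof -
    have hf: "h \<in> flats E1" using h T1f by auto
    have hx: "lle E1 h x1" using m1.E.Join_upper[OF T1f h] T1 by simp
    have "lle L (m1.c h) (m1.c x1)" using m1.c_mono[OF hf xf(1) hx] .
    then have "lle E2 (i2 (m1.c h)) (i2 (m2.c x2))" using m2.i_mono hf xf xc by simp
    then have "lle E2 (i2 (m1.c h)) x2" using m2.E.trans[OF _ _ xf(2) _ m2.i_c_le[OF xf(2)]] hf xf by simp
    then have "lift1 L E1 i1 i2 h \<in> S" unfolding S_def using lift1_atom h T1 hx x by (auto simp: lift1_eq)
    then have "lle P (lift1 L E1 i1 i2 h) (Join P S)" using P.Join_upper[OF Sf] by simp
    then show ?thesis using w by (simp add: lift1_eq)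
  qed
  then have x1w: "lle E1 x1 w1" using m1.E.Join_least[OF T1f wf(1)] T1 by simp
  have "lle E2 h w2" if h: "h \<in> T2" for h
  proof -
    have hf: "h \<in> flats E2" using h T2f by auto
    have hx: "lle E2 h x2" using m2.E.Join_upper[OF T2f h] T2 by simp
    have "lle L (m2.c h) (m2.c x2)" using m2.c_mono[OF hf xf(2) hx] .
    then have "lle E1 (i1 (m2.c h)) (i1 (m1.c x1))" using m1.i_mono hf xf xc by simp
    then have "lle E1 (i1 (m2.c h)) x1" using m1.E.trans[OF _ _ xf(1) _ m1.i_c_le[OF xf(1)]] hf xf by simp
    then have "lift2 L E2 i1 i2 h \<in> S" unfolding S_def using lift2_atom h T2 hx x by (auto simp: lift2_eq)
    then have "lle P (lift2 L E2 i1 i2 h) (Join P S)" using P.Join_upper[OF Sf] by simp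
    then show ?thesis using w by (simp add: lift2_eq)
  qed
  then have x2w: "lle E2 x2 w2" using m2.E.Join_least[OF T2f wf(2)] T2 by simp
  have "lle P X (Join P S)" using x1w x2w x w by simp
  then have "X = Join P S" using P.antisym WX X P.Join_in[OF Sf] by simp
  moreover have "S \<subseteq> atoms P" unfolding S_def by auto
  ultimately show "\<exists>S\<subseteq>atoms P. X = Join P S" by blast
qed

lemma P_semimod: "semimodular P"
  unfolding semimodular_def
proof (intro ballI)
  fix X Y assume X: "X \<in> flats P" and Y: "Y \<in> flats P"
  obtain x1 x2 where x: "X = pe x1 x2" "inP x1 x2" using X P_cases by blast
  obtain y1 y2 where y: "Y = pe y1 y2" "inP y1 y2" using Y P_cases by blast
  note xf = inP_D(1,2)[OF x(2)] and xc = inP_D(3)[OF x(2)]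
  note yf = inP_D(1,2)[OF y(2)] and yc = inP_D(3)[OF y(2)]
  define a where "a = m1.c x1"
  define b where "b = m1.c y1"
  define j1 where "j1 = join E1 x1 y1"
  define j2 where "j2 = join E2 x2 y2"
  define A1 where "A1 = m1.c j1"
  define A2 where "A2 = m2.c j2"
  define C where "C = join L A1 A2"
  define n1 where "n1 = meet E1 x1 y1"
  define n2 where "n2 = meet E2 x2 y2"
  define F2 where "F2 = m2.Fi"
  have F2f: "F2 \<in> flats E2" unfolding F2_def by simp
  have af: "a \<in> flats L" and bf: "b \<in> flats L" unfolding a_def b_def using xf yf by auto
  have j1f: "j1 \<in> flats E1" and j2f: "j2 \<in> flats E2" unfolding j1_def j2_def using xf yf by auto
  have A1f: "A1 \<in> flats L" and A2f: "A2 \<in> flats L" unfolding A1_def A2_def using j1f j2f by auto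
  have Cf: "C \<in> flats L" unfolding C_def using A1f A2f by simp
  have n1f: "n1 \<in> flats E1" and n2f: "n2 \<in> flats E2" unfolding n1_def n2_def using xf yf by auto
  have inM: "inP n1 n2" unfolding n1_def n2_def using P_glb(1)[OF x(2) y(2)] .
  have inZ: "inP (pj1 x1 x2 y1 y2) (pj2 x1 x2 y1 y2)" using P_lub(1)[OF x(2) y(2)] .
  have z1: "pj1 x1 x2 y1 y2 = join E1 j1 (i1 C)" unfolding pj1_def CC_def C_def A1_def A2_def j1_def j2_def by simp
  have z2: "pj2 x1 x2 y1 y2 = join E2 j2 (i2 C)" unfolding pj2_def CC_def C_def A1_def A2_def j1_def j2_def by simp
  have rkM: "rk P (meet P X Y) = rho' n1 n2" using P_meet[OF x(2) y(2)] rk_P_pe[OF inM] x y unfolding n1_def n2_def by simp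
  have rkZ: "rk P (join P X Y) = rho' (join E1 j1 (i1 C)) (join E2 j2 (i2 C))"
    using P_join[OF x(2) y(2)] rk_P_pe[OF inZ] x y z1 z2 by simp
  have rkX: "rk P X = rho' x1 x2" using rk_P_pe x by simp
  have rkY: "rk P Y = rho' y1 y2" using rk_P_pe y by simp
  have iZ: "inP (join E1 j1 (i1 C)) (join E2 j2 (i2 C))" using inZ z1 z2 by simp
  have e1: "rho' n1 n2 + rk E2 F2 = rk E1 n1 + rk E2 (join E2 n2 F2)" using I2[OF inM] unfolding F2_def .
  have "join E2 (join E2 j2 (i2 C)) F2 = join E2 j2 F2"
    using m2.E.join_assoc[of j2 "i2 C" F2] m2.E.join_absorb[of "i2 C" F2] m2.i_le_Fi j2f Cf F2f unfolding F2_def by simp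
  then have e2: "rho' (join E1 j1 (i1 C)) (join E2 j2 (i2 C)) + rk E2 F2 = rk E1 (join E1 j1 (i1 C)) + rk E2 (join E2 j2 F2)"
    using I2[OF iZ] unfolding F2_def by simp
  have e3: "rho' x1 x2 + rk E2 F2 = rk E1 x1 + rk E2 (join E2 x2 F2)" using I2[OF x(2)] unfolding F2_def .
  have e4: "rho' y1 y2 + rk E2 F2 = rk E1 y1 + rk E2 (join E2 y2 F2)" using I2[OF y(2)] unfolding F2_def .
  have s1: "rk E1 n1 + rk E1 j1 \<le> rk E1 x1 + rk E1 y1" unfolding n1_def j1_def using m1.E.semimod xf yf by simp
  have A1C: "lle L A1 C" unfolding C_def using m1.L.join_ub1 A1f A2f by simp
  have s2: "rk E1 (join E1 j1 (i1 C)) + rk L A1 = rk E1 j1 + rk L C"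
    using m1.rk_join_i[OF j1f Cf] A1C unfolding A1_def by simp
  have s3: "rk L (meet L A1 A2) + rk L C \<le> rk L A1 + rk L A2" unfolding C_def using m1.L.semimod A1f A2f by simp
  have x1j: "lle E1 x1 j1" "lle E1 y1 j1" unfolding j1_def using m1.E.join_ub1 m1.E.join_ub2 xf yf by auto
  have x2j: "lle E2 x2 j2" "lle E2 y2 j2" unfolding j2_def using m2.E.join_ub1 m2.E.join_ub2 xf yf by auto
  have aA1: "lle L a A1" "lle L b A1" unfolding a_def b_def A1_def using m1.c_mono j1f xf yf x1j by auto
  have "lle L (m2.c x2) A2" "lle L (m2.c y2) A2" unfolding A2_def using m2.c_mono j2f xf yf x2j by auto
  then have aA2: "lle L a A2" "lle L b A2" unfolding a_def b_def using xc yc by auto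
  have "lle L (join L a b) (meet L A1 A2)"
    using m1.L.join_least[OF af bf] m1.L.le_meet_iff[OF A1f A2f] aA1 aA2 af bf A1f A2f by simp
  then have s4: "rk L (join L a b) \<le> rk L (meet L A1 A2)" using m1.L.rk_mono af bf A1f A2f by simp
  have s5: "rk E2 (meet E2 j2 F2) + rk E2 (join E2 j2 F2) + rk E2 (join E2 n2 F2)
     \<le> rk E2 (join E2 x2 F2) + rk E2 (join E2 y2 F2) + rk E2 (join E2 (meet E2 x2 F2) (meet E2 y2 F2))"
    using m2.E.semimod_aux[OF m2.Fi_mod xf(2) yf(2)] unfolding j2_def n2_def F2_def .
  have "meet E2 j2 F2 = i2 A2" unfolding A2_def F2_def using m2.i_c j2f by simp
  then have s6: "rk E2 (meet E2 j2 F2) = rk L A2" using m2.rk_i A2f by simp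
  have "join E2 (meet E2 x2 F2) (meet E2 y2 F2) = i2 (join L a b)"
    unfolding F2_def a_def b_def using m2.i_c xf yf xc yc m2.i_join by simp
  then have s7: "rk E2 (join E2 (meet E2 x2 F2) (meet E2 y2 F2)) = rk L (join L a b)" using m2.rk_i af bf by simp
  show "rk P (meet P X Y) + rk P (join P X Y) \<le> rk P X + rk P Y"
    unfolding rkM rkZ rkX rkY using e1 e2 e3 e4 s1 s2 s3 s4 s5 s6 s7 by linarith
qed

lemma P_geo: "geometric_lattice P"
  unfolding geometric_lattice_def using P_fl P_ranked P_atomic P_semimod by simp

sublocale PG: geo P by (unfold_locales, rule P_geo)

lemma iota12_eq: "iota12 i1 i2 a = pe (i1 a) (i2 a)" unfolding iota12_def by simp

lemma Fiota_P: "F_iota L (iota12 i1 i2) = pe m1.Fi m2.Fi"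
  unfolding F_iota_def iota12_eq m1.Fi_def' m2.Fi_def' by simp

lemma inP_Fi: "inP m1.Fi m2.Fi" using inP_i[of "top L"] m1.Fi_def' m2.Fi_def' by simp

lemma modP_Fp: "modular_flat P (pe m1.Fi m2.Fi)"
  unfolding modular_flat_def
proof (intro conjI ballI)
  show G: "pe m1.Fi m2.Fi \<in> flats P" using inP_Fi P_flats by simp
  fix Y assume Y: "Y \<in> flats P"
  obtain y1 y2 where y: "Y = pe y1 y2" "inP y1 y2" using Y P_cases by blast
  note yf = inP_D(1,2)[OF y(2)] and yc = inP_D(3)[OF y(2)]
  define g where "g = m1.c y1"
  have gf: "g \<in> flats L" unfolding g_def using yf by simp
  have m1e: "meet E1 m1.Fi y1 = i1 g" unfolding g_def using m1.i_c yf m1.E.meet_comm by simp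
  have m2e: "meet E2 m2.Fi y2 = i2 g" unfolding g_def using m2.i_c yf m2.E.meet_comm yc by simp
  have inM: "inP (i1 g) (i2 g)" using inP_i gf by simp
  have rM: "rk P (meet P (pe m1.Fi m2.Fi) Y) = rho' (i1 g) (i2 g)"
    using P_meet[OF inP_Fi y(2)] y m1e m2e rk_P_pe[OF inM] by simp
  have j1f: "join E1 m1.Fi y1 \<in> flats E1" and j2f: "join E2 m2.Fi y2 \<in> flats E2" using yf by auto
  have cj1: "m1.c (join E1 m1.Fi y1) = top L" using m1.c_ge j1f m1.E.join_ub1 yf by simp
  have cj2: "m2.c (join E2 m2.Fi y2) = top L" using m2.c_ge j2f m2.E.join_ub1 yf by simp
  have CC: "CC (join E1 m1.Fi y1) (join E2 m2.Fi y2) = top L" unfolding CC_def cj1 cj2 using m1.L.join_absorb by simp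
  have p1: "pj1 m1.Fi m2.Fi y1 y2 = join E1 m1.Fi y1"
    unfolding pj1_def CC m1.Fi_def'[symmetric] using m1.E.join_absorb2 j1f m1.E.join_ub1 yf by simp
  have p2: "pj2 m1.Fi m2.Fi y1 y2 = join E2 m2.Fi y2"
    unfolding pj2_def CC m2.Fi_def'[symmetric] using m2.E.join_absorb2 j2f m2.E.join_ub1 yf by simp
  have inJ: "inP (join E1 m1.Fi y1) (join E2 m2.Fi y2)" using P_lub(1)[OF inP_Fi y(2)] p1 p2 by simp
  have rJ: "rk P (join P (pe m1.Fi m2.Fi) Y) = rho' (join E1 m1.Fi y1) (join E2 m2.Fi y2)"
    using P_join[OF inP_Fi y(2)] y p1 p2 rk_P_pe[OF inJ] by simp
  have a1: "rho' (i1 g) (i2 g) + rk L g = rk L g + rk L g" using I0[OF inM] m1.rk_i m2.rk_i gf by simp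
  have a2: "rho' (join E1 m1.Fi y1) (join E2 m2.Fi y2) + rk L (top L) = rk E1 (join E1 m1.Fi y1) + rk E2 (join E2 m2.Fi y2)"
    using I0[OF inJ] cj1 by simp
  have a3: "rho' m1.Fi m2.Fi + rk L (top L) = rk L (top L) + rk L (top L)"
    using I0[OF inP_Fi] m1.rk_i m2.rk_i m1.Fi_def' m2.Fi_def' by simp
  have a4: "rho' y1 y2 + rk L g = rk E1 y1 + rk E2 y2" using I0[OF y(2)] unfolding g_def .
  have a5: "rk L g + rk E1 (join E1 m1.Fi y1) = rk E1 y1 + rk L (top L)"
    using m1.rk_c[OF yf(1)] m1.E.join_comm[of y1 m1.Fi] yf m1.rk_i m1.Fi_def' unfolding g_def by simp
  have a6: "rk L g + rk E2 (join E2 m2.Fi y2) = rk E2 y2 + rk L (top L)"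
    using m2.rk_c[OF yf(2)] m2.E.join_comm[of y2 m2.Fi] yf m2.rk_i m2.Fi_def' yc unfolding g_def by simp
  show "rk P (meet P (pe m1.Fi m2.Fi) Y) + rk P (join P (pe m1.Fi m2.Fi) Y) = rk P (pe m1.Fi m2.Fi) + rk P Y"
    unfolding rM rJ rk_P_pe[OF inP_Fi] using rk_P_pe[OF y(2)] y a1 a2 a3 a4 a5 a6 by simp
qed

lemma P_mext: "modular_extension L P (iota12 i1 i2)"
  unfolding modular_extension_def
proof (intro conjI)
  show "geometric_lattice P" by (rule P_geo)
  show "embedding L P (iota12 i1 i2)"
    unfolding embedding_def
  proof (intro conjI ballI impI allI)
    show "inj_on (iota12 i1 i2) (flats L)" unfolding inj_on_def iota12_eq using m1.i_eq by simp
    show "iota12 i1 i2 ` flats L \<subseteq> flats P" unfolding iota12_eq using inP_i P_flats by auto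
  next
    fix x y assume "x \<in> flats L" "y \<in> flats L" "lle L x y"
    then show "lle P (iota12 i1 i2 x) (iota12 i1 i2 y)" unfolding iota12_eq using m1.i_mono m2.i_mono by simp
  next
    fix S assume S: "S \<subseteq> flats L"
    show "iota12 i1 i2 (Join L S) = Join P (iota12 i1 i2 ` S)"
    proof (rule sym, rule P.Join_eq)
      have JS: "Join L S \<in> flats L" using S by simp
      show "is_lub P (iota12 i1 i2 ` S) (iota12 i1 i2 (Join L S))" unfolding is_lub_def
      proof (intro conjI ballI impI)
        show "iota12 i1 i2 (Join L S) \<in> flats P" unfolding iota12_eq using inP_i JS P_flats by simp
      next
        fix X assume "X \<in> iota12 i1 i2 ` S"
        then obtain a where a: "a \<in> S" "X = iota12 i1 i2 a" by auto
        have "lle L a (Join L S)" using m1.L.Join_upper S a by simp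
        moreover have af: "a \<in> flats L" using a S by auto
        ultimately show "lle P X (iota12 i1 i2 (Join L S))" unfolding a iota12_eq
          using m1.i_mono[OF af JS] m2.i_mono[OF af JS] by simp
      next
        fix W assume W: "W \<in> flats P" "\<forall>X\<in>iota12 i1 i2 ` S. lle P X W"
        obtain w1 w2 where w: "W = pe w1 w2" "inP w1 w2" using W P_cases by blast
        note wf = inP_D(1,2)[OF w(2)]
        have "\<forall>a\<in>S. lle E1 (i1 a) w1 \<and> lle E2 (i2 a) w2" using W(2) w unfolding iota12_eq by auto
        moreover have "i1 ` S \<subseteq> flats E1" "i2 ` S \<subseteq> flats E2" using S by auto
        ultimately have "lle E1 (Join E1 (i1 ` S)) w1" "lle E2 (Join E2 (i2 ` S)) w2"
          using m1.E.Join_least[of "i1 ` S" w1] m2.E.Join_least[of "i2 ` S" w2] wf by auto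
        then show "lle P (iota12 i1 i2 (Join L S)) W" unfolding iota12_eq w using m1.i_Join m2.i_Join S by simp
      qed
    qed
  next
    show "iota12 i1 i2 ` atoms L \<subseteq> atoms P"
    proof
      fix X assume "X \<in> iota12 i1 i2 ` atoms L"
      then obtain a where a: "a \<in> atoms L" "X = pe (i1 a) (i2 a)" unfolding iota12_eq by auto
      have af: "a \<in> flats L" using a m1.L.atoms_flats by simp
      have "rho' (i1 a) (i2 a) = 1" using I0[OF inP_i[OF af]] m1.rk_i m2.rk_i af m1.L.atoms_rk[OF a(1)] by simp
      then show "X \<in> atoms P" unfolding atoms_P a using inP_i[OF af] P_flats by simp
    qed
  qed
  show "\<exists>F. modular_flat P F \<and> iota12 i1 i2 ` flats L = interval P (bot P) F"
  proof (intro exI conjI)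
    show "modular_flat P (pe m1.Fi m2.Fi)" by (rule modP_Fp)
    show "iota12 i1 i2 ` flats L = interval P (bot P) (pe m1.Fi m2.Fi)"
    proof
      show "iota12 i1 i2 ` flats L \<subseteq> interval P (bot P) (pe m1.Fi m2.Fi)"
        unfolding interval_def iota12_eq using inP_i P_flats P.bot_le m1.i_le_Fi m2.i_le_Fi by auto
    next
      show "interval P (bot P) (pe m1.Fi m2.Fi) \<subseteq> iota12 i1 i2 ` flats L"
      proof
        fix X assume X: "X \<in> interval P (bot P) (pe m1.Fi m2.Fi)"
        then have Xf: "X \<in> flats P" unfolding interval_def by auto
        obtain x1 x2 where x: "X = pe x1 x2" "inP x1 x2" using Xf P_cases by blast
        note xf = inP_D(1,2)[OF x(2)] and xc = inP_D(3)[OF x(2)]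
        have le: "lle E1 x1 m1.Fi" "lle E2 x2 m2.Fi" using X x unfolding interval_def by auto
        obtain a where a: "a \<in> flats L" "x1 = i1 a" using m1.below_Fi xf le by blast
        obtain a' where a': "a' \<in> flats L" "x2 = i2 a'" using m2.below_Fi xf le by blast
        have "a = a'" using xc a a' by simp
        then show "X \<in> iota12 i1 i2 ` flats L" unfolding iota12_eq using x a a' by auto
      qed
    qed
  qed
qed

lemma modP_left:
  assumes F: "modular_flat E1 F" and FF: "lle E1 m1.Fi F"
  shows "modular_flat P (pe F (top E2))"
  unfolding modular_flat_def
proof (intro conjI ballI)
  have Ff: "F \<in> flats E1" using m1.E.modf_in F by simp
  have cF: "m1.c F = top L" using m1.c_ge Ff FF by simp
  have inG: "inP F (top E2)" unfolding inP_def using cF m2.c_ge[of "top E2"] m2.E.le_top Ff by simp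
  show "pe F (top E2) \<in> flats P" using inG P_flats by simp
  fix Y assume Y: "Y \<in> flats P"
  obtain y1 y2 where y: "Y = pe y1 y2" "inP y1 y2" using Y P_cases by blast
  note yf = inP_D(1,2)[OF y(2)] and yc = inP_D(3)[OF y(2)]
  define g where "g = m1.c y1"
  have gf: "g \<in> flats L" unfolding g_def using yf by simp
  have mt: "meet E2 (top E2) y2 = y2" using m2.E.meet_absorb2 m2.E.le_top yf by simp
  have inM: "inP (meet E1 F y1) y2" using P_glb(1)[OF inG y(2)] mt by simp
  have cM: "m1.c (meet E1 F y1) = g" unfolding g_def
    using m1.c_meet[OF Ff yf(1)] cF m1.L.meet_absorb2[OF m1.L.top_in m1.c_in[OF yf(1)] m1.L.le_top[OF m1.c_in[OF yf(1)]]] by simp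
  have rM: "rk P (meet P (pe F (top E2)) Y) = rho' (meet E1 F y1) y2"
    using P_meet[OF inG y(2)] y mt rk_P_pe[OF inM] by simp
  have j1f: "join E1 F y1 \<in> flats E1" using Ff yf by simp
  have Fj: "lle E1 F (join E1 F y1)" using m1.E.join_ub1 Ff yf by simp
  have cj1: "m1.c (join E1 F y1) = top L" using m1.c_ge j1f m1.E.trans[OF _ Ff j1f FF Fj] by simp
  have jt: "join E2 (top E2) y2 = top E2" using m2.E.join_absorb2 m2.E.le_top yf by simp
  have cj2: "m2.c (top E2) = top L" using m2.c_ge m2.E.le_top by simp
  have CC: "CC (join E1 F y1) (top E2) = top L" unfolding CC_def cj1 cj2 using m1.L.join_absorb by simp
  have p1: "pj1 F (top E2) y1 y2 = join E1 F y1"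
    unfolding pj1_def jt CC m1.Fi_def'[symmetric] using m1.E.join_absorb2 j1f m1.E.trans[OF _ Ff j1f FF Fj] by simp
  have p2: "pj2 F (top E2) y1 y2 = top E2"
    unfolding pj2_def jt CC m2.Fi_def'[symmetric] using m2.E.join_absorb2 m2.E.le_top by simp
  have inJ: "inP (join E1 F y1) (top E2)" using P_lub(1)[OF inG y(2)] p1 p2 by simp
  have rJ: "rk P (join P (pe F (top E2)) Y) = rho' (join E1 F y1) (top E2)"
    using P_join[OF inG y(2)] y p1 p2 rk_P_pe[OF inJ] by simp
  have a1: "rho' (meet E1 F y1) y2 + rk L g = rk E1 (meet E1 F y1) + rk E2 y2" using I0[OF inM] cM by simp
  have a2: "rho' (join E1 F y1) (top E2) + rk L (top L) = rk E1 (join E1 F y1) + rk E2 (top E2)"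
    using I0[OF inJ] cj1 by simp
  have a3: "rho' F (top E2) + rk L (top L) = rk E1 F + rk E2 (top E2)" using I0[OF inG] cF by simp
  have a4: "rho' y1 y2 + rk L g = rk E1 y1 + rk E2 y2" using I0[OF y(2)] unfolding g_def .
  have a5: "rk E1 (meet E1 F y1) + rk E1 (join E1 F y1) = rk E1 F + rk E1 y1" using m1.E.modf_rk[OF F yf(1)] .
  show "rk P (meet P (pe F (top E2)) Y) + rk P (join P (pe F (top E2)) Y) = rk P (pe F (top E2)) + rk P Y"
    unfolding rM rJ rk_P_pe[OF inG] using rk_P_pe[OF y(2)] y a1 a2 a3 a4 a5 by simp
qed

lemma modP_right:
  assumes F: "modular_flat E2 F" and FF: "lle E2 m2.Fi F"
  shows "modular_flat P (pe (top E1) F)"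
  unfolding modular_flat_def
proof (intro conjI ballI)
  have Ff: "F \<in> flats E2" using m2.E.modf_in F by simp
  have cF: "m2.c F = top L" using m2.c_ge Ff FF by simp
  have inG: "inP (top E1) F" unfolding inP_def using cF m1.c_ge[of "top E1"] m1.E.le_top Ff by simp
  show "pe (top E1) F \<in> flats P" using inG P_flats by simp
  fix Y assume Y: "Y \<in> flats P"
  obtain y1 y2 where y: "Y = pe y1 y2" "inP y1 y2" using Y P_cases by blast
  note yf = inP_D(1,2)[OF y(2)] and yc = inP_D(3)[OF y(2)]
  define g where "g = m1.c y1"
  have gf: "g \<in> flats L" unfolding g_def using yf by simp
  have mt: "meet E1 (top E1) y1 = y1" using m1.E.meet_absorb2 m1.E.le_top yf by simp
  have inM: "inP y1 (meet E2 F y2)" using P_glb(1)[OF inG y(2)] mt by simp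
  have rM: "rk P (meet P (pe (top E1) F) Y) = rho' y1 (meet E2 F y2)"
    using P_meet[OF inG y(2)] y mt rk_P_pe[OF inM] by simp
  have j2f: "join E2 F y2 \<in> flats E2" using Ff yf by simp
  have Fj: "lle E2 F (join E2 F y2)" using m2.E.join_ub1 Ff yf by simp
  have cj2: "m2.c (join E2 F y2) = top L" using m2.c_ge j2f m2.E.trans[OF _ Ff j2f FF Fj] by simp
  have jt: "join E1 (top E1) y1 = top E1" using m1.E.join_absorb2 m1.E.le_top yf by simp
  have cj1: "m1.c (top E1) = top L" using m1.c_ge m1.E.le_top by simp
  have CC: "CC (top E1) (join E2 F y2) = top L" unfolding CC_def cj2 cj1 using m1.L.join_absorb by simp
  have p2: "pj2 (top E1) F y1 y2 = join E2 F y2"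
    unfolding pj2_def jt CC m2.Fi_def'[symmetric] using m2.E.join_absorb2 j2f m2.E.trans[OF _ Ff j2f FF Fj] by simp
  have p1: "pj1 (top E1) F y1 y2 = top E1"
    unfolding pj1_def jt CC m1.Fi_def'[symmetric] using m1.E.join_absorb2 m1.E.le_top by simp
  have inJ: "inP (top E1) (join E2 F y2)" using P_lub(1)[OF inG y(2)] p1 p2 by simp
  have rJ: "rk P (join P (pe (top E1) F) Y) = rho' (top E1) (join E2 F y2)"
    using P_join[OF inG y(2)] y p1 p2 rk_P_pe[OF inJ] by simp
  have a1: "rho' y1 (meet E2 F y2) + rk L g = rk E1 y1 + rk E2 (meet E2 F y2)" using I0[OF inM] unfolding g_def by simp
  have a2: "rho' (top E1) (join E2 F y2) + rk L (top L) = rk E1 (top E1) + rk E2 (join E2 F y2)"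
    using I0[OF inJ] cj1 by simp
  have a3: "rho' (top E1) F + rk L (top L) = rk E1 (top E1) + rk E2 F" using I0[OF inG] cj1 by simp
  have a4: "rho' y1 y2 + rk L g = rk E1 y1 + rk E2 y2" using I0[OF y(2)] unfolding g_def .
  have a5: "rk E2 (meet E2 F y2) + rk E2 (join E2 F y2) = rk E2 F + rk E2 y2" using m2.E.modf_rk[OF F yf(2)] .
  show "rk P (meet P (pe (top E1) F) Y) + rk P (join P (pe (top E1) F) Y) = rk P (pe (top E1) F) + rk P Y"
    unfolding rM rJ rk_P_pe[OF inG] using rk_P_pe[OF y(2)] y a1 a2 a3 a4 a5 by simp
qed

end


lemma dprod_eq: "dprod L (E1, i1, J1) (E2, i2, J2) =
  (pushout L E1 i1 E2 i2, iota12 i1 i2, map (lift1 L E1 i1 i2) J1 @ map (lift2 L E2 i1 i2) J2)"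
  unfolding dprod_def by simp

lemma po_intro: "geometric_lattice L \<Longrightarrow> modular_extension L E1 i1 \<Longrightarrow> modular_extension L E2 i2 \<Longrightarrow> po L E1 i1 E2 i2"
  unfolding po_def mext_def by simp

lemma md_D: "modular_diagram L (E, i, J) \<Longrightarrow> modular_extension L E i"
  "modular_diagram L (E, i, J) \<Longrightarrow> set J \<subseteq> atoms E"
  unfolding modular_diagram_def by auto

lemma md_prod:
  assumes L: "geometric_lattice L" and d1: "modular_diagram L (E1, i1, J1)" and d2: "modular_diagram L (E2, i2, J2)"
  shows "modular_diagram L (dprod L (E1, i1, J1) (E2, i2, J2))"
proof -
  interpret po L E1 i1 E2 i2 using po_intro L md_D d1 d2 by blast
  have "set (map (lift1 L E1 i1 i2) J1 @ map (lift2 L E2 i1 i2) J2) \<subseteq> atoms P"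
    using lift1_atom lift2_atom md_D(2)[OF d1] md_D(2)[OF d2] by auto
  then show ?thesis unfolding dprod_eq modular_diagram_def using P_mext by simp
qed

lemma transposed_left: "transposed J J' \<Longrightarrow> transposed (map f J @ R) (map f J' @ R)"
proof -
  assume "transposed J J'"
  then obtain a b where ab: "a < length J" "b < length J" "a \<noteq> b" "J' = J[a := J ! b, b := J ! a]"
    unfolding transposed_def by blast
  have "map f J' @ R = (map f J @ R)[a := (map f J @ R) ! b, b := (map f J @ R) ! a]"
    using ab by (simp add: map_update list_update_append1 nth_append)
  then show ?thesis unfolding transposed_def using ab by (intro exI[of _ a] exI[of _ b]) auto
qed

lemma transposed_right: "transposed J J' \<Longrightarrow> transposed (R @ map f J) (R @ map f J')"
proof -
  assume "transposed J J'"
  then obtain a b where ab: "a < length J" "b < length J" "a \<noteq> b" "J' = J[a := J ! b, b := J ! a]"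
    unfolding transposed_def by blast
  have "R @ map f J' = (R @ map f J)[length R + a := (R @ map f J) ! (length R + b), length R + b := (R @ map f J) ! (length R + a)]"
    using ab by (simp add: map_update list_update_append nth_append)
  then show ?thesis unfolding transposed_def using ab
    by (intro exI[of _ "length R + a"] exI[of _ "length R + b"]) auto
qed

lemma R1_left:
  assumes L: "geometric_lattice L" and r: "rel_R1 L \<Gamma> \<Gamma>'" and d: "modular_diagram L \<Delta>"
  shows "rel_R1 L (dprod L \<Gamma> \<Delta>) (dprod L \<Gamma>' \<Delta>)"
proof -
  obtain E i J where g: "\<Gamma> = (E, i, J)" by (cases \<Gamma>) auto
  obtain E' i' J' where g': "\<Gamma>' = (E', i', J')" by (cases \<Gamma>') auto
  obtain E2 i2 J2 where dd: "\<Delta> = (E2, i2, J2)" by (cases \<Delta>) auto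
  have r': "modular_diagram L (E, i, J)" "modular_diagram L (E, i, J')" "transposed J J'" "E' = E" "i' = i"
    using r unfolding rel_R1_def g g' by auto
  show ?thesis unfolding rel_R1_def g g' dd r'(4,5) dprod_eq
    using md_prod[OF L r'(1)] md_prod[OF L r'(2)] d transposed_left[OF r'(3)] unfolding dd dprod_eq by simp
qed

lemma R1_right:
  assumes L: "geometric_lattice L" and r: "rel_R1 L \<Gamma> \<Gamma>'" and d: "modular_diagram L \<Delta>"
  shows "rel_R1 L (dprod L \<Delta> \<Gamma>) (dprod L \<Delta> \<Gamma>')"
proof -
  obtain E i J where g: "\<Gamma> = (E, i, J)" by (cases \<Gamma>) auto
  obtain E' i' J' where g': "\<Gamma>' = (E', i', J')" by (cases \<Gamma>') auto
  obtain E1 i1 J1 where dd: "\<Delta> = (E1, i1, J1)" by (cases \<Delta>) auto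
  have r': "modular_diagram L (E, i, J)" "modular_diagram L (E, i, J')" "transposed J J'" "E' = E" "i' = i"
    using r unfolding rel_R1_def g g' by auto
  show ?thesis unfolding rel_R1_def g g' dd r'(4,5) dprod_eq
    using md_prod[OF L _ r'(1)] md_prod[OF L _ r'(2)] d transposed_right[OF r'(3)] unfolding dd dprod_eq by simp
qed

context po begin

abbreviation JJ where "JJ J1 J2 \<equiv> map (lift1 L E1 i1 i2) J1 @ map (lift2 L E2 i1 i2) J2"

lemma JJ_flats: "set J1 \<subseteq> atoms E1 \<Longrightarrow> set J2 \<subseteq> atoms E2 \<Longrightarrow> set (JJ J1 J2) \<subseteq> flats P"
  using lift1_atom lift2_atom unfolding atoms_def by auto

lemma R3P_left:
  assumes J1: "set J1 \<subseteq> atoms E1" and J2: "set J2 \<subseteq> atoms E2"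
    and r: "lless E1 (join E1 m1.Fi (Join E1 (set J1))) (top E1)"
  shows "lless P (join P (pe m1.Fi m2.Fi) (Join P (set (JJ J1 J2)))) (top P)"
proof -
  define K where "K = join E1 m1.Fi (Join E1 (set J1))"
  have J1f: "set J1 \<subseteq> flats E1" and J2f: "set J2 \<subseteq> flats E2" using J1 J2 unfolding atoms_def by auto
  have JJf: "Join E1 (set J1) \<in> flats E1" using J1f by simp
  have Kf: "K \<in> flats E1" unfolding K_def using JJf by simp
  have FK: "lle E1 m1.Fi K" unfolding K_def using m1.E.join_ub1 JJf by simp
  have JK: "lle E1 (Join E1 (set J1)) K" unfolding K_def using m1.E.join_ub2 JJf by simp
  have inW: "inP K (top E2)" unfolding inP_def using m1.c_ge[OF Kf FK] m2.c_ge[of "top E2"] m2.E.le_top Kf by simp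
  define W where "W = pe K (top E2)"
  have Wf: "W \<in> flats P" unfolding W_def using inW P_flats by simp
  have Sf: "set (JJ J1 J2) \<subseteq> flats P" using JJ_flats J1 J2 .
  have ub: "lle P X W" if X: "X \<in> set (JJ J1 J2)" for X
  proof -
    from X consider (a) h where "h \<in> set J1" "X = lift1 L E1 i1 i2 h" | (b) h where "h \<in> set J2" "X = lift2 L E2 i1 i2 h"
      by auto
    then show ?thesis
    proof cases
      case a
      have hf: "h \<in> flats E1" using a J1f by auto
      have "lle E1 h (Join E1 (set J1))" using m1.E.Join_upper[OF J1f a(1)] .
      then have "lle E1 h K" using m1.E.trans[OF hf JJf Kf _ JK] by simp
      then show ?thesis unfolding a W_def lift1_eq using m2.E.le_top hf by simp
    next
      case b
      have hf: "h \<in> flats E2" using b J2f by auto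
      have "lle E1 (i1 (m2.c h)) K" using m1.E.trans[OF _ _ Kf m1.i_le_Fi FK] hf by simp
      then show ?thesis unfolding b W_def lift2_eq using m2.E.le_top hf by simp
    qed
  qed
  have "lle P (Join P (set (JJ J1 J2))) W" using P.Join_least[OF Sf Wf] ub by blast
  moreover have "lle P (pe m1.Fi m2.Fi) W" unfolding W_def using FK m2.E.le_top by simp
  moreover have Ff: "pe m1.Fi m2.Fi \<in> flats P" using inP_Fi P_flats by simp
  ultimately have jW: "lle P (join P (pe m1.Fi m2.Fi) (Join P (set (JJ J1 J2)))) W"
    using P.join_least Sf Wf by simp
  have "K \<noteq> top E1" using r unfolding K_def lless_def by simp
  then have Wt: "W \<noteq> top P" unfolding W_def P_top by simp
  have jf: "join P (pe m1.Fi m2.Fi) (Join P (set (JJ J1 J2))) \<in> flats P" using Ff Sf by simp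
  have "join P (pe m1.Fi m2.Fi) (Join P (set (JJ J1 J2))) \<noteq> top P"
  proof
    assume "join P (pe m1.Fi m2.Fi) (Join P (set (JJ J1 J2))) = top P"
    then have "lle P (top P) W" using jW by simp
    then show False using P.antisym P.le_top Wf Wt by auto
  qed
  then show ?thesis unfolding lless_def using P.le_top jf by simp
qed

lemma R3P_right:
  assumes J1: "set J1 \<subseteq> atoms E1" and J2: "set J2 \<subseteq> atoms E2"
    and r: "lless E2 (join E2 m2.Fi (Join E2 (set J2))) (top E2)"
  shows "lless P (join P (pe m1.Fi m2.Fi) (Join P (set (JJ J1 J2)))) (top P)"
proof -
  define K where "K = join E2 m2.Fi (Join E2 (set J2))"
  have J1f: "set J1 \<subseteq> flats E1" and J2f: "set J2 \<subseteq> flats E2" using J1 J2 unfolding atoms_def by auto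
  have JJf: "Join E2 (set J2) \<in> flats E2" using J2f by simp
  have Kf: "K \<in> flats E2" unfolding K_def using JJf by simp
  have FK: "lle E2 m2.Fi K" unfolding K_def using m2.E.join_ub1 JJf by simp
  have JK: "lle E2 (Join E2 (set J2)) K" unfolding K_def using m2.E.join_ub2 JJf by simp
  have inW: "inP (top E1) K" unfolding inP_def using m2.c_ge[OF Kf FK] m1.c_ge[of "top E1"] m1.E.le_top Kf by simp
  define W where "W = pe (top E1) K"
  have Wf: "W \<in> flats P" unfolding W_def using inW P_flats by simp
  have Sf: "set (JJ J1 J2) \<subseteq> flats P" using JJ_flats J1 J2 .
  have ub: "lle P X W" if X: "X \<in> set (JJ J1 J2)" for X
  proof -
    from X consider (a) h where "h \<in> set J1" "X = lift1 L E1 i1 i2 h" | (b) h where "h \<in> set J2" "X = lift2 L E2 i1 i2 h"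
      by auto
    then show ?thesis
    proof cases
      case b
      have hf: "h \<in> flats E2" using b J2f by auto
      have "lle E2 h (Join E2 (set J2))" using m2.E.Join_upper[OF J2f b(1)] .
      then have "lle E2 h K" using m2.E.trans[OF hf JJf Kf _ JK] by simp
      then show ?thesis unfolding b W_def lift2_eq using m1.E.le_top hf by simp
    next
      case a
      have hf: "h \<in> flats E1" using a J1f by auto
      have "lle E2 (i2 (m1.c h)) K" using m2.E.trans[OF _ _ Kf m2.i_le_Fi FK] hf by simp
      then show ?thesis unfolding a W_def lift1_eq using m1.E.le_top hf by simp
    qed
  qed
  have "lle P (Join P (set (JJ J1 J2))) W" using P.Join_least[OF Sf Wf] ub by blast
  moreover have "lle P (pe m1.Fi m2.Fi) W" unfolding W_def using FK m1.E.le_top by simp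
  moreover have Ff: "pe m1.Fi m2.Fi \<in> flats P" using inP_Fi P_flats by simp
  ultimately have jW: "lle P (join P (pe m1.Fi m2.Fi) (Join P (set (JJ J1 J2)))) W"
    using P.join_least Sf Wf by simp
  have "K \<noteq> top E2" using r unfolding K_def lless_def by simp
  then have Wt: "W \<noteq> top P" unfolding W_def P_top by simp
  have jf: "join P (pe m1.Fi m2.Fi) (Join P (set (JJ J1 J2))) \<in> flats P" using Ff Sf by simp
  have "join P (pe m1.Fi m2.Fi) (Join P (set (JJ J1 J2))) \<noteq> top P"
  proof
    assume "join P (pe m1.Fi m2.Fi) (Join P (set (JJ J1 J2))) = top P"
    then have "lle P (top P) W" using jW by simp
    then show False using P.antisym P.le_top Wf Wt by auto
  qed
  then show ?thesis unfolding lless_def using P.le_top jf by simp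
qed

lemma R5P_left:
  assumes J1: "set J1 \<subseteq> atoms E1" and J2: "set J2 \<subseteq> atoms E2"
    and F: "modular_flat E1 F" "lle E1 m1.Fi F" and cd: "card {k. k < length J1 \<and> \<not> lle E1 (J1 ! k) F} = 2"
  shows "\<exists>G. modular_flat P G \<and> lle P (pe m1.Fi m2.Fi) G \<and> card {k. k < length (JJ J1 J2) \<and> \<not> lle P (JJ J1 J2 ! k) G} = 2"
proof (intro exI conjI)
  have J1f: "set J1 \<subseteq> flats E1" and J2f: "set J2 \<subseteq> flats E2" using J1 J2 unfolding atoms_def by auto
  have Ff: "F \<in> flats E1" using F m1.E.modf_in by simp
  show "modular_flat P (pe F (top E2))" using modP_left F by simp
  show "lle P (pe m1.Fi m2.Fi) (pe F (top E2))" using F m2.E.le_top by simp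
  have "{k. k < length (JJ J1 J2) \<and> \<not> lle P (JJ J1 J2 ! k) (pe F (top E2))} = {k. k < length J1 \<and> \<not> lle E1 (J1 ! k) F}"
  proof (intro set_eqI iffI; simp only: mem_Collect_eq)
    fix k assume k: "k < length (JJ J1 J2) \<and> \<not> lle P (JJ J1 J2 ! k) (pe F (top E2))"
    show "k < length J1 \<and> \<not> lle E1 (J1 ! k) F"
    proof (cases "k < length J1")
      case True
      then have "J1 ! k \<in> flats E1" using J1f nth_mem by blast
      then show ?thesis using k True m2.E.le_top by (simp add: nth_append lift1_eq)
    next
      case False
      then have kk: "k - length J1 < length J2" using k by auto
      then have hf: "J2 ! (k - length J1) \<in> flats E2" using J2f nth_mem by blast
      have "lle E1 (i1 (m2.c (J2 ! (k - length J1)))) F" using m1.E.trans[OF _ _ Ff m1.i_le_Fi F(2)] hf by simp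
      then show ?thesis using k False m2.E.le_top hf kk by (simp add: nth_append lift2_eq)
    qed
  next
    fix k assume k: "k < length J1 \<and> \<not> lle E1 (J1 ! k) F"
    then show "k < length (JJ J1 J2) \<and> \<not> lle P (JJ J1 J2 ! k) (pe F (top E2))"
      by (simp add: nth_append lift1_eq)
  qed
  then show "card {k. k < length (JJ J1 J2) \<and> \<not> lle P (JJ J1 J2 ! k) (pe F (top E2))} = 2" using cd by simp
qed

lemma R5P_right:
  assumes J1: "set J1 \<subseteq> atoms E1" and J2: "set J2 \<subseteq> atoms E2"
    and F: "modular_flat E2 F" "lle E2 m2.Fi F" and cd: "card {k. k < length J2 \<and> \<not> lle E2 (J2 ! k) F} = 2"
  shows "\<exists>G. modular_flat P G \<and> lle P (pe m1.Fi m2.Fi) G \<and> card {k. k < length (JJ J1 J2) \<and> \<not> lle P (JJ J1 J2 ! k) G} = 2"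
proof (intro exI conjI)
  have J1f: "set J1 \<subseteq> flats E1" and J2f: "set J2 \<subseteq> flats E2" using J1 J2 unfolding atoms_def by auto
  have Ff: "F \<in> flats E2" using F m2.E.modf_in by simp
  show "modular_flat P (pe (top E1) F)" using modP_right F by simp
  show "lle P (pe m1.Fi m2.Fi) (pe (top E1) F)" using F m1.E.le_top by simp
  have "{k. k < length (JJ J1 J2) \<and> \<not> lle P (JJ J1 J2 ! k) (pe (top E1) F)} = (\<lambda>k. length J1 + k) ` {k. k < length J2 \<and> \<not> lle E2 (J2 ! k) F}"
  proof (intro set_eqI iffI)
    fix k assume "k \<in> {k. k < length (JJ J1 J2) \<and> \<not> lle P (JJ J1 J2 ! k) (pe (top E1) F)}"
    then have k: "k < length (JJ J1 J2)" "\<not> lle P (JJ J1 J2 ! k) (pe (top E1) F)" by auto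
    show "k \<in> (\<lambda>k. length J1 + k) ` {k. k < length J2 \<and> \<not> lle E2 (J2 ! k) F}"
    proof (cases "k < length J1")
      case True
      then have hf: "J1 ! k \<in> flats E1" using J1f nth_mem by blast
      have "lle E2 (i2 (m1.c (J1 ! k))) F" using m2.E.trans[OF _ _ Ff m2.i_le_Fi F(2)] hf by simp
      then show ?thesis using k True m1.E.le_top hf by (simp add: nth_append lift1_eq)
    next
      case False
      then have kk: "k - length J1 < length J2" using k by simp
      have e: "k = length J1 + (k - length J1)" using False by simp
      have hf: "J2 ! (k - length J1) \<in> flats E2" using J2f nth_mem kk by blast
      have "lle E1 (i1 (m2.c (J2 ! (k - length J1)))) (top E1)" using m1.E.le_top hf by simp
      then have "\<not> lle E2 (J2 ! (k - length J1)) F" using k False kk by (simp add: nth_append lift2_eq)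
      then show ?thesis using kk e by blast
    qed
  next
    fix k assume "k \<in> (\<lambda>k. length J1 + k) ` {k. k < length J2 \<and> \<not> lle E2 (J2 ! k) F}"
    then obtain k' where k': "k = length J1 + k'" "k' < length J2" "\<not> lle E2 (J2 ! k') F" by auto
    then show "k \<in> {k. k < length (JJ J1 J2) \<and> \<not> lle P (JJ J1 J2 ! k) (pe (top E1) F)}"
      by (simp add: nth_append lift2_eq)
  qed
  moreover have "card ((\<lambda>k. length J1 + k) ` {k. k < length J2 \<and> \<not> lle E2 (J2 ! k) F}) = 2"
    using cd by (subst card_image) (auto simp: inj_on_def)
  ultimately show "card {k. k < length (JJ J1 J2) \<and> \<not> lle P (JJ J1 J2 ! k) (pe (top E1) F)} = 2" by simp
qed

end

lemma R3_left:
  assumes L: "geometric_lattice L" and r: "rel_R3 L \<Gamma>" and d: "modular_diagram L \<Delta>"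
  shows "rel_R3 L (dprod L \<Gamma> \<Delta>)"
proof -
  obtain E i J where g: "\<Gamma> = (E, i, J)" by (cases \<Gamma>) auto
  obtain E2 i2 J2 where dd: "\<Delta> = (E2, i2, J2)" by (cases \<Delta>) auto
  have md: "modular_diagram L (E, i, J)" and ll: "lless E (join E (F_iota L i) (Join E (set J))) (top E)"
    using r unfolding rel_R3_def g by auto
  have md2: "modular_diagram L (E2, i2, J2)" using d dd by simp
  interpret po L E i E2 i2 using po_intro L md_D md md2 by blast
  have "lless P (join P (pe m1.Fi m2.Fi) (Join P (set (JJ J J2)))) (top P)"
    using R3P_left md_D(2)[OF md] md_D(2)[OF md2] ll unfolding m1.Fi_def by blast
  then show ?thesis unfolding rel_R3_def g dd dprod_eq using md_prod[OF L md md2] Fiota_P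
    unfolding dprod_eq by simp
qed

lemma R3_right:
  assumes L: "geometric_lattice L" and r: "rel_R3 L \<Gamma>" and d: "modular_diagram L \<Delta>"
  shows "rel_R3 L (dprod L \<Delta> \<Gamma>)"
proof -
  obtain E i J where g: "\<Gamma> = (E, i, J)" by (cases \<Gamma>) auto
  obtain E1 i1 J1 where dd: "\<Delta> = (E1, i1, J1)" by (cases \<Delta>) auto
  have md: "modular_diagram L (E, i, J)" and ll: "lless E (join E (F_iota L i) (Join E (set J))) (top E)"
    using r unfolding rel_R3_def g by auto
  have md1: "modular_diagram L (E1, i1, J1)" using d dd by simp
  interpret po L E1 i1 E i using po_intro L md_D md md1 by blast
  have "lless P (join P (pe m1.Fi m2.Fi) (Join P (set (JJ J1 J)))) (top P)"
    using R3P_right md_D(2)[OF md] md_D(2)[OF md1] ll unfolding m2.Fi_def by blast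
  then show ?thesis unfolding rel_R3_def g dd dprod_eq using md_prod[OF L md1 md] Fiota_P
    unfolding dprod_eq by simp
qed

lemma R5_left:
  assumes L: "geometric_lattice L" and r: "rel_R5 L \<Gamma>" and d: "modular_diagram L \<Delta>"
  shows "rel_R5 L (dprod L \<Gamma> \<Delta>)"
proof -
  obtain E i J where g: "\<Gamma> = (E, i, J)" by (cases \<Gamma>) auto
  obtain E2 i2 J2 where dd: "\<Delta> = (E2, i2, J2)" by (cases \<Delta>) auto
  have md: "modular_diagram L (E, i, J)" and ex: "\<exists>F. modular_flat E F \<and> lle E (F_iota L i) F
            \<and> card {k. k < length J \<and> \<not> lle E (J ! k) F} = 2"
    using r unfolding rel_R5_def g by auto
  have md2: "modular_diagram L (E2, i2, J2)" using d dd by simp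
  interpret po L E i E2 i2 using po_intro L md_D md md2 by blast
  have "\<exists>G. modular_flat P G \<and> lle P (pe m1.Fi m2.Fi) G \<and> card {k. k < length (JJ J J2) \<and> \<not> lle P (JJ J J2 ! k) G} = 2"
    using R5P_left md_D(2)[OF md] md_D(2)[OF md2] ex unfolding m1.Fi_def by blast
  then show ?thesis unfolding rel_R5_def g dd dprod_eq using md_prod[OF L md md2] Fiota_P
    unfolding dprod_eq by simp
qed

lemma R5_right:
  assumes L: "geometric_lattice L" and r: "rel_R5 L \<Gamma>" and d: "modular_diagram L \<Delta>"
  shows "rel_R5 L (dprod L \<Delta> \<Gamma>)"
proof -
  obtain E i J where g: "\<Gamma> = (E, i, J)" by (cases \<Gamma>) auto
  obtain E1 i1 J1 where dd: "\<Delta> = (E1, i1, J1)" by (cases \<Delta>) auto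
  have md: "modular_diagram L (E, i, J)" and ex: "\<exists>F. modular_flat E F \<and> lle E (F_iota L i) F
            \<and> card {k. k < length J \<and> \<not> lle E (J ! k) F} = 2"
    using r unfolding rel_R5_def g by auto
  have md1: "modular_diagram L (E1, i1, J1)" using d dd by simp
  interpret po L E1 i1 E i using po_intro L md_D md md1 by blast
  have "\<exists>G. modular_flat P G \<and> lle P (pe m1.Fi m2.Fi) G \<and> card {k. k < length (JJ J1 J) \<and> \<not> lle P (JJ J1 J ! k) G} = 2"
    using R5P_right md_D(2)[OF md] md_D(2)[OF md1] ex unfolding m2.Fi_def by blast
  then show ?thesis unfolding rel_R5_def g dd dprod_eq using md_prod[OF L md1 md] Fiota_P
    unfolding dprod_eq by simp
qed

locale emb = m: mext L E i + m': mext L E' i' for L :: "'a lat" and E i E' i' +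
  fixes \<phi> :: "nat \<Rightarrow> nat"
  assumes phi: "embedding E E' \<phi>" and compat: "\<And>x. x \<in> flats L \<Longrightarrow> i' x = \<phi> (i x)"
begin

lemma phi_in[simp]: "x \<in> flats E \<Longrightarrow> \<phi> x \<in> flats E'" using phi unfolding embedding_def by auto
lemma phi_inj: "inj_on \<phi> (flats E)" using phi unfolding embedding_def by auto
lemma phi_eq: "x \<in> flats E \<Longrightarrow> y \<in> flats E \<Longrightarrow> \<phi> x = \<phi> y \<longleftrightarrow> x = y" using phi_inj unfolding inj_on_def by blast
lemma phi_mono: "x \<in> flats E \<Longrightarrow> y \<in> flats E \<Longrightarrow> lle E x y \<Longrightarrow> lle E' (\<phi> x) (\<phi> y)"
  using phi unfolding embedding_def by auto
lemma phi_Join: "S \<subseteq> flats E \<Longrightarrow> \<phi> (Join E S) = Join E' (\<phi> ` S)" using phi unfolding embedding_def by auto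
lemma phi_atoms: "x \<in> atoms E \<Longrightarrow> \<phi> x \<in> atoms E'" using phi unfolding embedding_def by auto
lemma phi_join: "x \<in> flats E \<Longrightarrow> y \<in> flats E \<Longrightarrow> \<phi> (join E x y) = join E' (\<phi> x) (\<phi> y)"
  unfolding join_def using phi_Join[of "{x,y}"] by simp
lemma phi_bot[simp]: "\<phi> (bot E) = bot E'" unfolding bot_def using phi_Join[of "{}"] by simp
lemma phi_refl: "x \<in> flats E \<Longrightarrow> y \<in> flats E \<Longrightarrow> lle E' (\<phi> x) (\<phi> y) \<Longrightarrow> lle E x y"
proof -
  assume a: "x \<in> flats E" "y \<in> flats E" "lle E' (\<phi> x) (\<phi> y)"
  have "\<phi> (join E x y) = \<phi> y" using phi_join a m'.E.join_absorb by simp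
  then have "join E x y = y" using phi_eq a by simp
  then show "lle E x y" using m.E.join_ub1 a by metis
qed

lemma phi_rk_aux: "\<forall>x\<in>flats E. rk E x = n \<longrightarrow> rk E' (\<phi> x) = n"
proof (induction n)
  case 0
  show ?case
  proof (intro ballI impI)
    fix x assume "x \<in> flats E" "rk E x = 0"
    then have "x = bot E" using m.E.rk_zero by simp
    then show "rk E' (\<phi> x) = 0" by simp
  qed
next
  case (Suc n)
  show ?case
  proof (intro ballI impI)
    fix x assume x: "x \<in> flats E" "rk E x = Suc n"
    then have "x \<noteq> bot E" by auto
    then have "lless E (bot E) x" using m.E.bot_le x unfolding lless_def by simp
    then obtain z where z: "z \<in> flats E" "covers E z x" using m.E.exists_cover_below[of "bot E" x] x by auto
    have rz: "rk E z = n" using m.E.rk_cover[OF z(2)] x by simp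
    obtain p where p: "p \<in> atoms E" "x = join E z p" "\<not> lle E p z" using m.E.cover_atom[OF z(2)] by blast
    have pf: "p \<in> flats E" using p m.E.atoms_flats by simp
    have "\<phi> x = join E' (\<phi> z) (\<phi> p)" using phi_join z pf p by simp
    moreover have "\<not> lle E' (\<phi> p) (\<phi> z)" using phi_refl pf z p by blast
    ultimately have "rk E' (\<phi> x) = Suc (rk E' (\<phi> z))" using m'.E.atom_join phi_atoms p z by simp
    then show "rk E' (\<phi> x) = Suc n" using Suc.IH z rz by simp
  qed
qed

lemma phi_rk: "x \<in> flats E \<Longrightarrow> rk E' (\<phi> x) = rk E x" using phi_rk_aux by blast

lemma Fi_phi: "m'.Fi = \<phi> m.Fi" using m'.Fi_def' m.Fi_def' compat by simp

lemma phi_meet_Fi: assumes x: "x \<in> flats E" shows "meet E' (\<phi> x) m'.Fi = \<phi> (meet E x m.Fi)"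
proof -
  have mf: "meet E' (\<phi> x) m'.Fi \<in> flats E'" using x by simp
  have "lle E' (meet E' (\<phi> x) m'.Fi) m'.Fi" using m'.E.meet_lb2 x by simp
  then obtain d where d: "d \<in> flats L" "meet E' (\<phi> x) m'.Fi = i' d" using m'.below_Fi mf by blast
  have "lle E' (i' d) (\<phi> x)" using d m'.E.meet_lb1[of "\<phi> x" m'.Fi] x by (metis m'.Fi_in phi_in)
  then have "lle E (i d) x" using phi_refl compat d x by simp
  moreover have "lle E (i d) m.Fi" using m.i_le_Fi d by simp
  ultimately have "lle E (i d) (meet E x m.Fi)" using m.E.meet_greatest x d by simp
  then have 1: "lle E' (meet E' (\<phi> x) m'.Fi) (\<phi> (meet E x m.Fi))" using d compat phi_mono x by simp
  have "lle E' (\<phi> (meet E x m.Fi)) (\<phi> x)" "lle E' (\<phi> (meet E x m.Fi)) m'.Fi"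
    using phi_mono m.E.meet_lb1 m.E.meet_lb2 x Fi_phi by auto
  then have 2: "lle E' (\<phi> (meet E x m.Fi)) (meet E' (\<phi> x) m'.Fi)" using m'.E.meet_greatest x by simp
  show ?thesis using m'.E.antisym 1 2 x by simp
qed

lemma c_phi: "x \<in> flats E \<Longrightarrow> m'.c (\<phi> x) = m.c x"
proof -
  assume x: "x \<in> flats E"
  have "i' (m'.c (\<phi> x)) = meet E' (\<phi> x) m'.Fi" using m'.i_c x by simp
  also have "\<dots> = \<phi> (meet E x m.Fi)" using phi_meet_Fi x .
  also have "\<dots> = \<phi> (i (m.c x))" using m.i_c x by simp
  also have "\<dots> = i' (m.c x)" using compat x by simp
  finally show ?thesis using m'.i_eq x by simp
qed

end

locale r2l = emb L E i E' i' \<phi> + m2: mext L E2 i2 for L :: "'a lat" and E i E' i' \<phi> E2 i2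
begin

sublocale Q: po L E i E2 i2 by unfold_locales
sublocale Q': po L E' i' E2 i2 by unfold_locales

definition Phi :: "nat \<Rightarrow> nat" where "Phi X = pe (\<phi> (fst (prod_decode X))) (snd (prod_decode X))"
lemma Phi_pe[simp]: "Phi (pe a b) = pe (\<phi> a) b" unfolding Phi_def by simp

lemma inP_Phi: "Q.inP a b \<Longrightarrow> Q'.inP (\<phi> a) b"
  unfolding Q.inP_def Q'.inP_def using c_phi by simp

lemma Phi_join: assumes x: "Q.inP x1 x2" and y: "Q.inP y1 y2"
  shows "Phi (join Q.P (pe x1 x2) (pe y1 y2)) = join Q'.P (Phi (pe x1 x2)) (Phi (pe y1 y2))"
proof -
  note xf = Q.inP_D(1,2)[OF x] and yf = Q.inP_D(1,2)[OF y]
  have j: "join E' (\<phi> x1) (\<phi> y1) = \<phi> (join E x1 y1)" using phi_join xf yf by simp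
  have jf: "join E x1 y1 \<in> flats E" using xf yf by simp
  have C: "Q'.CC (\<phi> (join E x1 y1)) (join E2 x2 y2) = Q.CC (join E x1 y1) (join E2 x2 y2)"
    unfolding Q'.CC_def Q.CC_def using c_phi jf by simp
  have Cf: "Q.CC (join E x1 y1) (join E2 x2 y2) \<in> flats L" unfolding Q.CC_def using jf xf yf by simp
  have "Q'.pj1 (\<phi> x1) x2 (\<phi> y1) y2 = \<phi> (Q.pj1 x1 x2 y1 y2)"
    unfolding Q'.pj1_def Q.pj1_def j C using phi_join jf Cf compat by simp
  moreover have "Q'.pj2 (\<phi> x1) x2 (\<phi> y1) y2 = Q.pj2 x1 x2 y1 y2"
    unfolding Q'.pj2_def Q.pj2_def j C by simp
  ultimately show ?thesis using Q.P_join[OF x y] Q'.P_join[OF inP_Phi[OF x] inP_Phi[OF y]] by simp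
qed

lemma Phi_in: "X \<in> flats Q.P \<Longrightarrow> Phi X \<in> flats Q'.P"
  by (metis Phi_pe Q'.P_flats Q.P_cases inP_Phi)

lemma Phi_Join: "S \<subseteq> flats Q.P \<Longrightarrow> Phi (Join Q.P S) = Join Q'.P (Phi ` S)"
proof -
  assume S: "S \<subseteq> flats Q.P"
  have "finite S" using S Q.P_finite finite_subset by blast
  then show ?thesis using S
  proof (induction S rule: finite_induct)
    case empty
    have "Join Q.P {} = pe (bot E) (bot E2)" using Q.P_bot unfolding bot_def by simp
    moreover have "Join Q'.P {} = pe (bot E') (bot E2)" using Q'.P_bot unfolding bot_def by simp
    ultimately show ?case by simp
  next
    case (insert X S)
    then have X: "X \<in> flats Q.P" and S: "S \<subseteq> flats Q.P" by auto
    have "Join Q.P (insert X S) = join Q.P X (Join Q.P S)" using Q.P.Join_insert X S by simp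
    moreover obtain x1 x2 where x: "X = pe x1 x2" "Q.inP x1 x2" using X Q.P_cases by blast
    moreover obtain y1 y2 where y: "Join Q.P S = pe y1 y2" "Q.inP y1 y2" using Q.P.Join_in[OF S] Q.P_cases by blast
    ultimately have "Phi (Join Q.P (insert X S)) = join Q'.P (Phi X) (Phi (Join Q.P S))" using Phi_join by simp
    also have "\<dots> = join Q'.P (Phi X) (Join Q'.P (Phi ` S))" using insert S by simp
    also have "\<dots> = Join Q'.P (insert (Phi X) (Phi ` S))"
    proof -
      have "Phi ` S \<subseteq> flats Q'.P" using Phi_in S by auto
      then show ?thesis using Q'.P.Join_insert[of "Phi X" "Phi ` S"] Phi_in X by simp
    qed
    finally show ?case by simp
  qed
qed

lemma Phi_rho: "Q.inP a b \<Longrightarrow> Q'.rho' (\<phi> a) b = Q.rho' a b"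
  unfolding Q.rho'_def Q'.rho'_def using phi_rk c_phi Q.inP_D by simp

lemma Phi_emb: "embedding Q.P Q'.P Phi"
  unfolding embedding_def
proof (intro conjI ballI allI impI)
  show "inj_on Phi (flats Q.P)"
  proof (rule inj_onI)
    fix X Y assume "X \<in> flats Q.P" "Y \<in> flats Q.P" "Phi X = Phi Y"
    then show "X = Y" by (metis Phi_pe Q.P_cases Q.inP_D(1) phi_eq pe_eq)
  qed
  show "Phi ` flats Q.P \<subseteq> flats Q'.P" using Phi_in by auto
next
  fix X Y assume "X \<in> flats Q.P" "Y \<in> flats Q.P" "lle Q.P X Y"
  then show "lle Q'.P (Phi X) (Phi Y)"
    by (elim Q.P_cases) (auto dest: Q.inP_D intro: phi_mono)
next
  fix S assume "S \<subseteq> flats Q.P"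
  then show "Phi (Join Q.P S) = Join Q'.P (Phi ` S)" by (rule Phi_Join)
next
  show "Phi ` atoms Q.P \<subseteq> atoms Q'.P"
  proof
    fix Y assume "Y \<in> Phi ` atoms Q.P"
    then obtain X where X: "X \<in> atoms Q.P" "Y = Phi X" by auto
    then have "X \<in> flats Q.P" "Q.rho X = 1" using Q.atoms_P by auto
    then obtain a b where ab: "X = pe a b" "Q.inP a b" "Q.rho' a b = 1" using Q.P_cases by (metis Q.rho_pe)
    then show "Y \<in> atoms Q'.P" unfolding Q'.atoms_P X(2) using Phi_rho inP_Phi Q'.P_flats by simp
  qed
qed

lemma Phi_top: "rk E (top E) = rk E' (top E') \<Longrightarrow> rk Q.P (top Q.P) = rk Q'.P (top Q'.P)"
proof -
  assume r: "rk E (top E) = rk E' (top E')"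
  have "rk Q.P (top Q.P) = Q.rho' (top E) (top E2)" using Q.P_top Q.rk_P_pe Q.inP_top by simp
  moreover have "rk Q'.P (top Q'.P) = Q'.rho' (top E') (top E2)" using Q'.P_top Q'.rk_P_pe Q'.inP_top by simp
  moreover have "m.c (top E) = top L" "m'.c (top E') = top L" using m.c_ge m'.c_ge m.E.le_top m'.E.le_top by auto
  ultimately show ?thesis unfolding Q.rho'_def Q'.rho'_def using r by simp
qed

lemma Phi_lift1: "h \<in> flats E \<Longrightarrow> lift1 L E' i' i2 (\<phi> h) = Phi (lift1 L E i i2 h)"
  unfolding Q.lift1_eq Q'.lift1_eq using c_phi by simp

lemma Phi_lift2: "h \<in> flats E2 \<Longrightarrow> lift2 L E2 i' i2 h = Phi (lift2 L E2 i i2 h)"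
  unfolding Q.lift2_eq Q'.lift2_eq using compat by simp

lemma Phi_iota: "x \<in> flats L \<Longrightarrow> iota12 i' i2 x = Phi (iota12 i i2 x)"
  unfolding Q.iota12_eq Q'.iota12_eq using compat by simp

end

locale r2r = emb L E i E' i' \<phi> + m1: mext L E1 i1 for L :: "'a lat" and E i E' i' \<phi> E1 i1
begin

sublocale Q: po L E1 i1 E i by unfold_locales
sublocale Q': po L E1 i1 E' i' by unfold_locales

definition Phi :: "nat \<Rightarrow> nat" where "Phi X = pe (fst (prod_decode X)) (\<phi> (snd (prod_decode X)))"
lemma Phi_pe[simp]: "Phi (pe a b) = pe a (\<phi> b)" unfolding Phi_def by simp

lemma inP_Phi: "Q.inP a b \<Longrightarrow> Q'.inP a (\<phi> b)"
  unfolding Q.inP_def Q'.inP_def using c_phi by simp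

lemma Phi_join: assumes x: "Q.inP x1 x2" and y: "Q.inP y1 y2"
  shows "Phi (join Q.P (pe x1 x2) (pe y1 y2)) = join Q'.P (Phi (pe x1 x2)) (Phi (pe y1 y2))"
proof -
  note xf = Q.inP_D(1,2)[OF x] and yf = Q.inP_D(1,2)[OF y]
  have j: "join E' (\<phi> x2) (\<phi> y2) = \<phi> (join E x2 y2)" using phi_join xf yf by simp
  have jf: "join E x2 y2 \<in> flats E" using xf yf by simp
  have C: "Q'.CC (join E1 x1 y1) (\<phi> (join E x2 y2)) = Q.CC (join E1 x1 y1) (join E x2 y2)"
    unfolding Q'.CC_def Q.CC_def using c_phi jf by simp
  have Cf: "Q.CC (join E1 x1 y1) (join E x2 y2) \<in> flats L" unfolding Q.CC_def using jf xf yf by simp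
  have "Q'.pj2 x1 (\<phi> x2) y1 (\<phi> y2) = \<phi> (Q.pj2 x1 x2 y1 y2)"
    unfolding Q'.pj2_def Q.pj2_def j C using phi_join jf Cf compat by simp
  moreover have "Q'.pj1 x1 (\<phi> x2) y1 (\<phi> y2) = Q.pj1 x1 x2 y1 y2"
    unfolding Q'.pj1_def Q.pj1_def j C by simp
  ultimately show ?thesis using Q.P_join[OF x y] Q'.P_join[OF inP_Phi[OF x] inP_Phi[OF y]] by simp
qed

lemma Phi_in: "X \<in> flats Q.P \<Longrightarrow> Phi X \<in> flats Q'.P"
  by (metis Phi_pe Q'.P_flats Q.P_cases inP_Phi)

lemma Phi_Join: "S \<subseteq> flats Q.P \<Longrightarrow> Phi (Join Q.P S) = Join Q'.P (Phi ` S)"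
proof -
  assume S: "S \<subseteq> flats Q.P"
  have "finite S" using S Q.P_finite finite_subset by blast
  then show ?thesis using S
  proof (induction S rule: finite_induct)
    case empty
    have "Join Q.P {} = pe (bot E1) (bot E)" using Q.P_bot unfolding bot_def by simp
    moreover have "Join Q'.P {} = pe (bot E1) (bot E')" using Q'.P_bot unfolding bot_def by simp
    ultimately show ?case by simp
  next
    case (insert X S)
    then have X: "X \<in> flats Q.P" and S: "S \<subseteq> flats Q.P" by auto
    have "Join Q.P (insert X S) = join Q.P X (Join Q.P S)" using Q.P.Join_insert X S by simp
    moreover obtain x1 x2 where x: "X = pe x1 x2" "Q.inP x1 x2" using X Q.P_cases by blast
    moreover obtain y1 y2 where y: "Join Q.P S = pe y1 y2" "Q.inP y1 y2" using Q.P.Join_in[OF S] Q.P_cases by blast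
    ultimately have "Phi (Join Q.P (insert X S)) = join Q'.P (Phi X) (Phi (Join Q.P S))" using Phi_join by simp
    also have "\<dots> = join Q'.P (Phi X) (Join Q'.P (Phi ` S))" using insert S by simp
    also have "\<dots> = Join Q'.P (insert (Phi X) (Phi ` S))"
    proof -
      have "Phi ` S \<subseteq> flats Q'.P" using Phi_in S by auto
      then show ?thesis using Q'.P.Join_insert[of "Phi X" "Phi ` S"] Phi_in X by simp
    qed
    finally show ?case by simp
  qed
qed

lemma Phi_rho: "Q.inP a b \<Longrightarrow> Q'.rho' a (\<phi> b) = Q.rho' a b"
  unfolding Q.rho'_def Q'.rho'_def using phi_rk Q.inP_D by simp

lemma Phi_emb: "embedding Q.P Q'.P Phi"
  unfolding embedding_def
proof (intro conjI ballI allI impI)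
  show "inj_on Phi (flats Q.P)"
  proof (rule inj_onI)
    fix X Y assume "X \<in> flats Q.P" "Y \<in> flats Q.P" "Phi X = Phi Y"
    then show "X = Y" by (metis Phi_pe Q.P_cases Q.inP_D(2) phi_eq pe_eq)
  qed
  show "Phi ` flats Q.P \<subseteq> flats Q'.P" using Phi_in by auto
next
  fix X Y assume "X \<in> flats Q.P" "Y \<in> flats Q.P" "lle Q.P X Y"
  then show "lle Q'.P (Phi X) (Phi Y)"
    by (elim Q.P_cases) (auto dest: Q.inP_D intro: phi_mono)
next
  fix S assume "S \<subseteq> flats Q.P"
  then show "Phi (Join Q.P S) = Join Q'.P (Phi ` S)" by (rule Phi_Join)
next
  show "Phi ` atoms Q.P \<subseteq> atoms Q'.P"
  proof
    fix Y assume "Y \<in> Phi ` atoms Q.P"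
    then obtain X where X: "X \<in> atoms Q.P" "Y = Phi X" by auto
    then have "X \<in> flats Q.P" "Q.rho X = 1" using Q.atoms_P by auto
    then obtain a b where ab: "X = pe a b" "Q.inP a b" "Q.rho' a b = 1" using Q.P_cases by (metis Q.rho_pe)
    then show "Y \<in> atoms Q'.P" unfolding Q'.atoms_P X(2) using Phi_rho inP_Phi Q'.P_flats by simp
  qed
qed

lemma Phi_top: "rk E (top E) = rk E' (top E') \<Longrightarrow> rk Q.P (top Q.P) = rk Q'.P (top Q'.P)"
proof -
  assume r: "rk E (top E) = rk E' (top E')"
  have "rk Q.P (top Q.P) = Q.rho' (top E1) (top E)" using Q.P_top Q.rk_P_pe Q.inP_top by simp
  moreover have "rk Q'.P (top Q'.P) = Q'.rho' (top E1) (top E')" using Q'.P_top Q'.rk_P_pe Q'.inP_top by simp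
  ultimately show ?thesis unfolding Q.rho'_def Q'.rho'_def using r by simp
qed

lemma Phi_lift1: "h \<in> flats E1 \<Longrightarrow> lift1 L E1 i1 i' h = Phi (lift1 L E1 i1 i h)"
  unfolding Q.lift1_eq Q'.lift1_eq using compat by simp

lemma Phi_lift2: "h \<in> flats E \<Longrightarrow> lift2 L E' i1 i' (\<phi> h) = Phi (lift2 L E i1 i h)"
  unfolding Q.lift2_eq Q'.lift2_eq using c_phi by simp

lemma Phi_iota: "x \<in> flats L \<Longrightarrow> iota12 i1 i' x = Phi (iota12 i1 i x)"
  unfolding Q.iota12_eq Q'.iota12_eq using compat by simp

end

lemma R2_left:
  assumes L: "geometric_lattice L" and r: "rel_R2 L \<Gamma> \<Gamma>'" and d: "modular_diagram L \<Delta>"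
  shows "rel_R2 L (dprod L \<Gamma> \<Delta>) (dprod L \<Gamma>' \<Delta>)"
proof -
  obtain E i J where g: "\<Gamma> = (E, i, J)" by (cases \<Gamma>) auto
  obtain E' i' J' where g': "\<Gamma>' = (E', i', J')" by (cases \<Gamma>') auto
  obtain E2 i2 J2 where dd: "\<Delta> = (E2, i2, J2)" by (cases \<Delta>) auto
  have md: "modular_diagram L (E, i, J)" and md': "modular_diagram L (E', i', J')"
    and ex: "\<exists>\<phi>. embedding E E' \<phi> \<and> rk E (top E) = rk E' (top E')
            \<and> (\<forall>x\<in>flats L. i' x = \<phi> (i x)) \<and> J' = map \<phi> J"
    using r unfolding rel_R2_def g g' by auto
  obtain \<phi> where ph: "embedding E E' \<phi>" "rk E (top E) = rk E' (top E')" "\<forall>x\<in>flats L. i' x = \<phi> (i x)" "J' = map \<phi> J"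
    using ex by blast
  have md2: "modular_diagram L (E2, i2, J2)" using d dd by simp
  interpret r2l L E i E' i' \<phi> E2 i2
    using L md_D(1)[OF md] md_D(1)[OF md'] md_D(1)[OF md2] ph(1-3) unfolding r2l_def emb_def emb_axioms_def mext_def by simp
  have J: "set J \<subseteq> flats E" using md_D(2)[OF md] m.E.atoms_flats by auto
  have J2: "set J2 \<subseteq> flats E2" using md_D(2)[OF md2] m2.E.atoms_flats by auto
  have "map (lift1 L E' i' i2) J' @ map (lift2 L E2 i' i2) J2 = map Phi (map (lift1 L E i i2) J @ map (lift2 L E2 i i2) J2)"
    using ph(4) Phi_lift1 Phi_lift2 J J2 by auto
  then show ?thesis unfolding rel_R2_def g g' dd dprod_eq
    using md_prod[OF L md md2] md_prod[OF L md' md2] Phi_emb Phi_top[OF ph(2)] Phi_iota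
    unfolding dprod_eq by auto
qed

lemma R2_right:
  assumes L: "geometric_lattice L" and r: "rel_R2 L \<Gamma> \<Gamma>'" and d: "modular_diagram L \<Delta>"
  shows "rel_R2 L (dprod L \<Delta> \<Gamma>) (dprod L \<Delta> \<Gamma>')"
proof -
  obtain E i J where g: "\<Gamma> = (E, i, J)" by (cases \<Gamma>) auto
  obtain E' i' J' where g': "\<Gamma>' = (E', i', J')" by (cases \<Gamma>') auto
  obtain E1 i1 J1 where dd: "\<Delta> = (E1, i1, J1)" by (cases \<Delta>) auto
  have md: "modular_diagram L (E, i, J)" and md': "modular_diagram L (E', i', J')"
    and ex: "\<exists>\<phi>. embedding E E' \<phi> \<and> rk E (top E) = rk E' (top E')
            \<and> (\<forall>x\<in>flats L. i' x = \<phi> (i x)) \<and> J' = map \<phi> J"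
    using r unfolding rel_R2_def g g' by auto
  obtain \<phi> where ph: "embedding E E' \<phi>" "rk E (top E) = rk E' (top E')" "\<forall>x\<in>flats L. i' x = \<phi> (i x)" "J' = map \<phi> J"
    using ex by blast
  have md1: "modular_diagram L (E1, i1, J1)" using d dd by simp
  interpret r2r L E i E' i' \<phi> E1 i1
    using L md_D(1)[OF md] md_D(1)[OF md'] md_D(1)[OF md1] ph(1-3) unfolding r2r_def emb_def emb_axioms_def mext_def by simp
  have J: "set J \<subseteq> flats E" using md_D(2)[OF md] m.E.atoms_flats by auto
  have J1: "set J1 \<subseteq> flats E1" using md_D(2)[OF md1] m1.E.atoms_flats by auto
  have "map (lift1 L E1 i1 i') J1 @ map (lift2 L E' i1 i') J' = map Phi (map (lift1 L E1 i1 i) J1 @ map (lift2 L E i1 i) J)"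
    using ph(4) Phi_lift1 Phi_lift2 J J1 by auto
  then show ?thesis unfolding rel_R2_def g g' dd dprod_eq
    using md_prod[OF L md1 md] md_prod[OF L md1 md'] Phi_emb Phi_top[OF ph(2)] Phi_iota
    unfolding dprod_eq by auto
qed

lemma factor_fl:
  assumes P: "finite_lattice P" and bij: "bij_betw \<psi> (flats P) (flats A \<times> flats B)"
    and ord: "\<And>x y. x \<in> flats P \<Longrightarrow> y \<in> flats P \<Longrightarrow>
        lle P x y \<longleftrightarrow> lle A (fst (\<psi> x)) (fst (\<psi> y)) \<and> lle B (snd (\<psi> x)) (snd (\<psi> y))"
    and e: "e \<in> flats B" "lle B e e"
  shows "finite_lattice A"
proof -
  interpret P: flat P using P by unfold_locales
  define em where "em \<alpha> = inv_into (flats P) \<psi> (\<alpha>, e)" for \<alpha>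
  have img: "\<psi> ` flats P = flats A \<times> flats B" using bij unfolding bij_betw_def by simp
  have em: "em \<alpha> \<in> flats P" "\<psi> (em \<alpha>) = (\<alpha>, e)" if "\<alpha> \<in> flats A" for \<alpha>
    unfolding em_def using that e img inv_into_into[of "(\<alpha>, e)" \<psi> "flats P"] f_inv_into_f[of "(\<alpha>, e)" \<psi> "flats P"]
    by auto
  have psA: "fst (\<psi> X) \<in> flats A" if "X \<in> flats P" for X
  proof -
    have "\<psi> X \<in> flats A \<times> flats B" using img that by blast
    then show ?thesis by (cases "\<psi> X") auto
  qed
  have le_em: "lle A \<alpha> \<beta> \<longleftrightarrow> lle P (em \<alpha>) (em \<beta>)" if "\<alpha> \<in> flats A" "\<beta> \<in> flats A" for \<alpha> \<beta>
    using ord[OF em(1)[OF that(1)] em(1)[OF that(2)]] em(2) that e by simp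
  have le_em2: "lle A (fst (\<psi> X)) \<beta> \<longleftrightarrow> lle P X (em \<beta>)" if "X \<in> flats P" "\<beta> \<in> flats A" "snd (\<psi> X) = e" for X \<beta>
    using ord[OF that(1) em(1)[OF that(2)]] em(2)[OF that(2)] that e by simp
  show ?thesis unfolding finite_lattice_def
  proof (intro conjI ballI)
    have "flats A \<subseteq> fst ` \<psi> ` flats P"
    proof
      fix \<alpha> assume a: "\<alpha> \<in> flats A"
      then have "\<alpha> = fst (\<psi> (em \<alpha>))" using em by simp
      then show "\<alpha> \<in> fst ` \<psi> ` flats P" using em(1)[OF a] by blast
    qed
    then show "finite (flats A)" using P.fin finite_subset by blast
    obtain X where "X \<in> flats P" using P.ne by blast
    then show "flats A \<noteq> {}" using psA by blast
  next
    fix \<alpha> assume "\<alpha> \<in> flats A"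
    then show "lle A \<alpha> \<alpha>" using le_em em by simp
  next
    fix \<alpha> \<beta> assume ab: "\<alpha> \<in> flats A" "\<beta> \<in> flats A"
    show "lle A \<alpha> \<beta> \<and> lle A \<beta> \<alpha> \<longrightarrow> \<alpha> = \<beta>"
    proof
      assume "lle A \<alpha> \<beta> \<and> lle A \<beta> \<alpha>"
      then have "em \<alpha> = em \<beta>" using le_em ab P.antisym em by simp
      then show "\<alpha> = \<beta>" using em(2) ab by (metis fst_conv)
    qed
  next
    fix \<alpha> \<beta> \<gamma> assume abc: "\<alpha> \<in> flats A" "\<beta> \<in> flats A" "\<gamma> \<in> flats A"
    show "lle A \<alpha> \<beta> \<and> lle A \<beta> \<gamma> \<longrightarrow> lle A \<alpha> \<gamma>"
    proof
      assume "lle A \<alpha> \<beta> \<and> lle A \<beta> \<gamma>"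
      then have "lle P (em \<alpha>) (em \<beta>)" "lle P (em \<beta>) (em \<gamma>)" using le_em abc by auto
      then have "lle P (em \<alpha>) (em \<gamma>)" using P.trans[OF em(1) em(1) em(1)] abc by blast
      then show "lle A \<alpha> \<gamma>" using le_em abc by auto
    qed
  next
    fix \<alpha> \<beta> assume ab: "\<alpha> \<in> flats A" "\<beta> \<in> flats A"
    define Z where "Z = join P (em \<alpha>) (em \<beta>)"
    have Zf: "Z \<in> flats P" unfolding Z_def using em ab by simp
    have "is_lub A {\<alpha>, \<beta>} (fst (\<psi> Z))" unfolding is_lub_def
    proof (intro conjI ballI impI)
      show "fst (\<psi> Z) \<in> flats A" using psA Zf .
      fix x assume "x \<in> {\<alpha>, \<beta>}"
      moreover have "lle P (em \<alpha>) Z" "lle P (em \<beta>) Z" unfolding Z_def using P.join_ub1 P.join_ub2 em ab by auto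
      ultimately show "lle A x (fst (\<psi> Z))" using ord[OF em(1) Zf] em(2) ab by auto
    next
      fix w assume w: "w \<in> flats A" "\<forall>x\<in>{\<alpha>, \<beta>}. lle A x w"
      then have "lle P (em \<alpha>) (em w)" "lle P (em \<beta>) (em w)" using le_em ab by auto
      then have "lle P Z (em w)" unfolding Z_def using P.join_least em ab w by simp
      then show "lle A (fst (\<psi> Z)) w" using ord[OF Zf em(1)[OF w(1)]] em(2)[OF w(1)] by simp
    qed
    then show "\<exists>z. is_lub A {\<alpha>, \<beta>} z" by blast
  next
    fix \<alpha> \<beta> assume ab: "\<alpha> \<in> flats A" "\<beta> \<in> flats A"
    define Z where "Z = meet P (em \<alpha>) (em \<beta>)"
    have Zf: "Z \<in> flats P" unfolding Z_def using em ab by simp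
    have "is_glb A {\<alpha>, \<beta>} (fst (\<psi> Z))" unfolding is_glb_def
    proof (intro conjI ballI impI)
      show "fst (\<psi> Z) \<in> flats A" using psA Zf .
      fix x assume "x \<in> {\<alpha>, \<beta>}"
      moreover have "lle P Z (em \<alpha>)" "lle P Z (em \<beta>)" unfolding Z_def using P.meet_lb1 P.meet_lb2 em ab by auto
      ultimately show "lle A (fst (\<psi> Z)) x" using ord[OF Zf em(1)] em(2) ab by auto
    next
      fix w assume w: "w \<in> flats A" "\<forall>x\<in>{\<alpha>, \<beta>}. lle A w x"
      then have "lle P (em w) (em \<alpha>)" "lle P (em w) (em \<beta>)" using le_em ab by auto
      then have "lle P (em w) Z" unfolding Z_def using P.meet_greatest em ab w by simp
      then show "lle A w (fst (\<psi> Z))" using ord[OF em(1)[OF w(1)] Zf] em(2)[OF w(1)] by simp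
    qed
    then show "\<exists>z. is_glb A {\<alpha>, \<beta>} z" by blast
  qed
qed

lemma nontrivial_two: "finite (flats A) \<Longrightarrow> a \<in> flats A \<Longrightarrow> b \<in> flats A \<Longrightarrow> a \<noteq> b \<Longrightarrow> nontrivial A"
  unfolding nontrivial_def by (metis card_2_iff card_mono empty_subsetI insert_subset)

lemma nontrivial_ex: "nontrivial A \<Longrightarrow> \<exists>a b. a \<in> flats A \<and> b \<in> flats A \<and> a \<noteq> b"
proof -
  assume "nontrivial A"
  then have c: "2 \<le> card (flats A)" unfolding nontrivial_def .
  then have fin: "finite (flats A)" using card.infinite by fastforce
  have "flats A \<noteq> {}" using c by auto
  then obtain a where a: "a \<in> flats A" by blast
  have "card (flats A - {a}) \<ge> 1" using c a fin by (simp add: card_Diff_singleton)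
  then have "flats A - {a} \<noteq> {}" by (metis card.empty not_one_le_zero)
  then obtain b where "b \<in> flats A - {a}" by blast
  then show ?thesis using a by blast
qed

locale r4 = mext L E i for L :: "'a lat" and E i +
  fixes B1 B2 :: "nat lat" and \<psi> :: "nat \<Rightarrow> nat \<times> nat"
  assumes fl1: "finite_lattice B1" and fl2: "finite_lattice B2"
    and iso: "order_iso_prod E B1 B2 \<psi>" and sndF0: "snd (\<psi> (F_iota L i)) = bot B2"
begin

lemma sndF: "snd (\<psi> Fi) = bot B2" using sndF0 unfolding Fi_def .

sublocale B1: flat B1 using fl1 by unfold_locales
sublocale B2: flat B2 using fl2 by unfold_locales

definition psii where "psii = inv_into (flats E) \<psi>"

lemma psi_bij: "bij_betw \<psi> (flats E) (flats B1 \<times> flats B2)" using iso unfolding order_iso_prod_def by auto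
lemma psi_le: "x \<in> flats E \<Longrightarrow> y \<in> flats E \<Longrightarrow> lle E x y \<longleftrightarrow> lle B1 (fst (\<psi> x)) (fst (\<psi> y)) \<and> lle B2 (snd (\<psi> x)) (snd (\<psi> y))"
  using iso unfolding order_iso_prod_def by auto
lemma psi_in2: "x \<in> flats E \<Longrightarrow> \<psi> x \<in> flats B1 \<times> flats B2"
  using psi_bij unfolding bij_betw_def by blast
lemma psi_in: "x \<in> flats E \<Longrightarrow> fst (\<psi> x) \<in> flats B1" "x \<in> flats E \<Longrightarrow> snd (\<psi> x) \<in> flats B2"
  using psi_in2 by (metis mem_Times_iff)+
lemma psii: "b \<in> flats B1 \<Longrightarrow> e \<in> flats B2 \<Longrightarrow> psii (b, e) \<in> flats E"
  "b \<in> flats B1 \<Longrightarrow> e \<in> flats B2 \<Longrightarrow> \<psi> (psii (b, e)) = (b, e)"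
  unfolding psii_def using psi_bij unfolding bij_betw_def
  by (auto intro: inv_into_into f_inv_into_f)
lemma psi_inj: "x \<in> flats E \<Longrightarrow> y \<in> flats E \<Longrightarrow> \<psi> x = \<psi> y \<Longrightarrow> x = y"
  using psi_bij unfolding bij_betw_def inj_on_def by blast

lemma K: assumes x: "x \<in> flats E" shows "c x = c (psii (fst (\<psi> x), bot B2))"
proof -
  define x0 where "x0 = psii (fst (\<psi> x), bot B2)"
  have x0: "x0 \<in> flats E" "\<psi> x0 = (fst (\<psi> x), bot B2)" unfolding x0_def using psii psi_in x by auto
  have "lle E x0 x" using psi_le[OF x0(1) x] x0(2) B2.bot_le psi_in x by simp
  then have 1: "lle L (c x0) (c x)" using c_mono x0 x by simp
  define y where "y = meet E x Fi"
  have yf: "y \<in> flats E" unfolding y_def using x by simp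
  have yF: "lle E y Fi" and yx: "lle E y x" unfolding y_def using E.meet_lb1 E.meet_lb2 x by auto
  have "lle B2 (snd (\<psi> y)) (bot B2)" using psi_le[OF yf Fi_in] yF sndF by simp
  then have sy: "snd (\<psi> y) = bot B2" using B2.antisym B2.bot_le psi_in yf by simp
  have "lle B1 (fst (\<psi> y)) (fst (\<psi> x))" using psi_le[OF yf x] yx by simp
  then have "lle E y x0" using psi_le[OF yf x0(1)] x0(2) sy by simp
  then have "lle E y (meet E x0 Fi)" using E.meet_greatest x0 yf yF by simp
  then have "lle E (i (c x)) (i (c x0))" using i_c x x0 unfolding y_def by simp
  then have 2: "lle L (c x) (c x0)" using i_refl x x0 by simp
  show ?thesis using L.antisym 1 2 x x0 unfolding x0_def by simp
qed

end

locale r4l = r4 L E i B1 B2 \<psi> + m2: mext L E2 i2 for L :: "'a lat" and E i B1 B2 \<psi> E2 i2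
begin

sublocale Q: po L E i E2 i2 by unfold_locales

definition A :: "nat lat" where
  "A = \<lparr> flats = prod_encode ` {(b, y). b \<in> flats B1 \<and> y \<in> flats E2 \<and> Q.inP (psii (b, bot B2)) y},
        lle = (\<lambda>x y. lle B1 (fst (prod_decode x)) (fst (prod_decode y)) \<and> lle E2 (snd (prod_decode x)) (snd (prod_decode y))) \<rparr>"

lemma A_flats: "pe b y \<in> flats A \<longleftrightarrow> b \<in> flats B1 \<and> y \<in> flats E2 \<and> Q.inP (psii (b, bot B2)) y"
  unfolding A_def by (auto simp: inj_image_mem_iff[OF inj_prod_encode])
lemma A_le: "lle A (pe b y) (pe b' y') \<longleftrightarrow> lle B1 b b' \<and> lle E2 y y'"
  unfolding A_def by simp
lemma A_cases: "\<alpha> \<in> flats A \<Longrightarrow> (\<And>b y. \<alpha> = pe b y \<Longrightarrow> b \<in> flats B1 \<Longrightarrow> y \<in> flats E2 \<Longrightarrow> Q.inP (psii (b, bot B2)) y \<Longrightarrow> thesis) \<Longrightarrow> thesis"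
  unfolding A_def by auto

definition psi' :: "nat \<Rightarrow> nat \<times> nat" where
  "psi' X = (pe (fst (\<psi> (fst (prod_decode X)))) (snd (prod_decode X)), snd (\<psi> (fst (prod_decode X))))"
lemma psi'_pe[simp]: "psi' (pe x1 x2) = (pe (fst (\<psi> x1)) x2, snd (\<psi> x1))" unfolding psi'_def by simp

lemma inP_psii: "Q.inP x1 x2 \<Longrightarrow> Q.inP (psii (fst (\<psi> x1), bot B2)) x2"
  unfolding Q.inP_def using K psii psi_in by (metis B2.bot_in)

lemma psi'_bij: "bij_betw psi' (flats Q.P) (flats A \<times> flats B2)"
  unfolding bij_betw_def
proof (intro conjI)
  show "inj_on psi' (flats Q.P)"
  proof (rule inj_onI)
    fix X Y assume X: "X \<in> flats Q.P" and Y: "Y \<in> flats Q.P" and e: "psi' X = psi' Y"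
    obtain x1 x2 where x: "X = pe x1 x2" "Q.inP x1 x2" using X Q.P_cases by blast
    obtain y1 y2 where y: "Y = pe y1 y2" "Q.inP y1 y2" using Y Q.P_cases by blast
    have "fst (\<psi> x1) = fst (\<psi> y1)" "x2 = y2" "snd (\<psi> x1) = snd (\<psi> y1)" using e x y by auto
    then have "\<psi> x1 = \<psi> y1" by (simp add: prod_eq_iff)
    then have "x1 = y1" using psi_inj x y Q.inP_D by blast
    then show "X = Y" using x y \<open>x2 = y2\<close> by simp
  qed
  show "psi' ` flats Q.P = flats A \<times> flats B2"
  proof
    show "psi' ` flats Q.P \<subseteq> flats A \<times> flats B2"
    proof
      fix Z assume "Z \<in> psi' ` flats Q.P"
      then obtain X where X: "X \<in> flats Q.P" "Z = psi' X" by blast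
      obtain x1 x2 where x: "X = pe x1 x2" "Q.inP x1 x2" using X Q.P_cases by blast
      show "Z \<in> flats A \<times> flats B2" using X x A_flats inP_psii psi_in Q.inP_D by simp
    qed
  next
    show "flats A \<times> flats B2 \<subseteq> psi' ` flats Q.P"
    proof
      fix Z assume "Z \<in> flats A \<times> flats B2"
      then obtain \<alpha> e where Z: "Z = (\<alpha>, e)" "\<alpha> \<in> flats A" "e \<in> flats B2" by blast
      obtain b y where bY: "\<alpha> = pe b y" "b \<in> flats B1" "y \<in> flats E2" "Q.inP (psii (b, bot B2)) y"
        using Z(2) A_cases by blast
      define x1 where "x1 = psii (b, e)"
      have x1: "x1 \<in> flats E" "\<psi> x1 = (b, e)" unfolding x1_def using psii by(simp_all add: bY Z)
      have "c x1 = c (psii (b, bot B2))" using K[OF x1(1)] x1(2) by simp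
      then have inx: "Q.inP x1 y" using bY(4) x1 unfolding Q.inP_def by simp
      then have "pe x1 y \<in> flats Q.P" using Q.P_flats by simp
      moreover have "psi' (pe x1 y) = Z" using x1 Z by(simp add: bY)
      ultimately show "Z \<in> psi' ` flats Q.P" by (metis image_eqI)
    qed
  qed
qed

lemma psi'_ord: "X \<in> flats Q.P \<Longrightarrow> Y \<in> flats Q.P \<Longrightarrow>
   lle Q.P X Y \<longleftrightarrow> lle A (fst (psi' X)) (fst (psi' Y)) \<and> lle B2 (snd (psi' X)) (snd (psi' Y))"
proof -
  assume X: "X \<in> flats Q.P" and Y: "Y \<in> flats Q.P"
  obtain x1 x2 where x: "X = pe x1 x2" "Q.inP x1 x2" using X Q.P_cases by blast
  obtain y1 y2 where y: "Y = pe y1 y2" "Q.inP y1 y2" using Y Q.P_cases by blast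
  show ?thesis using x y psi_le[of x1 y1] Q.inP_D A_le by auto
qed

lemma A_fl: "finite_lattice A"
  using factor_fl[OF Q.P_fl psi'_bij psi'_ord B2.bot_in B2.refl[OF B2.bot_in]] .

lemma A_nontriv: "nontrivial B1 \<Longrightarrow> nontrivial A"
proof -
  assume "nontrivial B1"
  then obtain b b' where bb: "b \<in> flats B1" "b' \<in> flats B1" "b \<noteq> b'" using nontrivial_ex by blast
  have mem: "pe a (i2 (c (psii (a, bot B2)))) \<in> flats A" if "a \<in> flats B1" for a
    unfolding A_flats Q.inP_def using that psii by simp
  show ?thesis using nontrivial_two[OF _ mem[OF bb(1)] mem[OF bb(2)]] bb A_fl unfolding finite_lattice_def by simp
qed

lemma psi'_F: "snd (psi' (F_iota L (iota12 i i2))) = bot B2"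
  using Q.Fiota_P sndF unfolding Fi_def by simp

end

lemma R4_left:
  assumes L: "geometric_lattice L" and r: "rel_R4 L \<Gamma>" and d: "modular_diagram L \<Delta>"
  shows "rel_R4 L (dprod L \<Gamma> \<Delta>)"
proof -
  obtain E i J where g: "\<Gamma> = (E, i, J)" by (cases \<Gamma>) auto
  obtain E2 i2 J2 where dd: "\<Delta> = (E2, i2, J2)" by (cases \<Delta>) auto
  have md: "modular_diagram L (E, i, J)" and ex: "\<exists>E1 E2 \<psi>. finite_lattice E1 \<and> finite_lattice E2 \<and> nontrivial E1 \<and> nontrivial E2
            \<and> order_iso_prod E E1 E2 \<psi> \<and> snd (\<psi> (F_iota L i)) = bot E2"
    using r unfolding rel_R4_def g by auto
  obtain B1 B2 \<psi> where B: "finite_lattice B1" "finite_lattice B2" "nontrivial B1" "nontrivial B2"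
    "order_iso_prod E B1 B2 \<psi>" "snd (\<psi> (F_iota L i)) = bot B2" using ex by blast
  have md2: "modular_diagram L (E2, i2, J2)" using d dd by simp
  interpret r4l L E i B1 B2 \<psi> E2 i2
    using L md_D(1)[OF md] md_D(1)[OF md2] B unfolding r4l_def r4_def r4_axioms_def mext_def
    by simp
  have "finite_lattice A \<and> finite_lattice B2 \<and> nontrivial A \<and> nontrivial B2 \<and> order_iso_prod Q.P A B2 psi'
     \<and> snd (psi' (F_iota L (iota12 i i2))) = bot B2"
    using A_fl B A_nontriv psi'_bij psi'_ord psi'_F unfolding order_iso_prod_def by blast
  then show ?thesis unfolding rel_R4_def g dd dprod_eq using md_prod[OF L md md2] unfolding dprod_eq by auto
qed

locale r4r = r4 L E i B1 B2 \<psi> + m1: mext L E1 i1 for L :: "'a lat" and E i B1 B2 \<psi> E1 i1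
begin

sublocale Q: po L E1 i1 E i by unfold_locales

definition A :: "nat lat" where
  "A = \<lparr> flats = prod_encode ` {(y, b). y \<in> flats E1 \<and> b \<in> flats B1 \<and> Q.inP y (psii (b, bot B2))},
        lle = (\<lambda>x y. lle E1 (fst (prod_decode x)) (fst (prod_decode y)) \<and> lle B1 (snd (prod_decode x)) (snd (prod_decode y))) \<rparr>"

lemma A_flats: "pe y b \<in> flats A \<longleftrightarrow> y \<in> flats E1 \<and> b \<in> flats B1 \<and> Q.inP y (psii (b, bot B2))"
  unfolding A_def by (auto simp: inj_image_mem_iff[OF inj_prod_encode])
lemma A_le: "lle A (pe y b) (pe y' b') \<longleftrightarrow> lle E1 y y' \<and> lle B1 b b'"
  unfolding A_def by simp
lemma A_cases: "\<alpha> \<in> flats A \<Longrightarrow> (\<And>b y. \<alpha> = pe y b \<Longrightarrow> y \<in> flats E1 \<Longrightarrow> b \<in> flats B1 \<Longrightarrow> Q.inP y (psii (b, bot B2)) \<Longrightarrow> thesis) \<Longrightarrow> thesis"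
  unfolding A_def by auto

definition psi' :: "nat \<Rightarrow> nat \<times> nat" where
  "psi' X = (pe (fst (prod_decode X)) (fst (\<psi> (snd (prod_decode X)))), snd (\<psi> (snd (prod_decode X))))"
lemma psi'_pe[simp]: "psi' (pe x1 x2) = (pe x1 (fst (\<psi> x2)), snd (\<psi> x2))" unfolding psi'_def by simp

lemma inP_psii: "Q.inP x1 x2 \<Longrightarrow> Q.inP x1 (psii (fst (\<psi> x2), bot B2))"
  unfolding Q.inP_def using K psii psi_in by (metis B2.bot_in)

lemma psi'_bij: "bij_betw psi' (flats Q.P) (flats A \<times> flats B2)"
  unfolding bij_betw_def
proof (intro conjI)
  show "inj_on psi' (flats Q.P)"
  proof (rule inj_onI)
    fix X Y assume X: "X \<in> flats Q.P" and Y: "Y \<in> flats Q.P" and e: "psi' X = psi' Y"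
    obtain x1 x2 where x: "X = pe x1 x2" "Q.inP x1 x2" using X Q.P_cases by blast
    obtain y1 y2 where y: "Y = pe y1 y2" "Q.inP y1 y2" using Y Q.P_cases by blast
    have "fst (\<psi> x2) = fst (\<psi> y2)" "x1 = y1" "snd (\<psi> x2) = snd (\<psi> y2)" using e x y by auto
    then have "\<psi> x2 = \<psi> y2" by (simp add: prod_eq_iff)
    then have "x2 = y2" using psi_inj x y Q.inP_D by blast
    then show "X = Y" using x y \<open>x1 = y1\<close> by simp
  qed
  show "psi' ` flats Q.P = flats A \<times> flats B2"
  proof
    show "psi' ` flats Q.P \<subseteq> flats A \<times> flats B2"
    proof
      fix Z assume "Z \<in> psi' ` flats Q.P"
      then obtain X where X: "X \<in> flats Q.P" "Z = psi' X" by blast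
      obtain x1 x2 where x: "X = pe x1 x2" "Q.inP x1 x2" using X Q.P_cases by blast
      show "Z \<in> flats A \<times> flats B2" using X x A_flats inP_psii psi_in Q.inP_D by simp
    qed
  next
    show "flats A \<times> flats B2 \<subseteq> psi' ` flats Q.P"
    proof
      fix Z assume "Z \<in> flats A \<times> flats B2"
      then obtain \<alpha> e where Z: "Z = (\<alpha>, e)" "\<alpha> \<in> flats A" "e \<in> flats B2" by blast
      obtain b y where bY: "\<alpha> = pe y b" "y \<in> flats E1" "b \<in> flats B1" "Q.inP y (psii (b, bot B2))"
        using Z(2) A_cases by blast
      define x2 where "x2 = psii (b, e)"
      have x2: "x2 \<in> flats E" "\<psi> x2 = (b, e)" unfolding x2_def using psii by (simp_all add: bY Z)
      have "c x2 = c (psii (b, bot B2))" using K[OF x2(1)] x2(2) by simp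
      then have inx: "Q.inP y x2" using bY(4) x2 unfolding Q.inP_def by simp
      then have "pe y x2 \<in> flats Q.P" using Q.P_flats by simp
      moreover have "psi' (pe y x2) = Z" using x2 Z by (simp add: bY)
      ultimately show "Z \<in> psi' ` flats Q.P" by (metis image_eqI)
    qed
  qed
qed

lemma psi'_ord: "X \<in> flats Q.P \<Longrightarrow> Y \<in> flats Q.P \<Longrightarrow>
   lle Q.P X Y \<longleftrightarrow> lle A (fst (psi' X)) (fst (psi' Y)) \<and> lle B2 (snd (psi' X)) (snd (psi' Y))"
proof -
  assume X: "X \<in> flats Q.P" and Y: "Y \<in> flats Q.P"
  obtain x1 x2 where x: "X = pe x1 x2" "Q.inP x1 x2" using X Q.P_cases by blast
  obtain y1 y2 where y: "Y = pe y1 y2" "Q.inP y1 y2" using Y Q.P_cases by blast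
  show ?thesis using x y psi_le[of x2 y2] Q.inP_D A_le by auto
qed

lemma A_fl: "finite_lattice A"
  using factor_fl[OF Q.P_fl psi'_bij psi'_ord B2.bot_in B2.refl[OF B2.bot_in]] .

lemma A_nontriv: "nontrivial B1 \<Longrightarrow> nontrivial A"
proof -
  assume "nontrivial B1"
  then obtain b b' where bb: "b \<in> flats B1" "b' \<in> flats B1" "b \<noteq> b'" using nontrivial_ex by blast
  have mem: "pe (i1 (c (psii (a, bot B2)))) a \<in> flats A" if "a \<in> flats B1" for a
    unfolding A_flats Q.inP_def using that psii by simp
  show ?thesis using nontrivial_two[OF _ mem[OF bb(1)] mem[OF bb(2)]] bb A_fl unfolding finite_lattice_def by simp
qed

lemma psi'_F: "snd (psi' (F_iota L (iota12 i1 i))) = bot B2"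
  using Q.Fiota_P sndF unfolding Fi_def by simp

end

lemma R4_right:
  assumes L: "geometric_lattice L" and r: "rel_R4 L \<Gamma>" and d: "modular_diagram L \<Delta>"
  shows "rel_R4 L (dprod L \<Delta> \<Gamma>)"
proof -
  obtain E i J where g: "\<Gamma> = (E, i, J)" by (cases \<Gamma>) auto
  obtain E1 i1 J1 where dd: "\<Delta> = (E1, i1, J1)" by (cases \<Delta>) auto
  have md: "modular_diagram L (E, i, J)" and ex: "\<exists>E1 E2 \<psi>. finite_lattice E1 \<and> finite_lattice E2 \<and> nontrivial E1 \<and> nontrivial E2
            \<and> order_iso_prod E E1 E2 \<psi> \<and> snd (\<psi> (F_iota L i)) = bot E2"
    using r unfolding rel_R4_def g by auto
  obtain B1 B2 \<psi> where B: "finite_lattice B1" "finite_lattice B2" "nontrivial B1" "nontrivial B2"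
    "order_iso_prod E B1 B2 \<psi>" "snd (\<psi> (F_iota L i)) = bot B2" using ex by blast
  have md1: "modular_diagram L (E1, i1, J1)" using d dd by simp
  interpret r4r L E i B1 B2 \<psi> E1 i1
    using L md_D(1)[OF md] md_D(1)[OF md1] B unfolding r4r_def r4_def r4_axioms_def mext_def
    by simp
  have "finite_lattice A \<and> finite_lattice B2 \<and> nontrivial A \<and> nontrivial B2 \<and> order_iso_prod Q.P A B2 psi'
     \<and> snd (psi' (F_iota L (iota12 i1 i))) = bot B2"
    using A_fl B A_nontriv psi'_bij psi'_ord psi'_F unfolding order_iso_prod_def by blast
  then show ?thesis unfolding rel_R4_def g dd dprod_eq using md_prod[OF L md1 md] unfolding dprod_eq by auto
qed


lemma supp_delta: "supp (delta x) = {x}" unfolding supp_def delta_def by auto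

lemma delta_app: "delta x y = (if y = x then 1 else 0)" unfolding delta_def by simp

lemma rel_span_supp: "u \<in> rel_span L \<Longrightarrow> finite (supp u) \<and> supp u \<subseteq> {\<Gamma>. modular_diagram L \<Gamma>}"
proof (induction rule: rel_span.induct)
  case zero
  then show ?case unfolding supp_def by simp
next
  case (add u v)
  have "supp (\<lambda>x. u x + v x) \<subseteq> supp u \<union> supp v" unfolding supp_def by auto
  then show ?case using add finite_subset by blast
next
  case (smult u c)
  have "supp (\<lambda>x. c * u x) \<subseteq> supp u" unfolding supp_def by auto
  then show ?case using smult finite_subset by blast
next
  case (R1 \<Gamma> \<Gamma>')
  have "supp (\<lambda>x. delta \<Gamma> x + delta \<Gamma>' x) \<subseteq> {\<Gamma>, \<Gamma>'}" unfolding supp_def delta_def by auto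
  then show ?case using R1 unfolding rel_R1_def using finite_subset by auto
next
  case (R2 \<Gamma> \<Gamma>')
  have "supp (\<lambda>x. delta \<Gamma> x - delta \<Gamma>' x) \<subseteq> {\<Gamma>, \<Gamma>'}" unfolding supp_def delta_def by auto
  then show ?case using R2 unfolding rel_R2_def using finite_subset by auto
next
  case (R3 \<Gamma>)
  then show ?case unfolding rel_R3_def supp_delta by auto
next
  case (R4 \<Gamma>)
  then show ?case unfolding rel_R4_def supp_delta by auto
next
  case (R5 \<Gamma>)
  then show ?case unfolding rel_R5_def supp_delta by auto
qed

lemma vprod_gen:
  assumes A: "finite A" "supp u \<subseteq> A" and B: "finite B" "supp v \<subseteq> B"
  shows "vprod L u v = (\<lambda>\<Delta>. \<Sum>a\<in>A. \<Sum>b\<in>B. u a * v b * delta (dprod L a b) \<Delta>)"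
proof
  fix \<Delta>
  have fs: "finite (supp u \<times> supp v)" using A B finite_subset by blast
  have "vprod L u v \<Delta> = (\<Sum>p\<in>supp u \<times> supp v. if dprod L (fst p) (snd p) = \<Delta> then u (fst p) * v (snd p) else 0)"
    unfolding vprod_def using sum.inter_filter[OF fs] by simp
  also have "\<dots> = (\<Sum>p\<in>supp u \<times> supp v. u (fst p) * v (snd p) * delta (dprod L (fst p) (snd p)) \<Delta>)"
    by (rule sum.cong) (auto simp: delta_app)
  also have "\<dots> = (\<Sum>p\<in>A \<times> B. u (fst p) * v (snd p) * delta (dprod L (fst p) (snd p)) \<Delta>)"
  proof (rule sum.mono_neutral_left)
    show "finite (A \<times> B)" using A B by simp
    show "supp u \<times> supp v \<subseteq> A \<times> B" using A B by auto
    show "\<forall>p\<in>A \<times> B - supp u \<times> supp v. u (fst p) * v (snd p) * delta (dprod L (fst p) (snd p)) \<Delta> = 0"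
      unfolding supp_def by auto
  qed
  also have "\<dots> = (\<Sum>a\<in>A. \<Sum>b\<in>B. u a * v b * delta (dprod L a b) \<Delta>)"
    by (subst sum.cartesian_product) (simp add: case_prod_unfold)
  finally show "vprod L u v \<Delta> = (\<Sum>a\<in>A. \<Sum>b\<in>B. u a * v b * delta (dprod L a b) \<Delta>)" .
qed

lemma vprod_left_expand:
  assumes A: "finite A" "supp u \<subseteq> A" and B: "finite (supp v)"
  shows "vprod L u v = (\<lambda>\<Delta>. \<Sum>b\<in>supp v. v b * (\<Sum>a\<in>A. u a * delta (dprod L a b) \<Delta>))"
proof
  fix \<Delta>
  have "vprod L u v \<Delta> = (\<Sum>a\<in>A. \<Sum>b\<in>supp v. u a * v b * delta (dprod L a b) \<Delta>)"
    using vprod_gen[OF A B] by simp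
  also have "\<dots> = (\<Sum>b\<in>supp v. \<Sum>a\<in>A. u a * v b * delta (dprod L a b) \<Delta>)" by (rule sum.swap)
  also have "\<dots> = (\<Sum>b\<in>supp v. v b * (\<Sum>a\<in>A. u a * delta (dprod L a b) \<Delta>))"
    by (simp add: sum_distrib_left mult_ac)
  finally show "vprod L u v \<Delta> = (\<Sum>b\<in>supp v. v b * (\<Sum>a\<in>A. u a * delta (dprod L a b) \<Delta>))" .
qed

lemma vprod_right_expand:
  assumes A: "finite (supp u)" and B: "finite B" "supp v \<subseteq> B"
  shows "vprod L u v = (\<lambda>\<Delta>. \<Sum>a\<in>supp u. u a * (\<Sum>b\<in>B. v b * delta (dprod L a b) \<Delta>))"
proof
  fix \<Delta>
  have "vprod L u v \<Delta> = (\<Sum>a\<in>supp u. \<Sum>b\<in>B. u a * v b * delta (dprod L a b) \<Delta>)"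
    using vprod_gen[OF A _ B] by simp
  also have "\<dots> = (\<Sum>a\<in>supp u. u a * (\<Sum>b\<in>B. v b * delta (dprod L a b) \<Delta>))"
    by (simp add: sum_distrib_left mult_ac)
  finally show "vprod L u v \<Delta> = (\<Sum>a\<in>supp u. u a * (\<Sum>b\<in>B. v b * delta (dprod L a b) \<Delta>))" .
qed

lemma sum_in_span: "finite B \<Longrightarrow> (\<And>b. b \<in> B \<Longrightarrow> f b \<in> rel_span L) \<Longrightarrow> (\<lambda>x. \<Sum>b\<in>B. g b * f b x) \<in> rel_span L"
proof (induction B rule: finite_induct)
  case empty
  then show ?case using rel_span.zero by simp
next
  case (insert b B)
  have e: "(\<lambda>x. \<Sum>b\<in>insert b B. g b * f b x) = (\<lambda>x. g b * f b x + (\<Sum>b\<in>B. g b * f b x))"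
    using insert by simp
  have 1: "(\<lambda>x. g b * f b x) \<in> rel_span L" using insert(4)[of b] rel_span.smult by blast
  have 2: "(\<lambda>x. \<Sum>b\<in>B. g b * f b x) \<in> rel_span L" using insert by blast
  have "(\<lambda>x. (\<lambda>x. g b * f b x) x + (\<lambda>x. \<Sum>b\<in>B. g b * f b x) x) \<in> rel_span L"
    by (rule rel_span.add[OF 1 2])
  then show ?case unfolding e by simp
qed

lemma sum2_add: "(\<Sum>a\<in>{\<Gamma>, \<Gamma>'}. (delta \<Gamma> a + delta \<Gamma>' a) * f a) = f \<Gamma> + f \<Gamma>'"
  by (cases "\<Gamma> = \<Gamma>'") (auto simp: delta_app)
lemma sum2_diff: "(\<Sum>a\<in>{\<Gamma>, \<Gamma>'}. (delta \<Gamma> a - delta \<Gamma>' a) * f a) = f \<Gamma> - f \<Gamma>'"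
  by (cases "\<Gamma> = \<Gamma>'") (auto simp: delta_app)
lemma sum1: "(\<Sum>a\<in>{\<Gamma>}. delta \<Gamma> a * f a) = f \<Gamma>"
  by (simp add: delta_app)

lemma supp_sub2: "supp (\<lambda>x. delta \<Gamma> x + delta \<Gamma>' x) \<subseteq> {\<Gamma>, \<Gamma>'}" "supp (\<lambda>x. delta \<Gamma> x - delta \<Gamma>' x) \<subseteq> {\<Gamma>, \<Gamma>'}"
  unfolding supp_def delta_def by auto

lemma left_main:
  assumes L: "geometric_lattice L" and v: "finite (supp v)" "supp v \<subseteq> {\<Gamma>. modular_diagram L \<Gamma>}"
  shows "u \<in> rel_span L \<Longrightarrow> vprod L u v \<in> rel_span L"
proof (induction rule: rel_span.induct)
  case zero
  have "vprod L (\<lambda>_. 0) v = (\<lambda>_. 0)" unfolding vprod_def supp_def by simp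
  then show ?case using rel_span.zero by simp
next
  case (add u w)
  have fu: "finite (supp u)" "finite (supp w)" using rel_span_supp add by auto
  have sub: "supp (\<lambda>x. u x + w x) \<subseteq> supp u \<union> supp w" "supp u \<subseteq> supp u \<union> supp w" "supp w \<subseteq> supp u \<union> supp w"
    unfolding supp_def by auto
  have "vprod L (\<lambda>x. u x + w x) v = (\<lambda>x. vprod L u v x + vprod L w v x)"
    using vprod_gen[OF _ sub(1) v(1) order.refl] vprod_gen[OF _ sub(2) v(1) order.refl] vprod_gen[OF _ sub(3) v(1) order.refl] fu
    by (simp add: sum.distrib ring_distribs)
  then show ?case using add rel_span.add by metis
next
  case (smult u c)
  have fu: "finite (supp u)" using rel_span_supp smult by auto
  have sub: "supp (\<lambda>x. c * u x) \<subseteq> supp u" unfolding supp_def by auto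
  have "vprod L (\<lambda>x. c * u x) v = (\<lambda>x. c * vprod L u v x)"
    using vprod_gen[OF fu sub v(1) order.refl] vprod_gen[OF fu order.refl v(1) order.refl]
    by (simp add: sum_distrib_left mult_ac)
  then show ?case using smult rel_span.smult by metis
next
  case (R1 \<Gamma> \<Gamma>')
  have "vprod L (\<lambda>x. delta \<Gamma> x + delta \<Gamma>' x) v
     = (\<lambda>\<Delta>. \<Sum>b\<in>supp v. v b * (\<lambda>x. delta (dprod L \<Gamma> b) x + delta (dprod L \<Gamma>' b) x) \<Delta>)"
    unfolding vprod_left_expand[OF _ supp_sub2(1) v(1), simplified]
    by (intro ext sum.cong refl, cases "\<Gamma> = \<Gamma>'") (auto simp: delta_app)
  moreover have "(\<lambda>x. delta (dprod L \<Gamma> b) x + delta (dprod L \<Gamma>' b) x) \<in> rel_span L" if "b \<in> supp v" for b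
    using rel_span.R1 R1_left[OF L R1] v that by blast
  ultimately show ?case
    using sum_in_span[OF v(1), of "\<lambda>b x. delta (dprod L \<Gamma> b) x + delta (dprod L \<Gamma>' b) x" L v] by simp
next
  case (R2 \<Gamma> \<Gamma>')
  have "vprod L (\<lambda>x. delta \<Gamma> x - delta \<Gamma>' x) v
     = (\<lambda>\<Delta>. \<Sum>b\<in>supp v. v b * (\<lambda>x. delta (dprod L \<Gamma> b) x - delta (dprod L \<Gamma>' b) x) \<Delta>)"
    unfolding vprod_left_expand[OF _ supp_sub2(2) v(1), simplified]
    by (intro ext sum.cong refl, cases "\<Gamma> = \<Gamma>'") (auto simp: delta_app)
  moreover have "(\<lambda>x. delta (dprod L \<Gamma> b) x - delta (dprod L \<Gamma>' b) x) \<in> rel_span L" if "b \<in> supp v" for b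
    using rel_span.R2 R2_left[OF L R2] v that by blast
  ultimately show ?case
    using sum_in_span[OF v(1), of "\<lambda>b x. delta (dprod L \<Gamma> b) x - delta (dprod L \<Gamma>' b) x" L v] by simp
next
  case (R3 \<Gamma>)
  have "vprod L (delta \<Gamma>) v = (\<lambda>\<Delta>. \<Sum>b\<in>supp v. v b * delta (dprod L \<Gamma> b) \<Delta>)"
    unfolding vprod_left_expand[OF _ equalityD1[OF supp_delta] v(1), simplified]
    by (intro ext sum.cong refl) (auto simp: delta_app)
  moreover have "delta (dprod L \<Gamma> b) \<in> rel_span L" if "b \<in> supp v" for b
    using rel_span.R3 R3_left[OF L R3] v that by blast
  ultimately show ?case using sum_in_span[OF v(1), of "\<lambda>b. delta (dprod L \<Gamma> b)" L v] by simp
next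
  case (R4 \<Gamma>)
  have "vprod L (delta \<Gamma>) v = (\<lambda>\<Delta>. \<Sum>b\<in>supp v. v b * delta (dprod L \<Gamma> b) \<Delta>)"
    unfolding vprod_left_expand[OF _ equalityD1[OF supp_delta] v(1), simplified]
    by (intro ext sum.cong refl) (auto simp: delta_app)
  moreover have "delta (dprod L \<Gamma> b) \<in> rel_span L" if "b \<in> supp v" for b
    using rel_span.R4 R4_left[OF L R4] v that by blast
  ultimately show ?case using sum_in_span[OF v(1), of "\<lambda>b. delta (dprod L \<Gamma> b)" L v] by simp
next
  case (R5 \<Gamma>)
  have "vprod L (delta \<Gamma>) v = (\<lambda>\<Delta>. \<Sum>b\<in>supp v. v b * delta (dprod L \<Gamma> b) \<Delta>)"
    unfolding vprod_left_expand[OF _ equalityD1[OF supp_delta] v(1), simplified]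
    by (intro ext sum.cong refl) (auto simp: delta_app)
  moreover have "delta (dprod L \<Gamma> b) \<in> rel_span L" if "b \<in> supp v" for b
    using rel_span.R5 R5_left[OF L R5] v that by blast
  ultimately show ?case using sum_in_span[OF v(1), of "\<lambda>b. delta (dprod L \<Gamma> b)" L v] by simp
qed

lemma right_main:
  assumes L: "geometric_lattice L" and v: "finite (supp v)" "supp v \<subseteq> {\<Gamma>. modular_diagram L \<Gamma>}"
  shows "u \<in> rel_span L \<Longrightarrow> vprod L v u \<in> rel_span L"
proof (induction rule: rel_span.induct)
  case zero
  have "vprod L v (\<lambda>_. 0) = (\<lambda>_. 0)" unfolding vprod_def supp_def by simp
  then show ?case using rel_span.zero by simp
next
  case (add u w)
  have fu: "finite (supp u)" "finite (supp w)" using rel_span_supp add by auto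
  have sub: "supp (\<lambda>x. u x + w x) \<subseteq> supp u \<union> supp w" "supp u \<subseteq> supp u \<union> supp w" "supp w \<subseteq> supp u \<union> supp w"
    unfolding supp_def by auto
  have "vprod L v (\<lambda>x. u x + w x) = (\<lambda>x. vprod L v u x + vprod L v w x)"
    using vprod_gen[OF v(1) order.refl _ sub(1)] vprod_gen[OF v(1) order.refl _ sub(2)] vprod_gen[OF v(1) order.refl _ sub(3)] fu
    by (simp add: sum.distrib ring_distribs)
  then show ?case using add rel_span.add by metis
next
  case (smult u c)
  have fu: "finite (supp u)" using rel_span_supp smult by auto
  have sub: "supp (\<lambda>x. c * u x) \<subseteq> supp u" unfolding supp_def by auto
  have "vprod L v (\<lambda>x. c * u x) = (\<lambda>x. c * vprod L v u x)"
    using vprod_gen[OF v(1) order.refl fu sub] vprod_gen[OF v(1) order.refl fu order.refl]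
    by (simp add: sum_distrib_left mult_ac)
  then show ?case using smult rel_span.smult by metis
next
  case (R1 \<Gamma> \<Gamma>')
  have "vprod L v (\<lambda>x. delta \<Gamma> x + delta \<Gamma>' x)
     = (\<lambda>\<Delta>. \<Sum>b\<in>supp v. v b * (\<lambda>x. delta (dprod L b \<Gamma>) x + delta (dprod L b \<Gamma>') x) \<Delta>)"
    unfolding vprod_right_expand[OF v(1) _ supp_sub2(1), simplified]
    by (intro ext sum.cong refl, cases "\<Gamma> = \<Gamma>'") (auto simp: delta_app)
  moreover have "(\<lambda>x. delta (dprod L b \<Gamma>) x + delta (dprod L b \<Gamma>') x) \<in> rel_span L" if "b \<in> supp v" for b
    using rel_span.R1 R1_right[OF L R1] v that by blast
  ultimately show ?case
    using sum_in_span[OF v(1), of "\<lambda>b x. delta (dprod L b \<Gamma>) x + delta (dprod L b \<Gamma>') x" L v] by simp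
next
  case (R2 \<Gamma> \<Gamma>')
  have "vprod L v (\<lambda>x. delta \<Gamma> x - delta \<Gamma>' x)
     = (\<lambda>\<Delta>. \<Sum>b\<in>supp v. v b * (\<lambda>x. delta (dprod L b \<Gamma>) x - delta (dprod L b \<Gamma>') x) \<Delta>)"
    unfolding vprod_right_expand[OF v(1) _ supp_sub2(2), simplified]
    by (intro ext sum.cong refl, cases "\<Gamma> = \<Gamma>'") (auto simp: delta_app)
  moreover have "(\<lambda>x. delta (dprod L b \<Gamma>) x - delta (dprod L b \<Gamma>') x) \<in> rel_span L" if "b \<in> supp v" for b
    using rel_span.R2 R2_right[OF L R2] v that by blast
  ultimately show ?case
    using sum_in_span[OF v(1), of "\<lambda>b x. delta (dprod L b \<Gamma>) x - delta (dprod L b \<Gamma>') x" L v] by simp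
next
  case (R3 \<Gamma>)
  have "vprod L v (delta \<Gamma>) = (\<lambda>\<Delta>. \<Sum>b\<in>supp v. v b * delta (dprod L b \<Gamma>) \<Delta>)"
    unfolding vprod_right_expand[OF v(1) _ equalityD1[OF supp_delta], simplified]
    by (intro ext sum.cong refl) (auto simp: delta_app)
  moreover have "delta (dprod L b \<Gamma>) \<in> rel_span L" if "b \<in> supp v" for b
    using rel_span.R3 R3_right[OF L R3] v that by blast
  ultimately show ?case using sum_in_span[OF v(1), of "\<lambda>b. delta (dprod L b \<Gamma>)" L v] by simp
next
  case (R4 \<Gamma>)
  have "vprod L v (delta \<Gamma>) = (\<lambda>\<Delta>. \<Sum>b\<in>supp v. v b * delta (dprod L b \<Gamma>) \<Delta>)"
    unfolding vprod_right_expand[OF v(1) _ equalityD1[OF supp_delta], simplified]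
    by (intro ext sum.cong refl) (auto simp: delta_app)
  moreover have "delta (dprod L b \<Gamma>) \<in> rel_span L" if "b \<in> supp v" for b
    using rel_span.R4 R4_right[OF L R4] v that by blast
  ultimately show ?case using sum_in_span[OF v(1), of "\<lambda>b. delta (dprod L b \<Gamma>)" L v] by simp
next
  case (R5 \<Gamma>)
  have "vprod L v (delta \<Gamma>) = (\<lambda>\<Delta>. \<Sum>b\<in>supp v. v b * delta (dprod L b \<Gamma>) \<Delta>)"
    unfolding vprod_right_expand[OF v(1) _ equalityD1[OF supp_delta], simplified]
    by (intro ext sum.cong refl) (auto simp: delta_app)
  moreover have "delta (dprod L b \<Gamma>) \<in> rel_span L" if "b \<in> supp v" for b
    using rel_span.R5 R5_right[OF L R5] v that by blast
  ultimately show ?case using sum_in_span[OF v(1), of "\<lambda>b. delta (dprod L b \<Gamma>)" L v] by simp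
qed

theorem mainTheorem7:
  fixes L :: "'a lat" and u v :: "'a mdiag \<Rightarrow> rat"
  assumes "geometric_lattice L" and "nontrivial L"
    and "u \<in> free_MD L" and "v \<in> free_MD L"
    and "u \<in> rel_span L"
  shows "vprod L u v \<in> rel_span L \<and> vprod L v u \<in> rel_span L"
proof -
  have v: "finite (supp v)" "supp v \<subseteq> {\<Gamma>. modular_diagram L \<Gamma>}" using assms(4) unfolding free_MD_def by auto
  show ?thesis using left_main[OF assms(1) v assms(5)] right_main[OF assms(1) v assms(5)] by simp
qed


end
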